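(* Let $\mathcal{E}$ be a right exact category and let $\mathcal{A}\subseteq\mathcal{E}$ be a right percolating subcategory. (1) The category $\mathrm{C}^b(\mathcal{E})$ of bounded cochain complexes has a natural right exact structure, in which a sequence of chain maps is a conflation iff it is a conflation in $\mathcal{E}$ in each degree. (2) With this structure, $\mathrm{C}^b(\mathcal{A})$ is a right percolating subcategory of $\mathrm{C}^b(\mathcal{E})$.
   Context: A conflation category is an additive category with a class of kernel-cokernel pairs (conflations; kernel part = inflation $\rightarrowtail$, cokernel part = deflation $\twoheadrightarrow$) closed under isomorphism. It is right exact if $1_0$ is a deflation, deflations compose, and pullbacks of deflations along arbitrary morphisms exist and are deflations. A non-empty full subcategory $\mathcal{A}$ of a conflation category $\mathcal{E}$ is right percolating if: (P1) for every conflation $A'\rightarrowtail A\twoheadrightarrow A''$, $A\in\mathcal{A}$ iff $A',A''\in\mathcal{A}$; (P2) every morphism $C\to A$ with $A\in\mathcal{A}$ factors as a deflation $C\twoheadrightarrow A'$ with $A'\in\mathcal{A}$ followed by a morphism $A'\to A$; (P3) for an inflation $C\rightarrowtail D$ and a deflation $C\twoheadrightarrow A$ with $A\in\mathcal{A}$, the pushout exists and the induced maps $A\to P$, $D\to P$ are an inflation and a deflation respectively; (P4) for every inflation $A\rightarrowtail X$ and deflation $X\twoheadrightarrow B$ with $A,B\in\mathcal{A}$ there are $A',B'\in\mathcal{A}$, deflations $A\twoheadrightarrow A'$, $X\twoheadrightarrow B'$, an inflation $A'\rightarrowtail B'$ and a morphism $B'\to B$ with $A\rightarrowtail X\twoheadrightarrow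 B'$ equal to $A\twoheadrightarrow A'\rightarrowtail B'$ and $X\twoheadrightarrow B$ equal to $X\twoheadrightarrow B'\to B$. *)

theory Defs
  imports Main
begin

text \<open>A category is given by a set of objects, a set of arrows, source/target,
identities and composition (cmp g f = g after f).\<close>

record ('o, 'm) category =
  obj   :: "'o set"
  arr   :: "'m set"
  src   :: "'m \<Rightarrow> 'o"
  tgt   :: "'m \<Rightarrow> 'o"
  ident :: "'o \<Rightarrow> 'm"
  cmp   :: "'m \<Rightarrow> 'm \<Rightarrow> 'm"
  addm  :: "'m \<Rightarrow> 'm \<Rightarrow> 'm"
  zro   :: "'o \<Rightarrow> 'o \<Rightarrow> 'm"

definition hom :: "('o, 'm) category \<Rightarrow> 'o \<Rightarrow> 'o \<Rightarrow> 'm set" where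
  "hom C a b = {f \<in> arr C. src C f = a \<and> tgt C f = b}"

definition is_category :: "('o, 'm) category \<Rightarrow> bool" where
  "is_category C \<longleftrightarrow>
     (\<forall>f\<in>arr C. src C f \<in> obj C \<and> tgt C f \<in> obj C) \<and>
     (\<forall>a\<in>obj C. ident C a \<in> hom C a a) \<and>
     (\<forall>a b c f g. f \<in> hom C a b \<longrightarrow> g \<in> hom C b c \<longrightarrow> cmp C g f \<in> hom C a c) \<and>
     (\<forall>a b f. f \<in> hom C a b \<longrightarrow> cmp C f (ident C a) = f \<and> cmp C (ident C b) f = f) \<and>
     (\<forall>a b c d f g h. f \<in> hom C a b \<longrightarrow> g \<in> hom C b c \<longrightarrow> h \<in> hom C c d \<longrightarrow>
        cmp C h (cmp C g f) = cmp C (cmp C h g) f)"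

definition preadditive :: "('o, 'm) category \<Rightarrow> bool" where
  "preadditive C \<longleftrightarrow> is_category C \<and>
     (\<forall>a\<in>obj C. \<forall>b\<in>obj C. zro C a b \<in> hom C a b) \<and>
     (\<forall>a b f g. f \<in> hom C a b \<longrightarrow> g \<in> hom C a b \<longrightarrow>
        addm C f g \<in> hom C a b \<and> addm C f g = addm C g f) \<and>
     (\<forall>a b f g h. f \<in> hom C a b \<longrightarrow> g \<in> hom C a b \<longrightarrow> h \<in> hom C a b \<longrightarrow>
        addm C (addm C f g) h = addm C f (addm C g h)) \<and>
     (\<forall>a b f. f \<in> hom C a b \<longrightarrow> addm C f (zro C a b) = f) \<and>
     (\<forall>a b f. f \<in> hom C a b \<longrightarrow> (\<exists>g\<in>hom C a b. addm C f g = zro C a b)) \<and>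
     (\<forall>a b c f g h. f \<in> hom C a b \<longrightarrow> g \<in> hom C a b \<longrightarrow> h \<in> hom C b c \<longrightarrow>
        cmp C h (addm C f g) = addm C (cmp C h f) (cmp C h g)) \<and>
     (\<forall>a b c f g h. f \<in> hom C a b \<longrightarrow> g \<in> hom C b c \<longrightarrow> h \<in> hom C b c \<longrightarrow>
        cmp C (addm C g h) f = addm C (cmp C g f) (cmp C h f))"

definition is_zero_obj :: "('o, 'm) category \<Rightarrow> 'o \<Rightarrow> bool" where
  "is_zero_obj C z \<longleftrightarrow> z \<in> obj C \<and>
     (\<forall>a\<in>obj C. (\<exists>!f. f \<in> hom C z a) \<and> (\<exists>!f. f \<in> hom C a z))"

definition has_biproducts :: "('o, 'm) category \<Rightarrow> bool" where
  "has_biproducts C \<longleftrightarrow>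
     (\<forall>a\<in>obj C. \<forall>b\<in>obj C. \<exists>c\<in>obj C. \<exists>p1 p2 i1 i2.
        p1 \<in> hom C c a \<and> p2 \<in> hom C c b \<and> i1 \<in> hom C a c \<and> i2 \<in> hom C b c \<and>
        cmp C p1 i1 = ident C a \<and> cmp C p2 i2 = ident C b \<and>
        cmp C p1 i2 = zro C b a \<and> cmp C p2 i1 = zro C a b \<and>
        addm C (cmp C i1 p1) (cmp C i2 p2) = ident C c)"

definition additive_category :: "('o, 'm) category \<Rightarrow> bool" where
  "additive_category C \<longleftrightarrow> preadditive C \<and> (\<exists>z. is_zero_obj C z) \<and> has_biproducts C"

definition is_iso :: "('o, 'm) category \<Rightarrow> 'm \<Rightarrow> bool" where
  "is_iso C u \<longleftrightarrow> u \<in> arr C \<and>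
     (\<exists>v\<in>hom C (tgt C u) (src C u). cmp C v u = ident C (src C u) \<and> cmp C u v = ident C (tgt C u))"

definition is_kernel :: "('o, 'm) category \<Rightarrow> 'm \<Rightarrow> 'm \<Rightarrow> bool" where
  "is_kernel C f g \<longleftrightarrow> f \<in> arr C \<and> g \<in> arr C \<and> tgt C f = src C g \<and>
     cmp C g f = zro C (src C f) (tgt C g) \<and>
     (\<forall>h. h \<in> arr C \<and> tgt C h = src C g \<and> cmp C g h = zro C (src C h) (tgt C g) \<longrightarrow>
        (\<exists>!u. u \<in> hom C (src C h) (src C f) \<and> cmp C f u = h))"

definition is_cokernel :: "('o, 'm) category \<Rightarrow> 'm \<Rightarrow> 'm \<Rightarrow> bool" where
  "is_cokernel C g f \<longleftrightarrow> f \<in> arr C \<and> g \<in> arr C \<and> tgt C f = src C g \<and>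
     cmp C g f = zro C (src C f) (tgt C g) \<and>
     (\<forall>h. h \<in> arr C \<and> src C h = tgt C f \<and> cmp C h f = zro C (src C f) (tgt C h) \<longrightarrow>
        (\<exists>!u. u \<in> hom C (tgt C g) (tgt C h) \<and> cmp C u g = h))"

definition kernel_cokernel_pair :: "('o, 'm) category \<Rightarrow> 'm \<Rightarrow> 'm \<Rightarrow> bool" where
  "kernel_cokernel_pair C f g \<longleftrightarrow> is_kernel C f g \<and> is_cokernel C g f"

definition conflation_category :: "('o, 'm) category \<Rightarrow> ('m \<times> 'm) set \<Rightarrow> bool" where
  "conflation_category C Conf \<longleftrightarrow> additive_category C \<and>
     (\<forall>f g. (f, g) \<in> Conf \<longrightarrow> kernel_cokernel_pair C f g) \<and>
     (\<forall>f g f' g' a b c. (f, g) \<in> Conf \<longrightarrow> f' \<in> arr C \<longrightarrow> g' \<in> arr C \<longrightarrow> tgt C f' = src C g' \<longrightarrow>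
        a \<in> hom C (src C f) (src C f') \<longrightarrow> b \<in> hom C (tgt C f) (tgt C f') \<longrightarrow>
        c \<in> hom C (tgt C g) (tgt C g') \<longrightarrow> is_iso C a \<longrightarrow> is_iso C b \<longrightarrow> is_iso C c \<longrightarrow>
        cmp C b f = cmp C f' a \<longrightarrow> cmp C c g = cmp C g' b \<longrightarrow> (f', g') \<in> Conf)"

definition inflation :: "('o, 'm) category \<Rightarrow> ('m \<times> 'm) set \<Rightarrow> 'm \<Rightarrow> bool" where
  "inflation C Conf f \<longleftrightarrow> (\<exists>g. (f, g) \<in> Conf)"

definition deflation :: "('o, 'm) category \<Rightarrow> ('m \<times> 'm) set \<Rightarrow> 'm \<Rightarrow> bool" where
  "deflation C Conf g \<longleftrightarrow> (\<exists>f. (f, g) \<in> Conf)"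

definition is_pullback :: "('o, 'm) category \<Rightarrow> 'm \<Rightarrow> 'm \<Rightarrow> 'm \<Rightarrow> 'm \<Rightarrow> bool" where
  "is_pullback C g t p g' \<longleftrightarrow> g \<in> arr C \<and> t \<in> arr C \<and> tgt C t = tgt C g \<and>
     p \<in> arr C \<and> g' \<in> arr C \<and> src C p = src C g' \<and> tgt C p = src C g \<and> tgt C g' = src C t \<and>
     cmp C g p = cmp C t g' \<and>
     (\<forall>u v. u \<in> arr C \<and> v \<in> arr C \<and> src C u = src C v \<and> tgt C u = src C g \<and> tgt C v = src C t \<and>
        cmp C g u = cmp C t v \<longrightarrow>
        (\<exists>!w. w \<in> hom C (src C u) (src C p) \<and> cmp C p w = u \<and> cmp C g' w = v))"

definition is_pushout :: "('o, 'm) category \<Rightarrow> 'm \<Rightarrow> 'm \<Rightarrow> 'm \<Rightarrow> 'm \<Rightarrow> bool" where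
  "is_pushout C i q q' i' \<longleftrightarrow> i \<in> arr C \<and> q \<in> arr C \<and> src C i = src C q \<and>
     q' \<in> arr C \<and> i' \<in> arr C \<and> src C q' = tgt C i \<and> src C i' = tgt C q \<and> tgt C q' = tgt C i' \<and>
     cmp C q' i = cmp C i' q \<and>
     (\<forall>u v. u \<in> arr C \<and> v \<in> arr C \<and> src C u = tgt C i \<and> src C v = tgt C q \<and> tgt C u = tgt C v \<and>
        cmp C u i = cmp C v q \<longrightarrow>
        (\<exists>!w. w \<in> hom C (tgt C q') (tgt C u) \<and> cmp C w q' = u \<and> cmp C w i' = v))"

definition right_exact :: "('o, 'm) category \<Rightarrow> ('m \<times> 'm) set \<Rightarrow> bool" where
  "right_exact C Conf \<longleftrightarrow> conflation_category C Conf \<and>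
     (\<forall>z. is_zero_obj C z \<longrightarrow> deflation C Conf (ident C z)) \<and>
     (\<forall>g h. deflation C Conf g \<longrightarrow> deflation C Conf h \<longrightarrow> tgt C g = src C h \<longrightarrow>
        deflation C Conf (cmp C h g)) \<and>
     (\<forall>g t. deflation C Conf g \<longrightarrow> t \<in> arr C \<longrightarrow> tgt C t = tgt C g \<longrightarrow>
        (\<exists>p g'. is_pullback C g t p g') \<and>
        (\<forall>p g'. is_pullback C g t p g' \<longrightarrow> deflation C Conf g'))"

text \<open>Right percolating subcategory (a full subcategory, given by its set of objects).\<close>

definition right_percolating :: "('o, 'm) category \<Rightarrow> ('m \<times> 'm) set \<Rightarrow> 'o set \<Rightarrow> bool" where
  "right_percolating C Conf A \<longleftrightarrow> A \<noteq> {} \<and> A \<subseteq> obj C \<and>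
     \<comment> \<open>P1\<close>
     (\<forall>f g. (f, g) \<in> Conf \<longrightarrow> (src C g \<in> A \<longleftrightarrow> src C f \<in> A \<and> tgt C g \<in> A)) \<and>
     \<comment> \<open>P2\<close>
     (\<forall>h. h \<in> arr C \<longrightarrow> tgt C h \<in> A \<longrightarrow>
        (\<exists>A' d k. A' \<in> A \<and> d \<in> hom C (src C h) A' \<and> deflation C Conf d \<and>
                  k \<in> hom C A' (tgt C h) \<and> h = cmp C k d)) \<and>
     \<comment> \<open>P3\<close>
     (\<forall>i q. inflation C Conf i \<longrightarrow> deflation C Conf q \<longrightarrow> src C i = src C q \<longrightarrow> tgt C q \<in> A \<longrightarrow>
        (\<exists>q' i'. is_pushout C i q q' i') \<and>
        (\<forall>q' i'. is_pushout C i q q' i' \<longrightarrow> inflation C Conf i' \<and> deflation C Conf q')) \<and>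
     \<comment> \<open>P4\<close>
     (\<forall>i p. inflation C Conf i \<longrightarrow> deflation C Conf p \<longrightarrow> tgt C i = src C p \<longrightarrow>
        src C i \<in> A \<longrightarrow> tgt C p \<in> A \<longrightarrow>
        (\<exists>A' B' d1 d2 j k. A' \<in> A \<and> B' \<in> A \<and>
           d1 \<in> hom C (src C i) A' \<and> deflation C Conf d1 \<and>
           d2 \<in> hom C (tgt C i) B' \<and> deflation C Conf d2 \<and>
           j \<in> hom C A' B' \<and> inflation C Conf j \<and>
           k \<in> hom C B' (tgt C p) \<and>
           cmp C d2 i = cmp C j d1 \<and> p = cmp C k d2))"

text \<open>A complex is a pair (X, d) of objects X n and differentials d n : X n \<rightarrow> X (n+1).
  A chain map is a triple (source complex, target complex, components).\<close>

type_synonym ('o, 'm) cx = "(int \<Rightarrow> 'o) \<times> (int \<Rightarrow> 'm)"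
type_synonym ('o, 'm) chmap = "('o, 'm) cx \<times> ('o, 'm) cx \<times> (int \<Rightarrow> 'm)"

definition is_bcomplex :: "('o, 'm) category \<Rightarrow> ('o, 'm) cx \<Rightarrow> bool" where
  "is_bcomplex E x \<longleftrightarrow>
     (\<forall>n. fst x n \<in> obj E \<and> snd x n \<in> hom E (fst x n) (fst x (n + 1)) \<and>
          cmp E (snd x (n + 1)) (snd x n) = zro E (fst x n) (fst x (n + 2))) \<and>
     (\<exists>N::int. \<forall>n. N < \<bar>n\<bar> \<longrightarrow> is_zero_obj E (fst x n))"

definition is_chain_map :: "('o, 'm) category \<Rightarrow> ('o, 'm) cx \<Rightarrow> ('o, 'm) cx \<Rightarrow> (int \<Rightarrow> 'm) \<Rightarrow> bool" where
  "is_chain_map E S T f \<longleftrightarrow> is_bcomplex E S \<and> is_bcomplex E T \<and>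
     (\<forall>n. f n \<in> hom E (fst S n) (fst T n) \<and>
          cmp E (snd T n) (f n) = cmp E (f (n + 1)) (snd S n))"

definition Cb :: "('o, 'm) category \<Rightarrow> (('o, 'm) cx, ('o, 'm) chmap) category" where
  "Cb E = \<lparr> obj = {x. is_bcomplex E x},
            arr = {m. is_chain_map E (fst m) (fst (snd m)) (snd (snd m))},
            src = (\<lambda>m. fst m),
            tgt = (\<lambda>m. fst (snd m)),
            ident = (\<lambda>x. (x, x, \<lambda>n. ident E (fst x n))),
            cmp = (\<lambda>g f. (fst f, fst (snd g), \<lambda>n. cmp E (snd (snd g) n) (snd (snd f) n))),
            addm = (\<lambda>f g. (fst f, fst (snd f), \<lambda>n. addm E (snd (snd f) n) (snd (snd g) n))),
            zro = (\<lambda>x y. (x, y, \<lambda>n. zro E (fst x n) (fst y n))) \<rparr>"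

definition Cb_conf :: "('o, 'm) category \<Rightarrow> ('m \<times> 'm) set \<Rightarrow> (('o, 'm) chmap \<times> ('o, 'm) chmap) set" where
  "Cb_conf E Conf = {(f, g). f \<in> arr (Cb E) \<and> g \<in> arr (Cb E) \<and> tgt (Cb E) f = src (Cb E) g \<and>
                      (\<forall>n. (snd (snd f) n, snd (snd g) n) \<in> Conf)}"

definition Cb_sub :: "('o, 'm) category \<Rightarrow> 'o set \<Rightarrow> ('o, 'm) cx set" where
  "Cb_sub E A = {x \<in> obj (Cb E). \<forall>n. fst x n \<in> A}"

end

theory Submission
  imports Defs
begin

lemma hom_iff: "f \<in> hom C a b \<longleftrightarrow> f \<in> arr C \<and> src C f = a \<and> tgt C f = b"
  by (simp add: hom_def)

locale rex =
  fixes E :: "('o, 'm) category" and Conf :: "('m \<times> 'm) set"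
  assumes rex: "right_exact E Conf"
begin

lemma cc: "conflation_category E Conf" using rex by (simp add: right_exact_def)
lemma addc: "additive_category E" using cc by (simp add: conflation_category_def)
lemma pre: "preadditive E" using addc by (simp add: additive_category_def)
lemma cat: "is_category E" using pre unfolding preadditive_def by (elim conjE) blast

lemma arr_obj: "f \<in> arr E \<Longrightarrow> src E f \<in> obj E \<and> tgt E f \<in> obj E"
  using cat by (simp add: is_category_def)
lemma hom_obj: "f \<in> hom E a b \<Longrightarrow> a \<in> obj E \<and> b \<in> obj E"
  using arr_obj by (auto simp: hom_iff)
lemma arr_hom: "f \<in> arr E \<Longrightarrow> f \<in> hom E (src E f) (tgt E f)"
  by (simp add: hom_iff)
lemma id_hom[simp]: "a \<in> obj E \<Longrightarrow> ident E a \<in> hom E a a"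
  using cat by (simp add: is_category_def)
lemma cat4: "\<forall>a b c f g. f \<in> hom E a b \<longrightarrow> g \<in> hom E b c \<longrightarrow> cmp E g f \<in> hom E a c"
  using cat by (simp add: is_category_def)
lemma cat5: "\<forall>a b f. f \<in> hom E a b \<longrightarrow> cmp E f (ident E a) = f \<and> cmp E (ident E b) f = f"
  using cat by (simp add: is_category_def)
lemma cat6: "\<forall>a b c d f g h. f \<in> hom E a b \<longrightarrow> g \<in> hom E b c \<longrightarrow> h \<in> hom E c d \<longrightarrow>
        cmp E h (cmp E g f) = cmp E (cmp E h g) f"
  using cat by (simp add: is_category_def)
lemma id_props[simp]: "a \<in> obj E \<Longrightarrow> ident E a \<in> arr E"
  "a \<in> obj E \<Longrightarrow> src E (ident E a) = a" "a \<in> obj E \<Longrightarrow> tgt E (ident E a) = a"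
  using id_hom by (auto simp: hom_iff)
lemma cmp_hom: "f \<in> hom E a b \<Longrightarrow> g \<in> hom E b c \<Longrightarrow> cmp E g f \<in> hom E a c"
  using cat4 by blast
lemma id_r: "f \<in> hom E a b \<Longrightarrow> cmp E f (ident E a) = f"
  using cat5 by blast
lemma id_l: "f \<in> hom E a b \<Longrightarrow> cmp E (ident E b) f = f"
  using cat5 by blast
lemma assoc: "f \<in> hom E a b \<Longrightarrow> g \<in> hom E b c \<Longrightarrow> h \<in> hom E c d \<Longrightarrow>
   cmp E h (cmp E g f) = cmp E (cmp E h g) f"
  using cat6 by blast

lemma zro_hom[simp]: "a \<in> obj E \<Longrightarrow> b \<in> obj E \<Longrightarrow> zro E a b \<in> hom E a b"
  using pre by (simp add: preadditive_def)
lemma zro_props[simp]: "a \<in> obj E \<Longrightarrow> b \<in> obj E \<Longrightarrow> zro E a b \<in> arr E"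
  "a \<in> obj E \<Longrightarrow> b \<in> obj E \<Longrightarrow> src E (zro E a b) = a"
  "a \<in> obj E \<Longrightarrow> b \<in> obj E \<Longrightarrow> tgt E (zro E a b) = b"
  using zro_hom by (auto simp: hom_iff)
lemma pa2: "\<forall>a b f g. f \<in> hom E a b \<longrightarrow> g \<in> hom E a b \<longrightarrow>
        addm E f g \<in> hom E a b \<and> addm E f g = addm E g f"
  using pre by (simp add: preadditive_def)
lemma pa3: "\<forall>a b f g h. f \<in> hom E a b \<longrightarrow> g \<in> hom E a b \<longrightarrow> h \<in> hom E a b \<longrightarrow>
        addm E (addm E f g) h = addm E f (addm E g h)"
  using pre by (simp add: preadditive_def)
lemma pa4: "\<forall>a b f. f \<in> hom E a b \<longrightarrow> addm E f (zro E a b) = f"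
  using pre by (simp add: preadditive_def)
lemma pa5: "\<forall>a b f. f \<in> hom E a b \<longrightarrow> (\<exists>g\<in>hom E a b. addm E f g = zro E a b)"
  using pre by (simp add: preadditive_def)
lemma pa6: "\<forall>a b c f g h. f \<in> hom E a b \<longrightarrow> g \<in> hom E a b \<longrightarrow> h \<in> hom E b c \<longrightarrow>
        cmp E h (addm E f g) = addm E (cmp E h f) (cmp E h g)"
  using pre by (simp add: preadditive_def)
lemma pa7: "\<forall>a b c f g h. f \<in> hom E a b \<longrightarrow> g \<in> hom E b c \<longrightarrow> h \<in> hom E b c \<longrightarrow>
        cmp E (addm E g h) f = addm E (cmp E g f) (cmp E h f)"
  using pre by (simp add: preadditive_def)
lemma add_hom: "f \<in> hom E a b \<Longrightarrow> g \<in> hom E a b \<Longrightarrow> addm E f g \<in> hom E a b"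
  using pa2 by blast
lemma add_comm: "f \<in> hom E a b \<Longrightarrow> g \<in> hom E a b \<Longrightarrow> addm E f g = addm E g f"
  using pa2 by blast
lemma add_assoc: "f \<in> hom E a b \<Longrightarrow> g \<in> hom E a b \<Longrightarrow> h \<in> hom E a b \<Longrightarrow>
        addm E (addm E f g) h = addm E f (addm E g h)"
  using pa3 by blast
lemma add_zero: "f \<in> hom E a b \<Longrightarrow> addm E f (zro E a b) = f"
  using pa4 by blast
lemma neg_ex: "f \<in> hom E a b \<Longrightarrow> \<exists>g\<in>hom E a b. addm E f g = zro E a b"
  using pa5 by blast
lemma dist_l: "f \<in> hom E a b \<Longrightarrow> g \<in> hom E a b \<Longrightarrow> h \<in> hom E b c \<Longrightarrow>
        cmp E h (addm E f g) = addm E (cmp E h f) (cmp E h g)"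
  using pa6 by blast
lemma dist_r: "f \<in> hom E a b \<Longrightarrow> g \<in> hom E b c \<Longrightarrow> h \<in> hom E b c \<Longrightarrow>
        cmp E (addm E g h) f = addm E (cmp E g f) (cmp E h f)"
  using pa7 by blast
lemma zero_add: "f \<in> hom E a b \<Longrightarrow> addm E (zro E a b) f = f"
proof -
  assume f: "f \<in> hom E a b"
  then have "zro E a b \<in> hom E a b" using hom_obj zro_hom by blast
  then show ?thesis using add_zero add_comm f by metis
qed
lemma idem_zero: assumes x: "x \<in> hom E a b" and e: "addm E x x = x" shows "x = zro E a b"
proof -
  obtain y where y: "y \<in> hom E a b" "addm E x y = zro E a b" using neg_ex[OF x] by blast
  have "zro E a b = addm E (addm E x x) y" using e y by simp
  also have "\<dots> = addm E x (addm E x y)" using add_assoc x y by blast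
  also have "\<dots> = x" using y add_zero x by simp
  finally show ?thesis by simp
qed

lemma neg_unique: assumes x: "x \<in> hom E a b" and y: "y \<in> hom E a b" and y': "y' \<in> hom E a b"
  and e1: "addm E x y = zro E a b" and e2: "addm E x y' = zro E a b" shows "y = y'"
proof -
  have "y = addm E y (addm E x y')" using e2 add_zero y by simp
  also have "\<dots> = addm E (addm E y x) y'" using add_assoc x y y' by simp
  also have "\<dots> = addm E (addm E x y) y'" using add_comm x y by simp
  also have "\<dots> = y'" using e1 zero_add y' by simp
  finally show ?thesis .
qed

lemma cmp_zro_r: assumes h: "h \<in> hom E b c" and a: "a \<in> obj E"
  shows "cmp E h (zro E a b) = zro E a c"
proof -
  have b: "b \<in> obj E" "c \<in> obj E" using hom_obj h by auto
  have z: "zro E a b \<in> hom E a b" using a b by simp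
  have hz: "cmp E h (zro E a b) \<in> hom E a c" using cmp_hom z h by blast
  have "cmp E h (zro E a b) = cmp E h (addm E (zro E a b) (zro E a b))"
    using add_zero z by simp
  also have "\<dots> = addm E (cmp E h (zro E a b)) (cmp E h (zro E a b))"
    using dist_l z h by blast
  finally show ?thesis using idem_zero hz by metis
qed

lemma cmp_zro_l: assumes f: "f \<in> hom E a b" and c: "c \<in> obj E"
  shows "cmp E (zro E b c) f = zro E a c"
proof -
  have b: "a \<in> obj E" "b \<in> obj E" using hom_obj f by auto
  have z: "zro E b c \<in> hom E b c" using c b by simp
  have hz: "cmp E (zro E b c) f \<in> hom E a c" using cmp_hom z f by blast
  have "cmp E (zro E b c) f = cmp E (addm E (zro E b c) (zro E b c)) f"
    using add_zero z by simp
  also have "\<dots> = addm E (cmp E (zro E b c) f) (cmp E (zro E b c) f)"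
    using dist_r z f by blast
  finally show ?thesis using idem_zero hz by metis
qed

lemma add_zro_zro: "a \<in> obj E \<Longrightarrow> b \<in> obj E \<Longrightarrow> addm E (zro E a b) (zro E a b) = zro E a b"
  using add_zero zro_hom by blast

lemma zero_obj: "is_zero_obj E z \<Longrightarrow> z \<in> obj E"
  by (simp add: is_zero_obj_def)
lemma zero_from: "is_zero_obj E z \<Longrightarrow> f \<in> hom E z a \<Longrightarrow> f = zro E z a"
  unfolding is_zero_obj_def using hom_obj zro_hom by metis
lemma zero_to: "is_zero_obj E z \<Longrightarrow> f \<in> hom E a z \<Longrightarrow> f = zro E a z"
  unfolding is_zero_obj_def using hom_obj zro_hom by metis
lemma zero_id: "is_zero_obj E z \<Longrightarrow> ident E z = zro E z z"
  using zero_from id_hom zero_obj by blast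
lemma id_zero_imp: assumes a: "a \<in> obj E" and e: "ident E a = zro E a a"
  shows "is_zero_obj E a"
  unfolding is_zero_obj_def
proof (intro conjI ballI a)
  fix b assume b: "b \<in> obj E"
  have 1: "f = zro E a b" if "f \<in> hom E a b" for f
  proof -
    have "f = cmp E f (ident E a)" using id_r that by simp
    also have "\<dots> = zro E a b" using e cmp_zro_r that a by simp
    finally show ?thesis .
  qed
  have 2: "f = zro E b a" if "f \<in> hom E b a" for f
  proof -
    have "f = cmp E (ident E a) f" using id_l that by simp
    also have "\<dots> = zro E b a" using e cmp_zro_l that a by simp
    finally show ?thesis .
  qed
  show "\<exists>!f. f \<in> hom E a b" using 1 a b zro_hom by blast
  show "\<exists>!f. f \<in> hom E b a" using 2 a b zro_hom by blast
qed

lemma ex_zero: "\<exists>z. is_zero_obj E z"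
  using addc by (simp add: additive_category_def)

lemma conf_kc: "(f, g) \<in> Conf \<Longrightarrow> kernel_cokernel_pair E f g"
  using cc by (simp add: conflation_category_def)

lemma conf_basic: assumes "(f, g) \<in> Conf"
  shows "f \<in> arr E" "g \<in> arr E" "tgt E f = src E g"
    "cmp E g f = zro E (src E f) (tgt E g)"
  using conf_kc[OF assms] by (auto simp: kernel_cokernel_pair_def is_kernel_def)

lemma conf_ker: assumes "(f, g) \<in> Conf" "h \<in> arr E" "tgt E h = src E g"
   "cmp E g h = zro E (src E h) (tgt E g)"
  shows "\<exists>!u. u \<in> hom E (src E h) (src E f) \<and> cmp E f u = h"
  using conf_kc[OF assms(1)] assms(2-) by (simp add: kernel_cokernel_pair_def is_kernel_def)

lemma conf_coker: assumes "(f, g) \<in> Conf" "h \<in> arr E" "src E h = tgt E f"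
   "cmp E h f = zro E (src E f) (tgt E h)"
  shows "\<exists>!u. u \<in> hom E (tgt E g) (tgt E h) \<and> cmp E u g = h"
  using conf_kc[OF assms(1)] assms(2-) by (simp add: kernel_cokernel_pair_def is_cokernel_def)

lemma conf_mono: assumes c: "(f, g) \<in> Conf" and u: "u \<in> hom E x (src E f)" and v: "v \<in> hom E x (src E f)"
  and e: "cmp E f u = cmp E f v" shows "u = v"
proof -
  note b = conf_basic[OF c]
  have fh: "f \<in> hom E (src E f) (tgt E f)" using b by (simp add: hom_iff)
  have gh: "g \<in> hom E (src E g) (tgt E g)" using b by (simp add: hom_iff)
  have fu: "cmp E f u \<in> hom E x (tgt E f)" using cmp_hom u fh by blast
  have xo: "x \<in> obj E" using hom_obj u by blast
  have gh': "g \<in> hom E (tgt E f) (tgt E g)" using gh b by simp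
  have "cmp E g (cmp E f u) = cmp E (cmp E g f) u" using assoc[OF u fh gh'] by simp
  also have "\<dots> = zro E x (tgt E g)" using b cmp_zro_l u arr_obj by simp
  finally have z: "cmp E g (cmp E f u) = zro E x (tgt E g)" .
  show ?thesis using conf_ker[OF c, of "cmp E f u"] fu z u v e b by (auto simp: hom_iff)
qed

lemma conf_epi: assumes c: "(f, g) \<in> Conf" and u: "u \<in> hom E (tgt E g) y" and v: "v \<in> hom E (tgt E g) y"
  and e: "cmp E u g = cmp E v g" shows "u = v"
proof -
  note b = conf_basic[OF c]
  have fh: "f \<in> hom E (src E f) (tgt E f)" using b by (simp add: hom_iff)
  have gh: "g \<in> hom E (tgt E f) (tgt E g)" using b by (simp add: hom_iff)
  have ug: "cmp E u g \<in> hom E (tgt E f) y" using cmp_hom u gh by blast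
  have yo: "y \<in> obj E" using hom_obj u by blast
  have "cmp E (cmp E u g) f = cmp E u (cmp E g f)" using assoc[OF fh gh u] by simp
  also have "\<dots> = zro E (src E f) y" using b cmp_zro_r u arr_obj by simp
  finally have z: "cmp E (cmp E u g) f = zro E (src E f) y" .
  show ?thesis using conf_coker[OF c, of "cmp E u g"] ug z u v e b by (auto simp: hom_iff)
qed

lemma defl_epi: "deflation E Conf g \<Longrightarrow> u \<in> hom E (tgt E g) y \<Longrightarrow> v \<in> hom E (tgt E g) y \<Longrightarrow>
   cmp E u g = cmp E v g \<Longrightarrow> u = v"
  unfolding deflation_def using conf_epi by blast
lemma infl_mono: "inflation E Conf f \<Longrightarrow> u \<in> hom E x (src E f) \<Longrightarrow> v \<in> hom E x (src E f) \<Longrightarrow>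
   cmp E f u = cmp E f v \<Longrightarrow> u = v"
  unfolding inflation_def using conf_mono by blast

lemma defl_arr: "deflation E Conf g \<Longrightarrow> g \<in> arr E"
  unfolding deflation_def using conf_basic by blast
lemma infl_arr: "inflation E Conf g \<Longrightarrow> g \<in> arr E"
  unfolding inflation_def using conf_basic by blast

lemma defl_comp: "deflation E Conf g \<Longrightarrow> deflation E Conf h \<Longrightarrow> tgt E g = src E h \<Longrightarrow>
        deflation E Conf (cmp E h g)"
  using rex by (simp add: right_exact_def)

lemma pb_ex: "deflation E Conf g \<Longrightarrow> t \<in> arr E \<Longrightarrow> tgt E t = tgt E g \<Longrightarrow>
        \<exists>p g'. is_pullback E g t p g'"
  using rex by (simp add: right_exact_def)
lemma pb_defl: "deflation E Conf g \<Longrightarrow> t \<in> arr E \<Longrightarrow> tgt E t = tgt E g \<Longrightarrow>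
        is_pullback E g t p g' \<Longrightarrow> deflation E Conf g'"
  using rex by (simp add: right_exact_def)

lemma zero_defl: "is_zero_obj E z \<Longrightarrow> deflation E Conf (ident E z)"
  using rex by (simp add: right_exact_def)

lemma iso_closed: "(f, g) \<in> Conf \<Longrightarrow> f' \<in> arr E \<Longrightarrow> g' \<in> arr E \<Longrightarrow> tgt E f' = src E g' \<Longrightarrow>
        a \<in> hom E (src E f) (src E f') \<Longrightarrow> b \<in> hom E (tgt E f) (tgt E f') \<Longrightarrow>
        c \<in> hom E (tgt E g) (tgt E g') \<Longrightarrow> is_iso E a \<Longrightarrow> is_iso E b \<Longrightarrow> is_iso E c \<Longrightarrow>
        cmp E b f = cmp E f' a \<Longrightarrow> cmp E c g = cmp E g' b \<Longrightarrow> (f', g') \<in> Conf"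
  using cc by (simp add: conflation_category_def)

lemma id_iso: assumes a: "a \<in> obj E" shows "is_iso E (ident E a)"
proof -
  have i: "ident E a \<in> hom E a a" using a by simp
  then have "cmp E (ident E a) (ident E a) = ident E a" using id_l by blast
  then show ?thesis unfolding is_iso_def using i by (auto simp: hom_iff)
qed

lemma id_defl: assumes a: "a \<in> obj E" shows "deflation E Conf (ident E a)"
proof -
  obtain z where z: "is_zero_obj E z" using ex_zero by blast
  have zo: "z \<in> obj E" using zero_obj z by blast
  let ?t = "zro E a z"
  have t: "?t \<in> hom E a z" using a zo by simp
  have ih: "ident E a \<in> hom E a a" "ident E z \<in> hom E z z" using a zo by auto
  have pb: "is_pullback E (ident E z) ?t ?t (ident E a)"
    unfolding is_pullback_def
  proof (intro conjI allI impI)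
    show "cmp E (ident E z) ?t = cmp E ?t (ident E a)" using id_l id_r t by simp
    fix u v assume uv: "u \<in> arr E \<and> v \<in> arr E \<and> src E u = src E v \<and> tgt E u = src E (ident E z) \<and>
      tgt E v = src E ?t \<and> cmp E (ident E z) u = cmp E ?t v"
    have v: "v \<in> hom E (src E u) a" using uv ih t by (auto simp: hom_iff)
    have u: "u \<in> hom E (src E u) z" using uv ih t by (auto simp: hom_iff)
    have tv: "cmp E ?t v \<in> hom E (src E u) z" using cmp_hom v t by blast
    have "cmp E ?t v = u" using zero_to[OF z u] zero_to[OF z tv] by simp
    then show "\<exists>!w. w \<in> hom E (src E u) (src E ?t) \<and> cmp E ?t w = u \<and> cmp E (ident E a) w = v"
    proof (intro ex1I[of _ v] conjI)
      fix w assume w: "w \<in> hom E (src E u) (src E ?t) \<and> cmp E ?t w = u \<and> cmp E (ident E a) w = v"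
      then have "w \<in> hom E (src E u) a" using t by (simp add: hom_iff)
      then show "w = v" using w id_l by metis
    qed (use v id_l t in \<open>auto simp: hom_iff\<close>)
  qed (use ih t in \<open>auto simp: hom_iff\<close>)
  show ?thesis using pb_defl[OF zero_defl[OF z], of ?t "?t" "ident E a"] pb t ih by (auto simp: hom_iff)
qed

lemma iso_defl: assumes u: "is_iso E u" shows "deflation E Conf u"
proof -
  have ua: "u \<in> arr E" using u by (simp add: is_iso_def)
  let ?a = "src E u"
  obtain k where k: "(k, ident E ?a) \<in> Conf" using id_defl arr_obj ua by (auto simp: deflation_def)
  note b = conf_basic[OF k]
  have ao: "?a \<in> obj E" "tgt E u \<in> obj E" using arr_obj ua by auto
  have ih: "ident E ?a \<in> hom E ?a ?a" using ao by simp
  have kh: "k \<in> hom E (src E k) ?a" using b ih by (simp add: hom_iff)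
  have e1: "cmp E (ident E ?a) k = cmp E k (ident E (src E k))" using id_l[OF kh] id_r[OF kh] by simp
  have sk: "src E k \<in> obj E" using b(1) arr_obj by blast
  have "(k, u) \<in> Conf"
    apply (rule iso_closed[OF k, of k u "ident E (src E k)" "ident E ?a" u])
    using e1 b(1-3) ao ua id_iso kh u ih sk by (auto simp: hom_iff)
  then show ?thesis by (auto simp: deflation_def)
qed

lemma inv_ex: "is_iso E u \<Longrightarrow> \<exists>v\<in>hom E (tgt E u) (src E u). cmp E v u = ident E (src E u) \<and> cmp E u v = ident E (tgt E u)"
  by (simp add: is_iso_def)

lemma infl_iso: assumes f: "inflation E Conf f" and u: "is_iso E u" and st: "src E u = tgt E f"
  shows "inflation E Conf (cmp E u f)"
proof -
  obtain g where c: "(f, g) \<in> Conf" using f by (auto simp: inflation_def)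
  note b = conf_basic[OF c]
  obtain v where v: "v \<in> hom E (tgt E u) (src E u)" "cmp E v u = ident E (src E u)" "cmp E u v = ident E (tgt E u)"
    using inv_ex[OF u] by blast
  have ua: "u \<in> hom E (src E u) (tgt E u)" using u by (simp add: is_iso_def hom_iff)
  have fh: "f \<in> hom E (src E f) (tgt E f)" "g \<in> hom E (tgt E f) (tgt E g)" using b by (auto simp: hom_iff)
  have uf: "cmp E u f \<in> hom E (src E f) (tgt E u)" using cmp_hom fh ua st by auto
  have gv: "cmp E g v \<in> hom E (tgt E u) (tgt E g)" using cmp_hom fh v st by auto
  have ob: "src E f \<in> obj E" "tgt E g \<in> obj E" using arr_obj b by auto
  have e1: "cmp E u f = cmp E (cmp E u f) (ident E (src E f))" using id_r uf by simp
  have ua2: "u \<in> hom E (tgt E f) (tgt E u)" using ua st by simp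
  have v2: "v \<in> hom E (tgt E u) (tgt E f)" using v(1) st by simp
  have "cmp E (cmp E g v) u = cmp E g (cmp E v u)" using assoc[OF ua2 v2 fh(2)] by simp
  also have "\<dots> = g" using v fh id_r st by simp
  finally have e2: "cmp E (ident E (tgt E g)) g = cmp E (cmp E g v) u" using id_l fh by simp
  have "(cmp E u f, cmp E g v) \<in> Conf"
    apply (rule iso_closed[OF c _ _ _ _ _ _ id_iso u id_iso])
    using uf gv ua st ob e1 e2 by (auto simp: hom_iff)
  then show ?thesis by (auto simp: inflation_def)
qed

lemma defl_iso_r: "deflation E Conf g \<Longrightarrow> is_iso E u \<Longrightarrow> tgt E u = src E g \<Longrightarrow> deflation E Conf (cmp E g u)"
  by (rule defl_comp[OF iso_defl]) auto
lemma defl_iso_l: "deflation E Conf g \<Longrightarrow> is_iso E u \<Longrightarrow> src E u = tgt E g \<Longrightarrow> deflation E Conf (cmp E u g)"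
  by (rule defl_comp[OF _ iso_defl]) auto

lemma defl_from_zero: assumes g: "deflation E Conf g" and z: "is_zero_obj E (src E g)"
  shows "is_zero_obj E (tgt E g)"
proof -
  have ga: "g \<in> arr E" using defl_arr g by blast
  let ?b = "tgt E g"
  have bo: "?b \<in> obj E" using arr_obj ga by blast
  have gh: "g \<in> hom E (src E g) ?b" using ga by (simp add: hom_iff)
  have i: "ident E ?b \<in> hom E ?b ?b" "zro E ?b ?b \<in> hom E ?b ?b" using bo by auto
  have c1: "cmp E (ident E ?b) g \<in> hom E (src E g) ?b" "cmp E (zro E ?b ?b) g \<in> hom E (src E g) ?b"
    using cmp_hom gh i by blast+
  have "cmp E (ident E ?b) g = cmp E (zro E ?b ?b) g" using zero_from[OF z c1(1)] zero_from[OF z c1(2)] by simp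
  then have "ident E ?b = zro E ?b ?b" using defl_epi[OF g] i by blast
  then show ?thesis using id_zero_imp bo by blast
qed

lemma infl_to_zero: assumes g: "inflation E Conf f" and z: "is_zero_obj E (tgt E f)"
  shows "is_zero_obj E (src E f)"
proof -
  have ga: "f \<in> arr E" using infl_arr g by blast
  let ?b = "src E f"
  have bo: "?b \<in> obj E" using arr_obj ga by blast
  have gh: "f \<in> hom E ?b (tgt E f)" using ga by (simp add: hom_iff)
  have i: "ident E ?b \<in> hom E ?b ?b" "zro E ?b ?b \<in> hom E ?b ?b" using bo by auto
  have c1: "cmp E f (ident E ?b) \<in> hom E ?b (tgt E f)" "cmp E f (zro E ?b ?b) \<in> hom E ?b (tgt E f)"
    using cmp_hom gh i by blast+
  have "cmp E f (ident E ?b) = cmp E f (zro E ?b ?b)" using zero_to[OF z c1(1)] zero_to[OF z c1(2)] by simp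
  then have "ident E ?b = zro E ?b ?b" using infl_mono[OF g] i by blast
  then show ?thesis using id_zero_imp bo by blast
qed


lemma cmp_arr[simp]: "f \<in> arr E \<Longrightarrow> g \<in> arr E \<Longrightarrow> tgt E f = src E g \<Longrightarrow> cmp E g f \<in> arr E"
  using cmp_hom[of f "src E f" "tgt E f" g "tgt E g"] by (auto simp: hom_iff)
lemma cmp_src[simp]: "f \<in> arr E \<Longrightarrow> g \<in> arr E \<Longrightarrow> tgt E f = src E g \<Longrightarrow> src E (cmp E g f) = src E f"
  using cmp_hom[of f "src E f" "tgt E f" g "tgt E g"] by (auto simp: hom_iff)
lemma cmp_tgt[simp]: "f \<in> arr E \<Longrightarrow> g \<in> arr E \<Longrightarrow> tgt E f = src E g \<Longrightarrow> tgt E (cmp E g f) = tgt E g"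
  using cmp_hom[of f "src E f" "tgt E f" g "tgt E g"] by (auto simp: hom_iff)
lemma assoc_arr: "f \<in> arr E \<Longrightarrow> g \<in> arr E \<Longrightarrow> h \<in> arr E \<Longrightarrow> tgt E f = src E g \<Longrightarrow> tgt E g = src E h \<Longrightarrow>
   cmp E (cmp E h g) f = cmp E h (cmp E g f)"
  using assoc[of f "src E f" "tgt E f" g "tgt E g" h "tgt E h"] by (auto simp: hom_iff)
lemma idl_arr[simp]: "f \<in> arr E \<Longrightarrow> tgt E f = b \<Longrightarrow> cmp E (ident E b) f = f"
  using id_l[of f "src E f" "tgt E f"] by (auto simp: hom_iff)
lemma idr_arr[simp]: "f \<in> arr E \<Longrightarrow> src E f = a \<Longrightarrow> cmp E f (ident E a) = f"
  using id_r[of f "src E f" "tgt E f"] by (auto simp: hom_iff)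
lemma zl_arr[simp]: "f \<in> arr E \<Longrightarrow> tgt E f = b \<Longrightarrow> c \<in> obj E \<Longrightarrow> cmp E (zro E b c) f = zro E (src E f) c"
  using cmp_zro_l[of f "src E f" "tgt E f" c] by (auto simp: hom_iff)
lemma zr_arr[simp]: "f \<in> arr E \<Longrightarrow> src E f = b \<Longrightarrow> a \<in> obj E \<Longrightarrow> cmp E f (zro E a b) = zro E a (tgt E f)"
  using cmp_zro_r[of f "src E f" "tgt E f" a] by (auto simp: hom_iff)
lemma add_arr[simp]: "f \<in> arr E \<Longrightarrow> g \<in> arr E \<Longrightarrow> src E f = src E g \<Longrightarrow> tgt E f = tgt E g \<Longrightarrow>
   addm E f g \<in> arr E \<and> src E (addm E f g) = src E f \<and> tgt E (addm E f g) = tgt E f"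
  using add_hom[of f "src E f" "tgt E f" g] by (auto simp: hom_iff)
lemma arr_src_obj[simp]: "f \<in> arr E \<Longrightarrow> src E f \<in> obj E" using arr_obj by blast
lemma arr_tgt_obj[simp]: "f \<in> arr E \<Longrightarrow> tgt E f \<in> obj E" using arr_obj by blast

end



abbreviation cps :: "('o, 'm) chmap \<Rightarrow> int \<Rightarrow> 'm" where "cps m \<equiv> snd (snd m)"

lemma Cb_simps[simp]:
  "obj (Cb E) = {x. is_bcomplex E x}"
  "arr (Cb E) = {m. is_chain_map E (fst m) (fst (snd m)) (snd (snd m))}"
  "src (Cb E) m = fst m" "tgt (Cb E) m = fst (snd m)"
  "ident (Cb E) x = (x, x, \<lambda>n. ident E (fst x n))"
  "cmp (Cb E) g f = (fst f, fst (snd g), \<lambda>n. cmp E (snd (snd g) n) (snd (snd f) n))"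
  "addm (Cb E) f g = (fst f, fst (snd f), \<lambda>n. addm E (snd (snd f) n) (snd (snd g) n))"
  "zro (Cb E) x y = (x, y, \<lambda>n. zro E (fst x n) (fst y n))"
  by (simp_all add: Cb_def)

lemma hom_Cb: "m \<in> hom (Cb E) x y \<longleftrightarrow> (\<exists>f. m = (x, y, f) \<and> is_chain_map E x y f)"
  by (cases m) (auto simp: hom_iff)

lemma hom_CbI: "is_chain_map E x y f \<Longrightarrow> (x, y, f) \<in> hom (Cb E) x y"
  by (simp add: hom_Cb)

lemma hom_CbD: "m \<in> hom (Cb E) x y \<Longrightarrow> m = (x, y, cps m) \<and> is_chain_map E x y (cps m)"
  by (auto simp: hom_Cb)

lemma arr_CbD: "m \<in> arr (Cb E) \<Longrightarrow> m \<in> hom (Cb E) (fst m) (fst (snd m))"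
  by (simp add: hom_iff)

context rex
begin

lemma bc_obj: "is_bcomplex E x \<Longrightarrow> fst x n \<in> obj E"
  by (simp add: is_bcomplex_def)
lemma bc_d: "is_bcomplex E x \<Longrightarrow> snd x n \<in> hom E (fst x n) (fst x (n + 1))"
  by (simp add: is_bcomplex_def)
lemma bc_dd: "is_bcomplex E x \<Longrightarrow> cmp E (snd x (n + 1)) (snd x n) = zro E (fst x n) (fst x (n + 2))"
  by (simp add: is_bcomplex_def)
lemma bc_bd: "is_bcomplex E x \<Longrightarrow> \<exists>N::int. \<forall>n. N < \<bar>n\<bar> \<longrightarrow> is_zero_obj E (fst x n)"
  by (simp add: is_bcomplex_def)
lemma bcI: "(\<And>n. fst x n \<in> obj E) \<Longrightarrow> (\<And>n. snd x n \<in> hom E (fst x n) (fst x (n + 1))) \<Longrightarrow>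
  (\<And>n. cmp E (snd x (n + 1)) (snd x n) = zro E (fst x n) (fst x (n + 2))) \<Longrightarrow>
  (\<And>n. N < \<bar>n\<bar> \<Longrightarrow> is_zero_obj E (fst x n)) \<Longrightarrow> is_bcomplex E x"
  unfolding is_bcomplex_def by blast

lemma cm_hom: "is_chain_map E S T f \<Longrightarrow> f n \<in> hom E (fst S n) (fst T n)"
  by (simp add: is_chain_map_def)
lemma cm_comm: "is_chain_map E S T f \<Longrightarrow> cmp E (snd T n) (f n) = cmp E (f (n + 1)) (snd S n)"
  by (simp add: is_chain_map_def)
lemma cm_bc: "is_chain_map E S T f \<Longrightarrow> is_bcomplex E S \<and> is_bcomplex E T"
  by (simp add: is_chain_map_def)
lemma cmI: "is_bcomplex E S \<Longrightarrow> is_bcomplex E T \<Longrightarrow> (\<And>n. f n \<in> hom E (fst S n) (fst T n)) \<Longrightarrow>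
   (\<And>n. cmp E (snd T n) (f n) = cmp E (f (n + 1)) (snd S n)) \<Longrightarrow> is_chain_map E S T f"
  by (simp add: is_chain_map_def)

lemma homC_hom: "m \<in> hom (Cb E) x y \<Longrightarrow> cps m n \<in> hom E (fst x n) (fst y n)"
  using hom_CbD cm_hom by blast
lemma homC_comm: "m \<in> hom (Cb E) x y \<Longrightarrow> cmp E (snd y n) (cps m n) = cmp E (cps m (n + 1)) (snd x n)"
  using hom_CbD cm_comm by blast
lemma homC_bc: "m \<in> hom (Cb E) x y \<Longrightarrow> is_bcomplex E x \<and> is_bcomplex E y"
  using hom_CbD cm_bc by blast

lemma homC_eq: "m \<in> hom (Cb E) x y \<Longrightarrow> m' \<in> hom (Cb E) x y \<Longrightarrow> (\<And>n. cps m n = cps m' n) \<Longrightarrow> m = m'"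
  using hom_CbD by (metis ext)

lemma homC_intro: "is_bcomplex E x \<Longrightarrow> is_bcomplex E y \<Longrightarrow> (\<And>n. f n \<in> hom E (fst x n) (fst y n)) \<Longrightarrow>
   (\<And>n. cmp E (snd y n) (f n) = cmp E (f (n + 1)) (snd x n)) \<Longrightarrow> (x, y, f) \<in> hom (Cb E) x y"
  using hom_CbI cmI by blast

lemma cmpC_hom: assumes f: "f \<in> hom (Cb E) x y" and g: "g \<in> hom (Cb E) y z"
  shows "cmp (Cb E) g f \<in> hom (Cb E) x z"
proof -
  have bc: "is_bcomplex E x" "is_bcomplex E y" "is_bcomplex E z" using homC_bc f g by auto
  have fs: "fst f = x" "fst (snd g) = z" using hom_CbD f g by (metis fst_conv, metis fst_conv snd_conv)
  have "(x, z, \<lambda>n. cmp E (cps g n) (cps f n)) \<in> hom (Cb E) x z"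
  proof (rule homC_intro[OF bc(1) bc(3)])
    fix n
    show "cmp E (cps g n) (cps f n) \<in> hom E (fst x n) (fst z n)"
      using cmp_hom homC_hom f g by blast
    have "cmp E (snd z n) (cmp E (cps g n) (cps f n)) = cmp E (cmp E (snd z n) (cps g n)) (cps f n)"
      using assoc homC_hom f g bc_d bc by blast
    also have "\<dots> = cmp E (cmp E (cps g (n+1)) (snd y n)) (cps f n)" using homC_comm g by simp
    also have "\<dots> = cmp E (cps g (n+1)) (cmp E (snd y n) (cps f n))"
      using assoc homC_hom f g bc_d bc by metis
    also have "\<dots> = cmp E (cps g (n+1)) (cmp E (cps f (n+1)) (snd x n))" using homC_comm f by simp
    also have "\<dots> = cmp E (cmp E (cps g (n+1)) (cps f (n+1))) (snd x n)"
      using assoc homC_hom f g bc_d bc by blast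
    finally show "cmp E (snd z n) (cmp E (cps g n) (cps f n)) = cmp E (cmp E (cps g (n+1)) (cps f (n+1))) (snd x n)" .
  qed
  then show ?thesis using fs by simp
qed

lemma idC_hom: assumes x: "is_bcomplex E x" shows "ident (Cb E) x \<in> hom (Cb E) x x"
proof -
  have "(x, x, \<lambda>n. ident E (fst x n)) \<in> hom (Cb E) x x"
  proof (rule homC_intro[OF x x])
    fix n
    show "ident E (fst x n) \<in> hom E (fst x n) (fst x n)" using bc_obj x by simp
    show "cmp E (snd x n) (ident E (fst x n)) = cmp E (ident E (fst x (n + 1))) (snd x n)"
      using id_l id_r bc_d x by metis
  qed
  then show ?thesis by simp
qed

lemma Cb_cat: "is_category (Cb E)"
  unfolding is_category_def
proof (intro conjI allI ballI impI)
  fix f assume "f \<in> arr (Cb E)"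
  then show "src (Cb E) f \<in> obj (Cb E)" "tgt (Cb E) f \<in> obj (Cb E)" using cm_bc by auto
next
  fix a assume "a \<in> obj (Cb E)" then show "ident (Cb E) a \<in> hom (Cb E) a a" using idC_hom by simp
next
  fix a b c f g assume "f \<in> hom (Cb E) a b" "g \<in> hom (Cb E) b c"
  then show "cmp (Cb E) g f \<in> hom (Cb E) a c" using cmpC_hom by blast
next
  fix a b f assume f: "f \<in> hom (Cb E) a b"
  have bc: "is_bcomplex E a" "is_bcomplex E b" using homC_bc f by auto
  have i: "ident (Cb E) a \<in> hom (Cb E) a a" "ident (Cb E) b \<in> hom (Cb E) b b" using idC_hom bc by auto
  show "cmp (Cb E) f (ident (Cb E) a) = f"
    apply (rule homC_eq[OF cmpC_hom[OF i(1) f] f])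
    using id_r[OF homC_hom[OF f]] by simp
  show "cmp (Cb E) (ident (Cb E) b) f = f"
    apply (rule homC_eq[OF cmpC_hom[OF f i(2)] f])
    using id_l[OF homC_hom[OF f]] by simp
next
  fix a b c d f g h assume f: "f \<in> hom (Cb E) a b" and g: "g \<in> hom (Cb E) b c" and h: "h \<in> hom (Cb E) c d"
  show "cmp (Cb E) h (cmp (Cb E) g f) = cmp (Cb E) (cmp (Cb E) h g) f"
    apply (rule homC_eq[OF cmpC_hom[OF cmpC_hom[OF f g] h] cmpC_hom[OF f cmpC_hom[OF g h]]])
    using assoc[OF homC_hom[OF f] homC_hom[OF g] homC_hom[OF h]] by simp
qed


lemma zroC_hom: assumes x: "is_bcomplex E x" and y: "is_bcomplex E y"
  shows "zro (Cb E) x y \<in> hom (Cb E) x y"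
proof -
  have "(x, y, \<lambda>n. zro E (fst x n) (fst y n)) \<in> hom (Cb E) x y"
  proof (rule homC_intro[OF x y])
    fix n
    show "zro E (fst x n) (fst y n) \<in> hom E (fst x n) (fst y n)" using bc_obj x y by simp
    have "cmp E (snd y n) (zro E (fst x n) (fst y n)) = zro E (fst x n) (fst y (n+1))"
      using cmp_zro_r bc_d y bc_obj x by blast
    moreover have "cmp E (zro E (fst x (n + 1)) (fst y (n + 1))) (snd x n) = zro E (fst x n) (fst y (n+1))"
      using cmp_zro_l bc_d x bc_obj y by blast
    ultimately show "cmp E (snd y n) (zro E (fst x n) (fst y n)) = cmp E (zro E (fst x (n + 1)) (fst y (n + 1))) (snd x n)"
      by simp
  qed
  then show ?thesis by simp
qed

lemma addC_hom: assumes f: "f \<in> hom (Cb E) x y" and g: "g \<in> hom (Cb E) x y"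
  shows "addm (Cb E) f g \<in> hom (Cb E) x y"
proof -
  have bc: "is_bcomplex E x" "is_bcomplex E y" using homC_bc f by auto
  have fs: "fst f = x" "fst (snd f) = y" using hom_CbD f by (metis fst_conv, metis fst_conv snd_conv)
  have "(x, y, \<lambda>n. addm E (cps f n) (cps g n)) \<in> hom (Cb E) x y"
  proof (rule homC_intro[OF bc])
    fix n
    show "addm E (cps f n) (cps g n) \<in> hom E (fst x n) (fst y n)" using add_hom homC_hom f g by blast
    have "cmp E (snd y n) (addm E (cps f n) (cps g n)) = addm E (cmp E (snd y n) (cps f n)) (cmp E (snd y n) (cps g n))"
      using dist_l[OF homC_hom[OF f] homC_hom[OF g] bc_d[OF bc(2)]] by simp
    also have "\<dots> = addm E (cmp E (cps f (n+1)) (snd x n)) (cmp E (cps g (n+1)) (snd x n))"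
      using homC_comm f g by simp
    also have "\<dots> = cmp E (addm E (cps f (n+1)) (cps g (n+1))) (snd x n)"
      using dist_r[OF bc_d[OF bc(1)] homC_hom[OF f] homC_hom[OF g]] by simp
    finally show "cmp E (snd y n) (addm E (cps f n) (cps g n)) = cmp E (addm E (cps f (n+1)) (cps g (n+1))) (snd x n)" .
  qed
  then show ?thesis using fs by simp
qed

lemma negC_ex: assumes f: "f \<in> hom (Cb E) x y"
  shows "\<exists>g\<in>hom (Cb E) x y. addm (Cb E) f g = zro (Cb E) x y"
proof -
  have bc: "is_bcomplex E x" "is_bcomplex E y" using homC_bc f by auto
  have fs: "fst f = x" "fst (snd f) = y" using hom_CbD f by (metis fst_conv, metis fst_conv snd_conv)
  define g where "g n = (SOME g. g \<in> hom E (fst x n) (fst y n) \<and> addm E (cps f n) g = zro E (fst x n) (fst y n))" for n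
  have g: "g n \<in> hom E (fst x n) (fst y n) \<and> addm E (cps f n) (g n) = zro E (fst x n) (fst y n)" for n
    unfolding g_def by (rule someI_ex) (use neg_ex[OF homC_hom[OF f]] in blast)
  have gh: "(x, y, g) \<in> hom (Cb E) x y"
  proof (rule homC_intro[OF bc])
    fix n
    show "g n \<in> hom E (fst x n) (fst y n)" using g by blast
    let ?u = "cmp E (snd y n) (cps f n)"
    have dy: "snd y n \<in> hom E (fst y n) (fst y (n+1))" "snd x n \<in> hom E (fst x n) (fst x (n+1))"
      using bc_d bc by auto
    have uh: "?u \<in> hom E (fst x n) (fst y (n+1))" using cmp_hom homC_hom[OF f] dy by blast
    have h1: "cmp E (snd y n) (g n) \<in> hom E (fst x n) (fst y (n+1))" using cmp_hom g dy by blast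
    have h2: "cmp E (g (n+1)) (snd x n) \<in> hom E (fst x n) (fst y (n+1))" using cmp_hom g dy by blast
    have "addm E ?u (cmp E (snd y n) (g n)) = cmp E (snd y n) (addm E (cps f n) (g n))"
      using dist_l[OF homC_hom[OF f] _ dy(1), of "g n"] g by simp
    also have "\<dots> = zro E (fst x n) (fst y (n+1))" using g cmp_zro_r dy bc_obj bc by simp
    finally have e1: "addm E ?u (cmp E (snd y n) (g n)) = zro E (fst x n) (fst y (n+1))" .
    have "addm E ?u (cmp E (g (n+1)) (snd x n)) = addm E (cmp E (cps f (n+1)) (snd x n)) (cmp E (g (n+1)) (snd x n))"
      using homC_comm f by simp
    also have "\<dots> = cmp E (addm E (cps f (n+1)) (g (n+1))) (snd x n)"
      using dist_r[OF dy(2) homC_hom[OF f], of "g (n+1)"] g by simp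
    also have "\<dots> = zro E (fst x n) (fst y (n+1))" using g cmp_zro_l dy bc_obj bc by simp
    finally have e2: "addm E ?u (cmp E (g (n+1)) (snd x n)) = zro E (fst x n) (fst y (n+1))" .
    show "cmp E (snd y n) (g n) = cmp E (g (n + 1)) (snd x n)"
      using neg_unique[OF uh h1 h2 e1 e2] .
  qed
  moreover have "addm (Cb E) f (x, y, g) = zro (Cb E) x y"
    using g fs by simp
  ultimately show ?thesis by blast
qed

lemma Cb_pre: "preadditive (Cb E)"
  unfolding preadditive_def
proof (intro conjI allI ballI impI Cb_cat)
  fix a b assume "a \<in> obj (Cb E)" "b \<in> obj (Cb E)"
  then show "zro (Cb E) a b \<in> hom (Cb E) a b" using zroC_hom by simp
next
  fix a b f g assume f: "f \<in> hom (Cb E) a b" and g: "g \<in> hom (Cb E) a b"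
  show "addm (Cb E) f g \<in> hom (Cb E) a b" using addC_hom f g by blast
  show "addm (Cb E) f g = addm (Cb E) g f"
    by (rule homC_eq[OF addC_hom[OF f g] addC_hom[OF g f]]) (use add_comm[OF homC_hom[OF f] homC_hom[OF g]] in simp)
next
  fix a b f g h assume f: "f \<in> hom (Cb E) a b" and g: "g \<in> hom (Cb E) a b" and h: "h \<in> hom (Cb E) a b"
  show "addm (Cb E) (addm (Cb E) f g) h = addm (Cb E) f (addm (Cb E) g h)"
    by (rule homC_eq[OF addC_hom[OF addC_hom[OF f g] h] addC_hom[OF f addC_hom[OF g h]]])
      (use add_assoc[OF homC_hom[OF f] homC_hom[OF g] homC_hom[OF h]] in simp)
next
  fix a b f assume f: "f \<in> hom (Cb E) a b"
  have bc: "is_bcomplex E a" "is_bcomplex E b" using homC_bc f by auto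
  show "addm (Cb E) f (zro (Cb E) a b) = f"
    by (rule homC_eq[OF addC_hom[OF f zroC_hom[OF bc]] f]) (use add_zero[OF homC_hom[OF f]] in simp)
  show "\<exists>g\<in>hom (Cb E) a b. addm (Cb E) f g = zro (Cb E) a b" using negC_ex f by blast
next
  fix a b c f g h assume f: "f \<in> hom (Cb E) a b" and g: "g \<in> hom (Cb E) a b" and h: "h \<in> hom (Cb E) b c"
  show "cmp (Cb E) h (addm (Cb E) f g) = addm (Cb E) (cmp (Cb E) h f) (cmp (Cb E) h g)"
    by (rule homC_eq[OF cmpC_hom[OF addC_hom[OF f g] h] addC_hom[OF cmpC_hom[OF f h] cmpC_hom[OF g h]]])
      (use dist_l[OF homC_hom[OF f] homC_hom[OF g] homC_hom[OF h]] in simp)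
next
  fix a b c f g h assume f: "f \<in> hom (Cb E) a b" and g: "g \<in> hom (Cb E) b c" and h: "h \<in> hom (Cb E) b c"
  show "cmp (Cb E) (addm (Cb E) g h) f = addm (Cb E) (cmp (Cb E) g f) (cmp (Cb E) h f)"
    by (rule homC_eq[OF cmpC_hom[OF f addC_hom[OF g h]] addC_hom[OF cmpC_hom[OF f g] cmpC_hom[OF f h]]])
      (use dist_r[OF homC_hom[OF f] homC_hom[OF g] homC_hom[OF h]] in simp)
qed

end


definition isbp :: "('o, 'm) category \<Rightarrow> 'o \<Rightarrow> 'o \<Rightarrow> 'o \<times> 'm \<times> 'm \<times> 'm \<times> 'm \<Rightarrow> bool" where
  "isbp C a b t \<longleftrightarrow> (case t of (c, p1, p2, i1, i2) \<Rightarrow> c \<in> obj C \<and>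
        p1 \<in> hom C c a \<and> p2 \<in> hom C c b \<and> i1 \<in> hom C a c \<and> i2 \<in> hom C b c \<and>
        cmp C p1 i1 = ident C a \<and> cmp C p2 i2 = ident C b \<and>
        cmp C p1 i2 = zro C b a \<and> cmp C p2 i1 = zro C a b \<and>
        addm C (cmp C i1 p1) (cmp C i2 p2) = ident C c)"

context rex
begin

lemma add_zero_arr[simp]: "f \<in> arr E \<Longrightarrow> src E f = a \<Longrightarrow> tgt E f = b \<Longrightarrow> addm E f (zro E a b) = f"
  using add_zero[of f a b] by (simp add: hom_iff)
lemma zero_add_arr[simp]: "f \<in> arr E \<Longrightarrow> src E f = a \<Longrightarrow> tgt E f = b \<Longrightarrow> addm E (zro E a b) f = f"
  using zero_add[of f a b] by (simp add: hom_iff)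

lemma bp_ex: "a \<in> obj E \<Longrightarrow> b \<in> obj E \<Longrightarrow> \<exists>t. isbp E a b t"
proof -
  assume a: "a \<in> obj E" and b: "b \<in> obj E"
  have "has_biproducts E" using addc by (simp add: additive_category_def)
  then obtain c p1 p2 i1 i2 where "c \<in> obj E \<and>
        p1 \<in> hom E c a \<and> p2 \<in> hom E c b \<and> i1 \<in> hom E a c \<and> i2 \<in> hom E b c \<and>
        cmp E p1 i1 = ident E a \<and> cmp E p2 i2 = ident E b \<and>
        cmp E p1 i2 = zro E b a \<and> cmp E p2 i1 = zro E a b \<and>
        addm E (cmp E i1 p1) (cmp E i2 p2) = ident E c"
    using a b unfolding has_biproducts_def by meson
  then have "isbp E a b (c, p1, p2, i1, i2)" by (simp add: isbp_def)
  then show ?thesis by blast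
qed

lemma bcomplex_zero_cb: assumes x: "is_bcomplex E x" and z: "\<And>n. is_zero_obj E (fst x n)"
  shows "is_zero_obj (Cb E) x"
  unfolding is_zero_obj_def
proof (intro conjI ballI)
  show "x \<in> obj (Cb E)" using x by simp
  fix a assume a: "a \<in> obj (Cb E)"
  then have a': "is_bcomplex E a" by simp
  have u1: "m = zro (Cb E) x a" if "m \<in> hom (Cb E) x a" for m
    by (rule homC_eq[OF that zroC_hom[OF x a']]) (use zero_from[OF z homC_hom[OF that]] in simp)
  have u2: "m = zro (Cb E) a x" if "m \<in> hom (Cb E) a x" for m
    by (rule homC_eq[OF that zroC_hom[OF a' x]]) (use zero_to[OF z homC_hom[OF that]] in simp)
  show "\<exists>!f. f \<in> hom (Cb E) x a" using u1 zroC_hom[OF x a'] by blast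
  show "\<exists>!f. f \<in> hom (Cb E) a x" using u2 zroC_hom[OF a' x] by blast
qed

lemma zero_cb_deg: assumes z: "is_zero_obj (Cb E) x" shows "is_zero_obj E (fst x n)"
proof -
  have x: "is_bcomplex E x" using z by (simp add: is_zero_obj_def)
  have h: "ident (Cb E) x \<in> hom (Cb E) x x" "zro (Cb E) x x \<in> hom (Cb E) x x"
    using idC_hom zroC_hom x by auto
  have al: "\<forall>a\<in>obj (Cb E). \<exists>!f. f \<in> hom (Cb E) x a" using z unfolding is_zero_obj_def by blast
  have xo: "x \<in> obj (Cb E)" using x by simp
  have "\<exists>!f. f \<in> hom (Cb E) x x" using bspec[OF al xo] .
  then have "ident (Cb E) x = zro (Cb E) x x" using h by blast
  then have "ident E (fst x n) = zro E (fst x n) (fst x n)" by (simp add: fun_eq_iff)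
  then show ?thesis using id_zero_imp bc_obj x by blast
qed

definition zcx :: "'o \<Rightarrow> ('o, 'm) cx" where "zcx z = (\<lambda>n. z, \<lambda>n. zro E z z)"

lemma zcx_bc: assumes z: "is_zero_obj E z" shows "is_bcomplex E (zcx z)"
proof -
  have zo: "z \<in> obj E" using zero_obj z by blast
  show ?thesis
    by (rule bcI[of _ 0]) (use zo z in \<open>simp_all add: zcx_def\<close>)
qed

lemma zcx_zero: assumes z: "is_zero_obj E z" shows "is_zero_obj (Cb E) (zcx z)"
  using bcomplex_zero_cb[OF zcx_bc[OF z]] z by (simp add: zcx_def)


lemma isbpD: assumes "isbp E a b (c, p1, p2, i1, i2)"
  shows "c \<in> obj E" "p1 \<in> arr E" "src E p1 = c" "tgt E p1 = a" "p2 \<in> arr E" "src E p2 = c" "tgt E p2 = b"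
    "i1 \<in> arr E" "src E i1 = a" "tgt E i1 = c" "i2 \<in> arr E" "src E i2 = b" "tgt E i2 = c"
    "cmp E p1 i1 = ident E a" "cmp E p2 i2 = ident E b" "cmp E p1 i2 = zro E b a" "cmp E p2 i1 = zro E a b"
    "addm E (cmp E i1 p1) (cmp E i2 p2) = ident E c"
  using assms by (auto simp: isbp_def hom_iff)

lemma bp_jmono: assumes bp: "isbp E a b (c, p1, p2, i1, i2)"
  and u: "u \<in> hom E z c" and v: "v \<in> hom E z c"
  and e1: "cmp E p1 u = cmp E p1 v" and e2: "cmp E p2 u = cmp E p2 v"
  shows "u = v"
proof -
  note B = isbpD[OF bp]
  have h: "cmp E i1 p1 \<in> hom E c c" "cmp E i2 p2 \<in> hom E c c" using B by (auto simp: hom_iff)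
  have "w = addm E (cmp E i1 (cmp E p1 w)) (cmp E i2 (cmp E p2 w))" if w: "w \<in> hom E z c" for w
  proof -
    have wa: "w \<in> arr E" "src E w = z" "tgt E w = c" using w by (auto simp: hom_iff)
    have "w = cmp E (ident E c) w" using wa by simp
    also have "\<dots> = cmp E (addm E (cmp E i1 p1) (cmp E i2 p2)) w" using B by simp
    also have "\<dots> = addm E (cmp E (cmp E i1 p1) w) (cmp E (cmp E i2 p2) w)"
      using dist_r[OF w h] .
    also have "\<dots> = addm E (cmp E i1 (cmp E p1 w)) (cmp E i2 (cmp E p2 w))"
      using B wa by (simp add: assoc_arr)
    finally show ?thesis .
  qed
  then show ?thesis using u v e1 e2 by metis
qed

lemma Cb_biprod: "has_biproducts (Cb E)"
  unfolding has_biproducts_def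
proof (intro ballI)
  fix x y assume "x \<in> obj (Cb E)" "y \<in> obj (Cb E)"
  then have x: "is_bcomplex E x" and y: "is_bcomplex E y" by auto
  have "\<forall>n. \<exists>t. isbp E (fst x n) (fst y n) t" using bp_ex bc_obj x y by blast
  then obtain T where T: "\<And>n. isbp E (fst x n) (fst y n) (T n)" by metis
  define c where "c n = fst (T n)" for n
  define p1 where "p1 n = fst (snd (T n))" for n
  define p2 where "p2 n = fst (snd (snd (T n)))" for n
  define i1 where "i1 n = fst (snd (snd (snd (T n))))" for n
  define i2 where "i2 n = snd (snd (snd (snd (T n))))" for n
  have T': "isbp E (fst x n) (fst y n) (c n, p1 n, p2 n, i1 n, i2 n)" for n
    using T[of n] by (simp add: c_def p1_def p2_def i1_def i2_def)
  note B = isbpD[OF T']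
  have dx: "snd x n \<in> arr E" "src E (snd x n) = fst x n" "tgt E (snd x n) = fst x (n+1)" "fst x n \<in> obj E" for n
    using bc_d[OF x] bc_obj[OF x] by (auto simp: hom_iff)
  have dy: "snd y n \<in> arr E" "src E (snd y n) = fst y n" "tgt E (snd y n) = fst y (n+1)" "fst y n \<in> obj E" for n
    using bc_d[OF y] bc_obj[OF y] by (auto simp: hom_iff)
  define D where "D n = addm E (cmp E (i1 (n+1)) (cmp E (snd x n) (p1 n))) (cmp E (i2 (n+1)) (cmp E (snd y n) (p2 n)))" for n
  have Dh: "D n \<in> arr E" "src E (D n) = c n" "tgt E (D n) = c (n+1)" for n
    using add_arr[of "cmp E (i1 (n+1)) (cmp E (snd x n) (p1 n))" "cmp E (i2 (n+1)) (cmp E (snd y n) (p2 n))"]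
      B dx dy by (auto simp: D_def)
  have DH: "D n \<in> hom E (c n) (c (n+1))" for n using Dh by (simp add: hom_iff)
  have pD1: "cmp E (p1 (n+1)) (D n) = cmp E (snd x n) (p1 n)" for n
  proof -
    have h: "cmp E (i1 (n+1)) (cmp E (snd x n) (p1 n)) \<in> hom E (c n) (c (n+1))"
      "cmp E (i2 (n+1)) (cmp E (snd y n) (p2 n)) \<in> hom E (c n) (c (n+1))"
      "p1 (n+1) \<in> hom E (c (n+1)) (fst x (n+1))" using B dx dy by (auto simp: hom_iff)
    have "cmp E (p1 (n+1)) (D n) = addm E (cmp E (p1 (n+1)) (cmp E (i1 (n+1)) (cmp E (snd x n) (p1 n))))
       (cmp E (p1 (n+1)) (cmp E (i2 (n+1)) (cmp E (snd y n) (p2 n))))"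
      unfolding D_def using dist_l[OF h] .
    also have "\<dots> = addm E (cmp E (snd x n) (p1 n)) (zro E (c n) (fst x (n+1)))"
      using B dx dy by (simp add: assoc_arr[symmetric])
    also have "\<dots> = cmp E (snd x n) (p1 n)" using B dx by simp
    finally show ?thesis .
  qed
  have pD2: "cmp E (p2 (n+1)) (D n) = cmp E (snd y n) (p2 n)" for n
  proof -
    have h: "cmp E (i1 (n+1)) (cmp E (snd x n) (p1 n)) \<in> hom E (c n) (c (n+1))"
      "cmp E (i2 (n+1)) (cmp E (snd y n) (p2 n)) \<in> hom E (c n) (c (n+1))"
      "p2 (n+1) \<in> hom E (c (n+1)) (fst y (n+1))" using B dx dy by (auto simp: hom_iff)
    have "cmp E (p2 (n+1)) (D n) = addm E (cmp E (p2 (n+1)) (cmp E (i1 (n+1)) (cmp E (snd x n) (p1 n))))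
       (cmp E (p2 (n+1)) (cmp E (i2 (n+1)) (cmp E (snd y n) (p2 n))))"
      unfolding D_def using dist_l[OF h] .
    also have "\<dots> = addm E (zro E (c n) (fst y (n+1))) (cmp E (snd y n) (p2 n))"
      using B dx dy by (simp add: assoc_arr[symmetric])
    also have "\<dots> = cmp E (snd y n) (p2 n)" using B dy by simp
    finally show ?thesis .
  qed
  have Di1: "cmp E (D n) (i1 n) = cmp E (i1 (n+1)) (snd x n)" for n
  proof (rule bp_jmono[OF T'[of "n+1"]])
    show "cmp E (D n) (i1 n) \<in> hom E (fst x n) (c (n+1))" "cmp E (i1 (n+1)) (snd x n) \<in> hom E (fst x n) (c (n+1))"
      using B dx Dh by (auto simp: hom_iff)
    have "cmp E (p1 (n+1)) (cmp E (D n) (i1 n)) = cmp E (cmp E (p1 (n+1)) (D n)) (i1 n)"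
      using B Dh by (simp add: assoc_arr)
    also have "\<dots> = snd x n" using pD1 B dx dy by (simp add: assoc_arr)
    also have "\<dots> = cmp E (p1 (n+1)) (cmp E (i1 (n+1)) (snd x n))" using B dx dy by (simp add: assoc_arr[symmetric])
    finally show "cmp E (p1 (n+1)) (cmp E (D n) (i1 n)) = cmp E (p1 (n+1)) (cmp E (i1 (n+1)) (snd x n))" .
    have "cmp E (p2 (n+1)) (cmp E (D n) (i1 n)) = cmp E (cmp E (p2 (n+1)) (D n)) (i1 n)"
      using B Dh by (simp add: assoc_arr)
    also have "\<dots> = zro E (fst x n) (fst y (n+1))" using pD2 B dx dy by (simp add: assoc_arr)
    also have "\<dots> = cmp E (p2 (n+1)) (cmp E (i1 (n+1)) (snd x n))" using B dx dy by (simp add: assoc_arr[symmetric])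
    finally show "cmp E (p2 (n+1)) (cmp E (D n) (i1 n)) = cmp E (p2 (n+1)) (cmp E (i1 (n+1)) (snd x n))" .
  qed
  have Di2: "cmp E (D n) (i2 n) = cmp E (i2 (n+1)) (snd y n)" for n
  proof (rule bp_jmono[OF T'[of "n+1"]])
    show "cmp E (D n) (i2 n) \<in> hom E (fst y n) (c (n+1))" "cmp E (i2 (n+1)) (snd y n) \<in> hom E (fst y n) (c (n+1))"
      using B dy Dh by (auto simp: hom_iff)
    have "cmp E (p1 (n+1)) (cmp E (D n) (i2 n)) = cmp E (cmp E (p1 (n+1)) (D n)) (i2 n)"
      using B Dh by (simp add: assoc_arr)
    also have "\<dots> = zro E (fst y n) (fst x (n+1))" using pD1 B dx dy by (simp add: assoc_arr)
    also have "\<dots> = cmp E (p1 (n+1)) (cmp E (i2 (n+1)) (snd y n))" using B dx dy by (simp add: assoc_arr[symmetric])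
    finally show "cmp E (p1 (n+1)) (cmp E (D n) (i2 n)) = cmp E (p1 (n+1)) (cmp E (i2 (n+1)) (snd y n))" .
    have "cmp E (p2 (n+1)) (cmp E (D n) (i2 n)) = cmp E (cmp E (p2 (n+1)) (D n)) (i2 n)"
      using B Dh by (simp add: assoc_arr)
    also have "\<dots> = snd y n" using pD2 B dx dy by (simp add: assoc_arr)
    also have "\<dots> = cmp E (p2 (n+1)) (cmp E (i2 (n+1)) (snd y n))" using B dx dy by (simp add: assoc_arr[symmetric])
    finally show "cmp E (p2 (n+1)) (cmp E (D n) (i2 n)) = cmp E (p2 (n+1)) (cmp E (i2 (n+1)) (snd y n))" .
  qed
  have DD: "cmp E (D (n+1)) (D n) = zro E (c n) (c (n+2))" for n
  proof (rule bp_jmono[OF T'[of "n+2"]])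
    show "cmp E (D (n+1)) (D n) \<in> hom E (c n) (c (n+2))" "zro E (c n) (c (n+2)) \<in> hom E (c n) (c (n+2))"
      using B Dh by (auto simp: hom_iff add.assoc)
    have "cmp E (p1 (n+2)) (cmp E (D (n+1)) (D n)) = cmp E (cmp E (p1 (n+1+1)) (D (n+1))) (D n)"
      using B Dh by (simp add: assoc_arr add.assoc)
    also have "\<dots> = cmp E (cmp E (snd x (n+1)) (p1 (n+1))) (D n)" by (simp only: pD1)
    also have "\<dots> = cmp E (snd x (n+1)) (cmp E (p1 (n+1)) (D n))" using B dx dy Dh by (simp add: assoc_arr)
    also have "\<dots> = cmp E (snd x (n+1)) (cmp E (snd x n) (p1 n))" by (simp only: pD1)
    also have "\<dots> = cmp E (cmp E (snd x (n+1)) (snd x n)) (p1 n)" using B dx dy Dh by (simp add: assoc_arr)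
    also have "\<dots> = zro E (c n) (fst x (n+2))" using bc_dd[OF x] B dx by (simp add: add.assoc bc_obj[OF x])
    also have "\<dots> = cmp E (p1 (n+2)) (zro E (c n) (c (n+2)))" using B by simp
    finally show "cmp E (p1 (n+2)) (cmp E (D (n+1)) (D n)) = cmp E (p1 (n+2)) (zro E (c n) (c (n+2)))" .
    have "cmp E (p2 (n+2)) (cmp E (D (n+1)) (D n)) = cmp E (cmp E (p2 (n+1+1)) (D (n+1))) (D n)"
      using B Dh by (simp add: assoc_arr add.assoc)
    also have "\<dots> = cmp E (cmp E (snd y (n+1)) (p2 (n+1))) (D n)" by (simp only: pD2)
    also have "\<dots> = cmp E (snd y (n+1)) (cmp E (p2 (n+1)) (D n))" using B dx dy Dh by (simp add: assoc_arr)
    also have "\<dots> = cmp E (snd y (n+1)) (cmp E (snd y n) (p2 n))" by (simp only: pD2)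
    also have "\<dots> = cmp E (cmp E (snd y (n+1)) (snd y n)) (p2 n)" using B dx dy Dh by (simp add: assoc_arr)
    also have "\<dots> = zro E (c n) (fst y (n+2))" using bc_dd[OF y] B dy by (simp add: add.assoc bc_obj[OF y])
    also have "\<dots> = cmp E (p2 (n+2)) (zro E (c n) (c (n+2)))" using B by simp
    finally show "cmp E (p2 (n+2)) (cmp E (D (n+1)) (D n)) = cmp E (p2 (n+2)) (zro E (c n) (c (n+2)))" .
  qed
  obtain Nx where Nx: "\<And>n. Nx < \<bar>n\<bar> \<Longrightarrow> is_zero_obj E (fst x n)" using bc_bd[OF x] by blast
  obtain Ny where Ny: "\<And>n. Ny < \<bar>n\<bar> \<Longrightarrow> is_zero_obj E (fst y n)" using bc_bd[OF y] by blast
  define Z where "Z = (c, D)"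
  have Z: "is_bcomplex E Z"
  proof (rule bcI[of _ "max Nx Ny"])
    fix n
    show "fst Z n \<in> obj E" using B by (simp add: Z_def)
    show "snd Z n \<in> hom E (fst Z n) (fst Z (n + 1))" using DH by (simp add: Z_def)
    show "cmp E (snd Z (n + 1)) (snd Z n) = zro E (fst Z n) (fst Z (n + 2))" using DD by (simp add: Z_def)
    assume n: "max Nx Ny < \<bar>n\<bar>"
    have zx: "is_zero_obj E (fst x n)" "is_zero_obj E (fst y n)" using Nx Ny n by auto
    have "p1 n = zro E (c n) (fst x n)" by (rule zero_to[OF zx(1)]) (use B in \<open>simp add: hom_iff\<close>)
    moreover have "p2 n = zro E (c n) (fst y n)" by (rule zero_to[OF zx(2)]) (use B in \<open>simp add: hom_iff\<close>)
    ultimately have "ident E (c n) = zro E (c n) (c n)" using B[of n] dx dy add_zro_zro by simp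
    then show "is_zero_obj E (fst Z n)" using id_zero_imp B by (simp add: Z_def)
  qed
  have P1: "(Z, x, p1) \<in> hom (Cb E) Z x"
    by (rule homC_intro[OF Z x]) (use B pD1 in \<open>simp_all add: Z_def hom_iff\<close>)
  have P2: "(Z, y, p2) \<in> hom (Cb E) Z y"
    by (rule homC_intro[OF Z y]) (use B pD2 in \<open>simp_all add: Z_def hom_iff\<close>)
  have I1: "(x, Z, i1) \<in> hom (Cb E) x Z"
    by (rule homC_intro[OF x Z]) (use B Di1 in \<open>simp_all add: Z_def hom_iff\<close>)
  have I2: "(y, Z, i2) \<in> hom (Cb E) y Z"
    by (rule homC_intro[OF y Z]) (use B Di2 in \<open>simp_all add: Z_def hom_iff\<close>)
  have Zo: "Z \<in> obj (Cb E)" using Z by simp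
  show "\<exists>z\<in>obj (Cb E). \<exists>q1 q2 j1 j2.
          q1 \<in> hom (Cb E) z x \<and> q2 \<in> hom (Cb E) z y \<and> j1 \<in> hom (Cb E) x z \<and> j2 \<in> hom (Cb E) y z \<and>
          cmp (Cb E) q1 j1 = ident (Cb E) x \<and> cmp (Cb E) q2 j2 = ident (Cb E) y \<and>
          cmp (Cb E) q1 j2 = zro (Cb E) y x \<and> cmp (Cb E) q2 j1 = zro (Cb E) x y \<and>
          addm (Cb E) (cmp (Cb E) j1 q1) (cmp (Cb E) j2 q2) = ident (Cb E) z"
    apply (rule bexI[OF _ Zo])
    apply (rule exI[of _ "(Z, x, p1)"], rule exI[of _ "(Z, y, p2)"], rule exI[of _ "(x, Z, i1)"], rule exI[of _ "(y, Z, i2)"])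
    using P1 P2 I1 I2 B by (simp add: Z_def)
qed

lemma Cb_add: "additive_category (Cb E)"
  unfolding additive_category_def using Cb_pre Cb_biprod zcx_zero ex_zero by blast

end


context rex
begin

lemma d_props[simp]: "is_bcomplex E x \<Longrightarrow> snd x n \<in> arr E"
  "is_bcomplex E x \<Longrightarrow> src E (snd x n) = fst x n"
  "is_bcomplex E x \<Longrightarrow> tgt E (snd x n) = fst x (n + 1)"
  "is_bcomplex E x \<Longrightarrow> fst x n \<in> obj E"
  using bc_d[of x n] bc_obj[of x n] by (auto simp: hom_iff)

lemma cm_props: "m \<in> arr (Cb E) \<Longrightarrow> cps m n \<in> arr E"
  "m \<in> arr (Cb E) \<Longrightarrow> src E (cps m n) = fst (fst m) n"
  "m \<in> arr (Cb E) \<Longrightarrow> tgt E (cps m n) = fst (fst (snd m)) n"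
  "m \<in> arr (Cb E) \<Longrightarrow> is_bcomplex E (fst m)"
  "m \<in> arr (Cb E) \<Longrightarrow> is_bcomplex E (fst (snd m))"
  using cm_hom[of "fst m" "fst (snd m)" "cps m" n] cm_bc[of "fst m" "fst (snd m)" "cps m"]
  by (auto simp: hom_iff)

lemma cm_comm': "m \<in> arr (Cb E) \<Longrightarrow> cmp E (snd (fst (snd m)) n) (cps m n) = cmp E (cps m (n + 1)) (snd (fst m) n)"
  using cm_comm by simp

lemma arrC_eq: "m \<in> arr (Cb E) \<Longrightarrow> m = (fst m, fst (snd m), cps m)" by simp

lemma Cb_conf_iff: "(f, g) \<in> Cb_conf E Conf \<longleftrightarrow> f \<in> arr (Cb E) \<and> g \<in> arr (Cb E) \<and> fst (snd f) = fst g \<and>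
    (\<forall>n. (cps f n, cps g n) \<in> Conf)"
  unfolding Cb_conf_def by simp

lemma Cb_kernel: assumes fg: "(f, g) \<in> Cb_conf E Conf" shows "is_kernel (Cb E) f g"
proof -
  have f: "f \<in> arr (Cb E)" and g: "g \<in> arr (Cb E)" and fg': "fst (snd f) = fst g"
    and c: "\<And>n. (cps f n, cps g n) \<in> Conf" using fg by (auto simp: Cb_conf_iff)
  note fp = cm_props[OF f] and gp = cm_props[OF g]
  have z: "cmp (Cb E) g f = zro (Cb E) (src (Cb E) f) (tgt (Cb E) g)"
    using conf_basic(4)[OF c] fp gp by (simp add: fun_eq_iff)
  show ?thesis unfolding is_kernel_def
  proof (intro conjI allI impI f g z)
    show "tgt (Cb E) f = src (Cb E) g" using fg' by simp
    fix h assume h: "h \<in> arr (Cb E) \<and> tgt (Cb E) h = src (Cb E) g \<and> cmp (Cb E) g h = zro (Cb E) (src (Cb E) h) (tgt (Cb E) g)"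
    then have ha: "h \<in> arr (Cb E)" and ht: "fst (snd h) = fst g" by auto
    note hp = cm_props[OF ha]
    have gh0: "cmp E (cps g n) (cps h n) = zro E (fst (fst h) n) (fst (fst (snd g)) n)" for n
      using h by (simp add: fun_eq_iff)
    have ex: "\<exists>!u. u \<in> hom E (fst (fst h) n) (fst (fst f) n) \<and> cmp E (cps f n) u = cps h n" for n
      using conf_ker[OF c, of "cps h n"] hp gp fp ht gh0 by simp
    define u where "u n = (THE u. u \<in> hom E (fst (fst h) n) (fst (fst f) n) \<and> cmp E (cps f n) u = cps h n)" for n
    have u: "u n \<in> hom E (fst (fst h) n) (fst (fst f) n) \<and> cmp E (cps f n) (u n) = cps h n" for n
      unfolding u_def using theI'[OF ex] .
    have uu: "v = u n" if "v \<in> hom E (fst (fst h) n) (fst (fst f) n)" "cmp E (cps f n) v = cps h n" for v n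
      using ex u that by blast
    have U: "(fst h, fst f, u) \<in> hom (Cb E) (fst h) (fst f)"
    proof (rule homC_intro)
      show "is_bcomplex E (fst h)" "is_bcomplex E (fst f)" using hp fp by auto
      fix n
      show "u n \<in> hom E (fst (fst h) n) (fst (fst f) n)" using u by blast
      have ua: "u n \<in> arr E" "src E (u n) = fst (fst h) n" "tgt E (u n) = fst (fst f) n" for n
        using u[of n] by (auto simp: hom_iff)
      show "cmp E (snd (fst f) n) (u n) = cmp E (u (n + 1)) (snd (fst h) n)"
      proof (rule conf_mono[OF c[of "n+1"]])
        show "cmp E (snd (fst f) n) (u n) \<in> hom E (fst (fst h) n) (src E (cps f (n + 1)))"
          "cmp E (u (n + 1)) (snd (fst h) n) \<in> hom E (fst (fst h) n) (src E (cps f (n + 1)))"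
          using ua fp hp by (auto simp: hom_iff)
        have "cmp E (cps f (n + 1)) (cmp E (snd (fst f) n) (u n)) = cmp E (cmp E (cps f (n + 1)) (snd (fst f) n)) (u n)"
          using ua fp by (simp add: assoc_arr)
        also have "\<dots> = cmp E (cmp E (snd (fst (snd f)) n) (cps f n)) (u n)" using cm_comm'[OF f] by simp
        also have "\<dots> = cmp E (snd (fst (snd f)) n) (cmp E (cps f n) (u n))" using ua fp by (simp add: assoc_arr)
        also have "\<dots> = cmp E (snd (fst (snd h)) n) (cps h n)" using u ht fg' by simp
        also have "\<dots> = cmp E (cps h (n+1)) (snd (fst h) n)" using cm_comm'[OF ha] by simp
        also have "\<dots> = cmp E (cmp E (cps f (n + 1)) (u (n+1))) (snd (fst h) n)" using u by simp
        also have "\<dots> = cmp E (cps f (n + 1)) (cmp E (u (n+1)) (snd (fst h) n))" using ua fp hp by (simp add: assoc_arr)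
        finally show "cmp E (cps f (n + 1)) (cmp E (snd (fst f) n) (u n)) = cmp E (cps f (n + 1)) (cmp E (u (n + 1)) (snd (fst h) n))" .
      qed
    qed
    have "cmp (Cb E) f (fst h, fst f, u) = (fst h, fst (snd h), cps h)"
      using u ht fg' by (simp add: fun_eq_iff)
    then have e: "cmp (Cb E) f (fst h, fst f, u) = h" by simp
    show "\<exists>!w. w \<in> hom (Cb E) (src (Cb E) h) (src (Cb E) f) \<and> cmp (Cb E) f w = h"
    proof (rule ex1I[of _ "(fst h, fst f, u)"])
      show "(fst h, fst f, u) \<in> hom (Cb E) (src (Cb E) h) (src (Cb E) f) \<and> cmp (Cb E) f (fst h, fst f, u) = h"
        using U e by simp
      fix w assume w: "w \<in> hom (Cb E) (src (Cb E) h) (src (Cb E) f) \<and> cmp (Cb E) f w = h"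
      then have wh: "w \<in> hom (Cb E) (fst h) (fst f)" by simp
      show "w = (fst h, fst f, u)"
      proof (rule homC_eq[OF wh U])
        fix n
        have "cmp E (cps f n) (cps w n) = cps h n" using w by (auto simp: fun_eq_iff)
        then show "cps w n = cps (fst h, fst f, u) n" using uu homC_hom[OF wh] by simp
      qed
    qed
  qed
qed


lemma Cb_cokernel: assumes fg: "(f, g) \<in> Cb_conf E Conf" shows "is_cokernel (Cb E) g f"
proof -
  have f: "f \<in> arr (Cb E)" and g: "g \<in> arr (Cb E)" and fg': "fst (snd f) = fst g"
    and c: "\<And>n. (cps f n, cps g n) \<in> Conf" using fg by (auto simp: Cb_conf_iff)
  note fp = cm_props[OF f] and gp = cm_props[OF g]
  have z: "cmp (Cb E) g f = zro (Cb E) (src (Cb E) f) (tgt (Cb E) g)"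
    using conf_basic(4)[OF c] fp gp by (simp add: fun_eq_iff)
  show ?thesis unfolding is_cokernel_def
  proof (intro conjI allI impI f g z)
    show "tgt (Cb E) f = src (Cb E) g" using fg' by simp
    fix h assume h: "h \<in> arr (Cb E) \<and> src (Cb E) h = tgt (Cb E) f \<and> cmp (Cb E) h f = zro (Cb E) (src (Cb E) f) (tgt (Cb E) h)"
    then have ha: "h \<in> arr (Cb E)" and hs: "fst h = fst g" using fg' by auto
    note hp = cm_props[OF ha]
    have hf0: "cmp E (cps h n) (cps f n) = zro E (fst (fst f) n) (fst (fst (snd h)) n)" for n
      using h by (simp add: fun_eq_iff)
    have ex: "\<exists>!u. u \<in> hom E (fst (fst (snd g)) n) (fst (fst (snd h)) n) \<and> cmp E u (cps g n) = cps h n" for n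
      using conf_coker[OF c, of "cps h n"] hp gp fp hs fg' hf0 by simp
    define u where "u n = (THE u. u \<in> hom E (fst (fst (snd g)) n) (fst (fst (snd h)) n) \<and> cmp E u (cps g n) = cps h n)" for n
    have u: "u n \<in> hom E (fst (fst (snd g)) n) (fst (fst (snd h)) n) \<and> cmp E (u n) (cps g n) = cps h n" for n
      unfolding u_def using theI'[OF ex] .
    have uu: "v = u n" if "v \<in> hom E (fst (fst (snd g)) n) (fst (fst (snd h)) n)" "cmp E v (cps g n) = cps h n" for v n
      using ex u that by blast
    have U: "(fst (snd g), fst (snd h), u) \<in> hom (Cb E) (fst (snd g)) (fst (snd h))"
    proof (rule homC_intro)
      show "is_bcomplex E (fst (snd g))" "is_bcomplex E (fst (snd h))" using hp gp by auto
      fix n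
      show "u n \<in> hom E (fst (fst (snd g)) n) (fst (fst (snd h)) n)" using u by blast
      have ua: "u n \<in> arr E" "src E (u n) = fst (fst (snd g)) n" "tgt E (u n) = fst (fst (snd h)) n" for n
        using u[of n] by (auto simp: hom_iff)
      show "cmp E (snd (fst (snd h)) n) (u n) = cmp E (u (n + 1)) (snd (fst (snd g)) n)"
      proof (rule conf_epi[OF c[of n]])
        show "cmp E (snd (fst (snd h)) n) (u n) \<in> hom E (tgt E (cps g n)) (fst (fst (snd h)) (n+1))"
          "cmp E (u (n + 1)) (snd (fst (snd g)) n) \<in> hom E (tgt E (cps g n)) (fst (fst (snd h)) (n+1))"
          using ua gp hp by (auto simp: hom_iff)
        have "cmp E (cmp E (snd (fst (snd h)) n) (u n)) (cps g n) = cmp E (snd (fst (snd h)) n) (cmp E (u n) (cps g n))"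
          using ua gp hp by (simp add: assoc_arr)
        also have "\<dots> = cmp E (snd (fst (snd h)) n) (cps h n)" using u by simp
        also have "\<dots> = cmp E (cps h (n+1)) (snd (fst h) n)" using cm_comm'[OF ha] by simp
        also have "\<dots> = cmp E (cmp E (u (n+1)) (cps g (n+1))) (snd (fst g) n)" using u hs by simp
        also have "\<dots> = cmp E (u (n+1)) (cmp E (cps g (n+1)) (snd (fst g) n))" using ua gp by (simp add: assoc_arr)
        also have "\<dots> = cmp E (u (n+1)) (cmp E (snd (fst (snd g)) n) (cps g n))" using cm_comm'[OF g] by simp
        also have "\<dots> = cmp E (cmp E (u (n+1)) (snd (fst (snd g)) n)) (cps g n)" using ua gp by (simp add: assoc_arr)
        finally show "cmp E (cmp E (snd (fst (snd h)) n) (u n)) (cps g n) = cmp E (cmp E (u (n + 1)) (snd (fst (snd g)) n)) (cps g n)" .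
      qed
    qed
    have "cmp (Cb E) (fst (snd g), fst (snd h), u) g = (fst h, fst (snd h), cps h)"
      using u hs by (simp add: fun_eq_iff)
    then have e: "cmp (Cb E) (fst (snd g), fst (snd h), u) g = h" by simp
    show "\<exists>!w. w \<in> hom (Cb E) (tgt (Cb E) g) (tgt (Cb E) h) \<and> cmp (Cb E) w g = h"
    proof (rule ex1I[of _ "(fst (snd g), fst (snd h), u)"])
      show "(fst (snd g), fst (snd h), u) \<in> hom (Cb E) (tgt (Cb E) g) (tgt (Cb E) h) \<and> cmp (Cb E) (fst (snd g), fst (snd h), u) g = h"
        using U e by simp
      fix w assume w: "w \<in> hom (Cb E) (tgt (Cb E) g) (tgt (Cb E) h) \<and> cmp (Cb E) w g = h"
      then have wh: "w \<in> hom (Cb E) (fst (snd g)) (fst (snd h))" by simp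
      show "w = (fst (snd g), fst (snd h), u)"
      proof (rule homC_eq[OF wh U])
        fix n
        have "cmp E (cps w n) (cps g n) = cps h n" using w by (auto simp: fun_eq_iff)
        then show "cps w n = cps (fst (snd g), fst (snd h), u) n" using uu homC_hom[OF wh] by simp
      qed
    qed
  qed
qed

lemma isoC_deg: assumes a: "is_iso (Cb E) a" shows "is_iso E (cps a n)"
proof -
  have aa: "a \<in> arr (Cb E)" using a by (simp add: is_iso_def)
  obtain v where v: "v \<in> hom (Cb E) (tgt (Cb E) a) (src (Cb E) a)" "cmp (Cb E) v a = ident (Cb E) (src (Cb E) a)"
     "cmp (Cb E) a v = ident (Cb E) (tgt (Cb E) a)" using a unfolding is_iso_def by blast
  note ap = cm_props[OF aa]
  have vh: "cps v n \<in> hom E (tgt E (cps a n)) (src E (cps a n))" using homC_hom[OF v(1)] ap by simp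
  have "cmp E (cps v n) (cps a n) = ident E (src E (cps a n))" "cmp E (cps a n) (cps v n) = ident E (tgt E (cps a n))"
    using v(2,3) ap by (auto simp: fun_eq_iff)
  then show ?thesis unfolding is_iso_def using vh ap by blast
qed

lemma Cb_cc: "conflation_category (Cb E) (Cb_conf E Conf)"
  unfolding conflation_category_def
proof (intro conjI allI impI Cb_add)
  fix f g assume "(f, g) \<in> Cb_conf E Conf"
  then show "kernel_cokernel_pair (Cb E) f g" using Cb_kernel Cb_cokernel by (simp add: kernel_cokernel_pair_def)
next
  fix f g f' g' a b c
  assume fg: "(f, g) \<in> Cb_conf E Conf" and f': "f' \<in> arr (Cb E)" and g': "g' \<in> arr (Cb E)"
    and fg': "tgt (Cb E) f' = src (Cb E) g'"
    and a: "a \<in> hom (Cb E) (src (Cb E) f) (src (Cb E) f')" and b: "b \<in> hom (Cb E) (tgt (Cb E) f) (tgt (Cb E) f')"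
    and c: "c \<in> hom (Cb E) (tgt (Cb E) g) (tgt (Cb E) g')"
    and ia: "is_iso (Cb E) a" and ib: "is_iso (Cb E) b" and ic: "is_iso (Cb E) c"
    and e1: "cmp (Cb E) b f = cmp (Cb E) f' a" and e2: "cmp (Cb E) c g = cmp (Cb E) g' b"
  have f: "f \<in> arr (Cb E)" and g: "g \<in> arr (Cb E)" and fgt: "fst (snd f) = fst g"
    and cf: "\<And>n. (cps f n, cps g n) \<in> Conf" using fg by (auto simp: Cb_conf_iff)
  note fp = cm_props[OF f] and gp = cm_props[OF g] and f'p = cm_props[OF f'] and g'p = cm_props[OF g']
  have "(cps f' n, cps g' n) \<in> Conf" for n
  proof (rule iso_closed[OF cf[of n]])
    show "cps f' n \<in> arr E" "cps g' n \<in> arr E" "tgt E (cps f' n) = src E (cps g' n)" using f'p g'p fg' by auto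
    show "cps a n \<in> hom E (src E (cps f n)) (src E (cps f' n))" using homC_hom[OF a] fp f'p by simp
    show "cps b n \<in> hom E (tgt E (cps f n)) (tgt E (cps f' n))" using homC_hom[OF b] fp f'p by simp
    show "cps c n \<in> hom E (tgt E (cps g n)) (tgt E (cps g' n))" using homC_hom[OF c] gp g'p by simp
    show "is_iso E (cps a n)" "is_iso E (cps b n)" "is_iso E (cps c n)" using isoC_deg ia ib ic by auto
    show "cmp E (cps b n) (cps f n) = cmp E (cps f' n) (cps a n)" using e1 by (simp add: fun_eq_iff)
    show "cmp E (cps c n) (cps g n) = cmp E (cps g' n) (cps b n)" using e2 by (simp add: fun_eq_iff)
  qed
  then show "(f', g') \<in> Cb_conf E Conf" using f' g' fg' by (simp add: Cb_conf_iff)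
qed

end


context rex
begin

lemma deg_defl: assumes g: "g \<in> arr (Cb E)" and d: "\<And>n. deflation E Conf (cps g n)"
  shows "deflation (Cb E) (Cb_conf E Conf) g"
proof -
  note gp = cm_props[OF g]
  let ?X = "fst g" and ?Y = "fst (snd g)"
  define f where "f n = (SOME f. (f, cps g n) \<in> Conf)" for n
  have c: "(f n, cps g n) \<in> Conf" for n unfolding f_def using d[of n] unfolding deflation_def by (rule someI_ex)
  note cb = conf_basic[OF c]
  have fa: "f n \<in> arr E" "tgt E (f n) = fst ?X n" for n using cb gp by auto
  define K where "K n = src E (f n)" for n
  have Ko: "K n \<in> obj E" for n using fa K_def by simp
  have ex: "\<exists>!u. u \<in> hom E (K n) (K (n+1)) \<and> cmp E (f (n+1)) u = cmp E (snd ?X n) (f n)" for n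
  proof -
    have z: "cmp E (cps g (n+1)) (cmp E (snd ?X n) (f n)) = zro E (K n) (tgt E (cps g (n+1)))"
    proof -
      have "cmp E (cps g (n+1)) (cmp E (snd ?X n) (f n)) = cmp E (cmp E (cps g (n+1)) (snd ?X n)) (f n)"
        using fa gp by (simp add: assoc_arr)
      also have "\<dots> = cmp E (cmp E (snd ?Y n) (cps g n)) (f n)" using cm_comm'[OF g] by simp
      also have "\<dots> = cmp E (snd ?Y n) (cmp E (cps g n) (f n))" using fa gp by (simp add: assoc_arr)
      also have "\<dots> = zro E (K n) (tgt E (cps g (n+1)))" using cb gp K_def by simp
      finally show ?thesis .
    qed
    show ?thesis using conf_ker[OF c[of "n+1"], of "cmp E (snd ?X n) (f n)"] z fa gp K_def by simp
  qed
  define dK where "dK n = (THE u. u \<in> hom E (K n) (K (n+1)) \<and> cmp E (f (n+1)) u = cmp E (snd ?X n) (f n))" for n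
  have dK: "dK n \<in> hom E (K n) (K (n+1)) \<and> cmp E (f (n+1)) (dK n) = cmp E (snd ?X n) (f n)" for n
    unfolding dK_def using theI'[OF ex] .
  have dKa: "dK n \<in> arr E" "src E (dK n) = K n" "tgt E (dK n) = K (n+1)" for n using dK[of n] by (auto simp: hom_iff)
  obtain N where N: "\<And>n. N < \<bar>n\<bar> \<Longrightarrow> is_zero_obj E (fst ?X n)" using bc_bd gp by blast
  have KK: "is_bcomplex E (K, dK)"
  proof (rule bcI[of _ N])
    fix n
    show "fst (K, dK) n \<in> obj E" using Ko by simp
    show "snd (K, dK) n \<in> hom E (fst (K, dK) n) (fst (K, dK) (n + 1))" using dK by simp
    show "cmp E (snd (K, dK) (n + 1)) (snd (K, dK) n) = zro E (fst (K, dK) n) (fst (K, dK) (n + 2))"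
    proof -
      have i: "inflation E Conf (f (n+2))" using c by (auto simp: inflation_def)
      have "cmp E (f (n+2)) (cmp E (dK (n+1)) (dK n)) = cmp E (f (n+1+1)) (cmp E (dK (n+1)) (dK n))" by (simp add: add.assoc)
      also have "\<dots> = cmp E (cmp E (f (n+1+1)) (dK (n+1))) (dK n)" using fa dKa K_def by (simp add: assoc_arr)
      also have "\<dots> = cmp E (cmp E (snd ?X (n+1)) (f (n+1))) (dK n)" by (simp only: dK[of "n+1", THEN conjunct2])
      also have "\<dots> = cmp E (snd ?X (n+1)) (cmp E (f (n+1)) (dK n))" using fa dKa K_def gp by (simp add: assoc_arr)
      also have "\<dots> = cmp E (snd ?X (n+1)) (cmp E (snd ?X n) (f n))" using dK by simp
      also have "\<dots> = cmp E (cmp E (snd ?X (n+1)) (snd ?X n)) (f n)" using fa gp by (simp add: assoc_arr)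
      also have "\<dots> = zro E (K n) (fst ?X (n+2))" using bc_dd gp fa K_def by simp
      also have "\<dots> = cmp E (f (n+2)) (zro E (K n) (K (n+2)))" using fa K_def Ko by simp
      finally have "cmp E (f (n+2)) (cmp E (dK (n+1)) (dK n)) = cmp E (f (n+2)) (zro E (K n) (K (n+2)))" .
      moreover have "cmp E (dK (n+1)) (dK n) \<in> hom E (K n) (src E (f (n+2)))"
        using dKa K_def by (simp add: hom_iff add.assoc)
      moreover have "zro E (K n) (K (n+2)) \<in> hom E (K n) (src E (f (n+2)))" using Ko K_def by simp
      ultimately show ?thesis using infl_mono[OF i] by simp
    qed
    assume "N < \<bar>n\<bar>"
    then have "is_zero_obj E (fst ?X n)" using N by blast
    then show "is_zero_obj E (fst (K, dK) n)" using infl_to_zero[of "f n"] c fa K_def by (auto simp: inflation_def)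
  qed
  have F: "((K, dK), ?X, f) \<in> arr (Cb E)"
    using homC_intro[OF KK gp(4), of f] fa dK K_def by (simp add: hom_iff)
  have "(((K, dK), ?X, f), g) \<in> Cb_conf E Conf" using F g c by (simp add: Cb_conf_iff)
  then show ?thesis unfolding deflation_def by blast
qed

lemma deg_infl: assumes f: "f \<in> arr (Cb E)" and d: "\<And>n. inflation E Conf (cps f n)"
  shows "inflation (Cb E) (Cb_conf E Conf) f"
proof -
  note fp = cm_props[OF f]
  let ?X = "fst f" and ?Y = "fst (snd f)"
  define g where "g n = (SOME g. (cps f n, g) \<in> Conf)" for n
  have c: "(cps f n, g n) \<in> Conf" for n unfolding g_def using d[of n] unfolding inflation_def by (rule someI_ex)
  note cb = conf_basic[OF c]
  have ga: "g n \<in> arr E" "src E (g n) = fst ?Y n" for n using cb fp by auto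
  define Q where "Q n = tgt E (g n)" for n
  have Qo: "Q n \<in> obj E" for n using ga Q_def by simp
  have ex: "\<exists>!u. u \<in> hom E (Q n) (Q (n+1)) \<and> cmp E u (g n) = cmp E (g (n+1)) (snd ?Y n)" for n
  proof -
    have z: "cmp E (cmp E (g (n+1)) (snd ?Y n)) (cps f n) = zro E (fst ?X n) (Q (n+1))"
    proof -
      have "cmp E (cmp E (g (n+1)) (snd ?Y n)) (cps f n) = cmp E (g (n+1)) (cmp E (snd ?Y n) (cps f n))"
        using ga fp by (simp add: assoc_arr)
      also have "\<dots> = cmp E (g (n+1)) (cmp E (cps f (n+1)) (snd ?X n))" using cm_comm'[OF f] by simp
      also have "\<dots> = cmp E (cmp E (g (n+1)) (cps f (n+1))) (snd ?X n)" using ga fp by (simp add: assoc_arr)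
      also have "\<dots> = zro E (fst ?X n) (Q (n+1))" using cb fp Q_def by simp
      finally show ?thesis .
    qed
    show ?thesis using conf_coker[OF c[of n], of "cmp E (g (n+1)) (snd ?Y n)"] z ga fp Q_def by simp
  qed
  define dQ where "dQ n = (THE u. u \<in> hom E (Q n) (Q (n+1)) \<and> cmp E u (g n) = cmp E (g (n+1)) (snd ?Y n))" for n
  have dQ: "dQ n \<in> hom E (Q n) (Q (n+1)) \<and> cmp E (dQ n) (g n) = cmp E (g (n+1)) (snd ?Y n)" for n
    unfolding dQ_def using theI'[OF ex] .
  have dQa: "dQ n \<in> arr E" "src E (dQ n) = Q n" "tgt E (dQ n) = Q (n+1)" for n using dQ[of n] by (auto simp: hom_iff)
  obtain N where N: "\<And>n. N < \<bar>n\<bar> \<Longrightarrow> is_zero_obj E (fst ?Y n)" using bc_bd fp by blast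
  have QQ: "is_bcomplex E (Q, dQ)"
  proof (rule bcI[of _ N])
    fix n
    show "fst (Q, dQ) n \<in> obj E" using Qo by simp
    show "snd (Q, dQ) n \<in> hom E (fst (Q, dQ) n) (fst (Q, dQ) (n + 1))" using dQ by simp
    show "cmp E (snd (Q, dQ) (n + 1)) (snd (Q, dQ) n) = zro E (fst (Q, dQ) n) (fst (Q, dQ) (n + 2))"
    proof -
      have dd: "deflation E Conf (g n)" using c by (auto simp: deflation_def)
      have "cmp E (cmp E (dQ (n+1)) (dQ n)) (g n) = cmp E (dQ (n+1)) (cmp E (dQ n) (g n))" using ga dQa Q_def by (simp add: assoc_arr)
      also have "\<dots> = cmp E (dQ (n+1)) (cmp E (g (n+1)) (snd ?Y n))" using dQ by simp
      also have "\<dots> = cmp E (cmp E (dQ (n+1)) (g (n+1))) (snd ?Y n)" using ga dQa Q_def fp by (simp add: assoc_arr)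
      also have "\<dots> = cmp E (cmp E (g (n+1+1)) (snd ?Y (n+1))) (snd ?Y n)" using dQ by simp
      also have "\<dots> = cmp E (g (n+1+1)) (cmp E (snd ?Y (n+1)) (snd ?Y n))" using ga fp by (simp add: assoc_arr)
      also have "\<dots> = zro E (fst ?Y n) (Q (n+2))" using bc_dd fp ga Q_def by (simp add: add.assoc)
      also have "\<dots> = cmp E (zro E (Q n) (Q (n+2))) (g n)" using ga Q_def Qo by simp
      finally have "cmp E (cmp E (dQ (n+1)) (dQ n)) (g n) = cmp E (zro E (Q n) (Q (n+2))) (g n)" .
      moreover have "cmp E (dQ (n+1)) (dQ n) \<in> hom E (tgt E (g n)) (Q (n+2))"
        using dQa Q_def by (simp add: hom_iff add.assoc)
      moreover have "zro E (Q n) (Q (n+2)) \<in> hom E (tgt E (g n)) (Q (n+2))" using Qo Q_def by simp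
      ultimately show ?thesis using defl_epi[OF dd] by simp
    qed
    assume "N < \<bar>n\<bar>"
    then have "is_zero_obj E (fst ?Y n)" using N by blast
    then show "is_zero_obj E (fst (Q, dQ) n)" using defl_from_zero[of "g n"] c ga Q_def by (auto simp: deflation_def)
  qed
  have G: "(?Y, (Q, dQ), g) \<in> arr (Cb E)"
    using homC_intro[OF fp(5) QQ, of g] ga dQ Q_def by (simp add: hom_iff)
  have "(f, (?Y, (Q, dQ), g)) \<in> Cb_conf E Conf" using G f c by (simp add: Cb_conf_iff)
  then show ?thesis unfolding inflation_def by blast
qed

lemma defl_Cb_deg: "deflation (Cb E) (Cb_conf E Conf) g \<Longrightarrow> deflation E Conf (cps g n)"
  by (auto simp: deflation_def Cb_conf_iff)
lemma infl_Cb_deg: "inflation (Cb E) (Cb_conf E Conf) f \<Longrightarrow> inflation E Conf (cps f n)"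
  by (auto simp: inflation_def Cb_conf_iff)
lemma defl_Cb_arr: "deflation (Cb E) (Cb_conf E Conf) g \<Longrightarrow> g \<in> arr (Cb E)"
  by (auto simp: deflation_def Cb_conf_iff)
lemma infl_Cb_arr: "inflation (Cb E) (Cb_conf E Conf) g \<Longrightarrow> g \<in> arr (Cb E)"
  by (auto simp: inflation_def Cb_conf_iff)

end


lemma c_cmp_hom: "is_category C \<Longrightarrow> f \<in> hom C a b \<Longrightarrow> g \<in> hom C b c \<Longrightarrow> cmp C g f \<in> hom C a c"
  unfolding is_category_def by blast
lemma c_id_hom: "is_category C \<Longrightarrow> a \<in> obj C \<Longrightarrow> ident C a \<in> hom C a a"
  unfolding is_category_def by blast
lemma c_id_l: "is_category C \<Longrightarrow> f \<in> hom C a b \<Longrightarrow> cmp C (ident C b) f = f"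
  unfolding is_category_def by blast
lemma c_id_r: "is_category C \<Longrightarrow> f \<in> hom C a b \<Longrightarrow> cmp C f (ident C a) = f"
  unfolding is_category_def by blast
lemma c_assoc: "is_category C \<Longrightarrow> f \<in> hom C a b \<Longrightarrow> g \<in> hom C b c \<Longrightarrow> h \<in> hom C c d \<Longrightarrow>
   cmp C h (cmp C g f) = cmp C (cmp C h g) f"
  unfolding is_category_def by blast
lemma c_arr_obj: "is_category C \<Longrightarrow> f \<in> arr C \<Longrightarrow> src C f \<in> obj C \<and> tgt C f \<in> obj C"
  unfolding is_category_def by blast

lemma pb_univ: "is_pullback C g t p q \<Longrightarrow> u \<in> arr C \<Longrightarrow> v \<in> arr C \<Longrightarrow> src C u = src C v \<Longrightarrow>
   tgt C u = src C g \<Longrightarrow> tgt C v = src C t \<Longrightarrow> cmp C g u = cmp C t v \<Longrightarrow>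
   \<exists>!w. w \<in> hom C (src C u) (src C p) \<and> cmp C p w = u \<and> cmp C q w = v"
  unfolding is_pullback_def by blast

lemma pb_basic: "is_pullback C g t p q \<Longrightarrow> g \<in> arr C \<and> t \<in> arr C \<and> tgt C t = tgt C g \<and>
     p \<in> arr C \<and> q \<in> arr C \<and> src C p = src C q \<and> tgt C p = src C g \<and> tgt C q = src C t \<and>
     cmp C g p = cmp C t q"
  unfolding is_pullback_def by blast

lemma pb_uniq: assumes C: "is_category C" and pb: "is_pullback C g t p q"
  and w1: "w1 \<in> hom C x (src C p)" and w2: "w2 \<in> hom C x (src C p)"
  and e1: "cmp C p w1 = cmp C p w2" and e2: "cmp C q w1 = cmp C q w2"
  shows "w1 = w2"
proof -
  note b = pb_basic[OF pb]
  have ph: "p \<in> hom C (src C p) (src C g)" and qh: "q \<in> hom C (src C p) (src C t)"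
    and gh: "g \<in> hom C (src C g) (tgt C g)" and th: "t \<in> hom C (src C t) (tgt C g)"
    using b by (auto simp: hom_iff)
  have u: "cmp C p w1 \<in> hom C x (src C g)" using c_cmp_hom[OF C w1 ph] .
  have v: "cmp C q w1 \<in> hom C x (src C t)" using c_cmp_hom[OF C w1 qh] .
  have "cmp C g (cmp C p w1) = cmp C (cmp C g p) w1" using c_assoc[OF C w1 ph gh] .
  also have "\<dots> = cmp C (cmp C t q) w1" using b by simp
  also have "\<dots> = cmp C t (cmp C q w1)" using c_assoc[OF C w1 qh th] by simp
  finally have e: "cmp C g (cmp C p w1) = cmp C t (cmp C q w1)" .
  have "\<exists>!w. w \<in> hom C (src C (cmp C p w1)) (src C p) \<and> cmp C p w = cmp C p w1 \<and> cmp C q w = cmp C q w1"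
    by (rule pb_univ[OF pb]) (use u v e in \<open>auto simp: hom_iff\<close>)
  then show ?thesis using w1 w2 e1 e2 u by (auto simp: hom_iff)
qed

lemma pb_iso: assumes C: "is_category C" and pb: "is_pullback C g t p q" and pb0: "is_pullback C g t p0 q0"
  shows "\<exists>w\<in>hom C (src C p) (src C p0). is_iso C w \<and> cmp C p0 w = p \<and> cmp C q0 w = q"
proof -
  note b = pb_basic[OF pb] and b0 = pb_basic[OF pb0]
  obtain w where w: "w \<in> hom C (src C p) (src C p0)" "cmp C p0 w = p" "cmp C q0 w = q"
    using pb_univ[OF pb0, of p q] b by auto
  obtain w' where w': "w' \<in> hom C (src C p0) (src C p)" "cmp C p w' = p0" "cmp C q w' = q0"
    using pb_univ[OF pb, of p0 q0] b0 by auto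
  have ph: "p \<in> hom C (src C p) (src C g)" and qh: "q \<in> hom C (src C p) (src C t)"
    and p0h: "p0 \<in> hom C (src C p0) (src C g)" and q0h: "q0 \<in> hom C (src C p0) (src C t)"
    using b b0 by (auto simp: hom_iff)
  have so: "src C p \<in> obj C" "src C p0 \<in> obj C" using c_arr_obj[OF C] b b0 by auto
  have i1: "cmp C w' w = ident C (src C p)"
  proof (rule pb_uniq[OF C pb])
    show "cmp C w' w \<in> hom C (src C p) (src C p)" using c_cmp_hom[OF C w(1) w'(1)] .
    show "ident C (src C p) \<in> hom C (src C p) (src C p)" using c_id_hom[OF C so(1)] .
    show "cmp C p (cmp C w' w) = cmp C p (ident C (src C p))"
      using c_assoc[OF C w(1) w'(1) ph] w w' c_id_r[OF C ph] by simp
    show "cmp C q (cmp C w' w) = cmp C q (ident C (src C p))"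
      using c_assoc[OF C w(1) w'(1) qh] w w' c_id_r[OF C qh] by simp
  qed
  have i2: "cmp C w w' = ident C (src C p0)"
  proof (rule pb_uniq[OF C pb0])
    show "cmp C w w' \<in> hom C (src C p0) (src C p0)" using c_cmp_hom[OF C w'(1) w(1)] .
    show "ident C (src C p0) \<in> hom C (src C p0) (src C p0)" using c_id_hom[OF C so(2)] .
    show "cmp C p0 (cmp C w w') = cmp C p0 (ident C (src C p0))"
      using c_assoc[OF C w'(1) w(1) p0h] w w' c_id_r[OF C p0h] by simp
    show "cmp C q0 (cmp C w w') = cmp C q0 (ident C (src C p0))"
      using c_assoc[OF C w'(1) w(1) q0h] w w' c_id_r[OF C q0h] by simp
  qed
  have "is_iso C w" unfolding is_iso_def using w(1) w'(1) i1 i2 by (auto simp: hom_iff)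
  then show ?thesis using w by blast
qed

lemma po_univ: "is_pushout C i q q' i' \<Longrightarrow> u \<in> arr C \<Longrightarrow> v \<in> arr C \<Longrightarrow> src C u = tgt C i \<Longrightarrow>
   src C v = tgt C q \<Longrightarrow> tgt C u = tgt C v \<Longrightarrow> cmp C u i = cmp C v q \<Longrightarrow>
   \<exists>!w. w \<in> hom C (tgt C q') (tgt C u) \<and> cmp C w q' = u \<and> cmp C w i' = v"
  unfolding is_pushout_def by blast

lemma po_basic: "is_pushout C i q q' i' \<Longrightarrow> i \<in> arr C \<and> q \<in> arr C \<and> src C i = src C q \<and>
     q' \<in> arr C \<and> i' \<in> arr C \<and> src C q' = tgt C i \<and> src C i' = tgt C q \<and> tgt C q' = tgt C i' \<and>
     cmp C q' i = cmp C i' q"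
  unfolding is_pushout_def by blast

lemma po_uniq: assumes C: "is_category C" and po: "is_pushout C i q q' i'"
  and w1: "w1 \<in> hom C (tgt C q') x" and w2: "w2 \<in> hom C (tgt C q') x"
  and e1: "cmp C w1 q' = cmp C w2 q'" and e2: "cmp C w1 i' = cmp C w2 i'"
  shows "w1 = w2"
proof -
  note b = po_basic[OF po]
  have q'h: "q' \<in> hom C (tgt C i) (tgt C q')" and i'h: "i' \<in> hom C (tgt C q) (tgt C q')"
    and ih: "i \<in> hom C (src C i) (tgt C i)" and qh: "q \<in> hom C (src C i) (tgt C q)"
    using b by (auto simp: hom_iff)
  have u: "cmp C w1 q' \<in> hom C (tgt C i) x" using c_cmp_hom[OF C q'h w1] .
  have v: "cmp C w1 i' \<in> hom C (tgt C q) x" using c_cmp_hom[OF C i'h w1] .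
  have "cmp C (cmp C w1 q') i = cmp C w1 (cmp C q' i)" using c_assoc[OF C ih q'h w1] by simp
  also have "\<dots> = cmp C w1 (cmp C i' q)" using b by simp
  also have "\<dots> = cmp C (cmp C w1 i') q" using c_assoc[OF C qh i'h w1] .
  finally have e: "cmp C (cmp C w1 q') i = cmp C (cmp C w1 i') q" .
  have "\<exists>!w. w \<in> hom C (tgt C q') (tgt C (cmp C w1 q')) \<and> cmp C w q' = cmp C w1 q' \<and> cmp C w i' = cmp C w1 i'"
    by (rule po_univ[OF po]) (use u v e in \<open>auto simp: hom_iff\<close>)
  then show ?thesis using w1 w2 e1 e2 u by (auto simp: hom_iff)
qed

lemma po_iso: assumes C: "is_category C" and po: "is_pushout C i q q' i'" and po0: "is_pushout C i q q0 i0"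
  shows "\<exists>w\<in>hom C (tgt C q0) (tgt C q'). is_iso C w \<and> cmp C w q0 = q' \<and> cmp C w i0 = i'"
proof -
  note b = po_basic[OF po] and b0 = po_basic[OF po0]
  obtain w where w: "w \<in> hom C (tgt C q0) (tgt C q')" "cmp C w q0 = q'" "cmp C w i0 = i'"
    using po_univ[OF po0, of q' i'] b by auto
  obtain w' where w': "w' \<in> hom C (tgt C q') (tgt C q0)" "cmp C w' q' = q0" "cmp C w' i' = i0"
    using po_univ[OF po, of q0 i0] b0 by auto
  have q'h: "q' \<in> hom C (tgt C i) (tgt C q')" and i'h: "i' \<in> hom C (tgt C q) (tgt C q')"
    and q0h: "q0 \<in> hom C (tgt C i) (tgt C q0)" and i0h: "i0 \<in> hom C (tgt C q) (tgt C q0)"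
    using b b0 by (auto simp: hom_iff)
  have so: "tgt C q' \<in> obj C" "tgt C q0 \<in> obj C" using c_arr_obj[OF C] b b0 by auto
  have i1: "cmp C w w' = ident C (tgt C q')"
  proof (rule po_uniq[OF C po])
    show "cmp C w w' \<in> hom C (tgt C q') (tgt C q')" using c_cmp_hom[OF C w'(1) w(1)] .
    show "ident C (tgt C q') \<in> hom C (tgt C q') (tgt C q')" using c_id_hom[OF C so(1)] .
    show "cmp C (cmp C w w') q' = cmp C (ident C (tgt C q')) q'"
      using c_assoc[OF C q'h w'(1) w(1)] w w' c_id_l[OF C q'h] by simp
    show "cmp C (cmp C w w') i' = cmp C (ident C (tgt C q')) i'"
      using c_assoc[OF C i'h w'(1) w(1)] w w' c_id_l[OF C i'h] by simp
  qed
  have i2: "cmp C w' w = ident C (tgt C q0)"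
  proof (rule po_uniq[OF C po0])
    show "cmp C w' w \<in> hom C (tgt C q0) (tgt C q0)" using c_cmp_hom[OF C w(1) w'(1)] .
    show "ident C (tgt C q0) \<in> hom C (tgt C q0) (tgt C q0)" using c_id_hom[OF C so(2)] .
    show "cmp C (cmp C w' w) q0 = cmp C (ident C (tgt C q0)) q0"
      using c_assoc[OF C q0h w(1) w'(1)] w w' c_id_l[OF C q0h] by simp
    show "cmp C (cmp C w' w) i0 = cmp C (ident C (tgt C q0)) i0"
      using c_assoc[OF C i0h w(1) w'(1)] w w' c_id_l[OF C i0h] by simp
  qed
  have "is_iso C w" unfolding is_iso_def using w(1) w'(1) i1 i2 by (auto simp: hom_iff)
  then show ?thesis using w by blast
qed



context rex
begin

lemma pbE_w: assumes pb: "is_pullback E g t p q" and u: "u \<in> arr E" and v: "v \<in> arr E"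
  and s: "src E u = src E v" "tgt E u = src E g" "tgt E v = src E t" and e: "cmp E g u = cmp E t v"
  shows "\<exists>w. w \<in> arr E \<and> src E w = src E u \<and> tgt E w = src E p \<and> cmp E p w = u \<and> cmp E q w = v"
  using pb_univ[OF pb u v s e] by (auto simp: hom_iff)

lemma pbE_uniq: assumes pb: "is_pullback E g t p q"
  and "w1 \<in> arr E" "src E w1 = x" "tgt E w1 = src E p" "w2 \<in> arr E" "src E w2 = x" "tgt E w2 = src E p"
  and "cmp E p w1 = cmp E p w2" "cmp E q w1 = cmp E q w2"
  shows "w1 = w2"
  using pb_uniq[OF cat pb, of w1 x w2] assms by (auto simp: hom_iff)

lemma Cb_pb: assumes g: "deflation (Cb E) (Cb_conf E Conf) g" and t: "t \<in> arr (Cb E)"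
  and tg: "tgt (Cb E) t = tgt (Cb E) g"
  shows "\<exists>p q. is_pullback (Cb E) g t p q \<and> deflation (Cb E) (Cb_conf E Conf) q"
proof -
  have ga: "g \<in> arr (Cb E)" using defl_Cb_arr[OF g] .
  have gd: "deflation E Conf (cps g n)" for n using defl_Cb_deg[OF g] .
  note gp = cm_props[OF ga] and tp = cm_props[OF t]
  have tg': "fst (snd t) = fst (snd g)" using tg by simp
  let ?B = "fst g" and ?C = "fst (snd g)" and ?C' = "fst t"
  have ex: "\<exists>pq. is_pullback E (cps g n) (cps t n) (fst pq) (snd pq)" for n
    using pb_ex[OF gd tp(1)] tp gp tg' by simp
  define p where "p n = fst (SOME pq. is_pullback E (cps g n) (cps t n) (fst pq) (snd pq))" for n
  define q where "q n = snd (SOME pq. is_pullback E (cps g n) (cps t n) (fst pq) (snd pq))" for n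
  have pb: "is_pullback E (cps g n) (cps t n) (p n) (q n)" for n
    unfolding p_def q_def using someI_ex[OF ex] .
  note pbb = pb_basic[OF pb]
  define P where "P n = src E (p n)" for n
  have pa: "p n \<in> arr E" "src E (p n) = P n" "tgt E (p n) = fst ?B n"
     "q n \<in> arr E" "src E (q n) = P n" "tgt E (q n) = fst ?C' n" "P n \<in> obj E" for n
    using pbb[of n] gp tp P_def by auto
  have sq: "cmp E (cps g n) (p n) = cmp E (cps t n) (q n)" for n using pbb by blast
  have ex2: "\<exists>w. w \<in> arr E \<and> src E w = P n \<and> tgt E w = P (n+1) \<and>
      cmp E (p (n+1)) w = cmp E (snd ?B n) (p n) \<and> cmp E (q (n+1)) w = cmp E (snd ?C' n) (q n)" for n
  proof -
    have "cmp E (cps g (n+1)) (cmp E (snd ?B n) (p n)) = cmp E (cps t (n+1)) (cmp E (snd ?C' n) (q n))"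
    proof -
      have "cmp E (cps g (n+1)) (cmp E (snd ?B n) (p n)) = cmp E (cmp E (cps g (n+1)) (snd ?B n)) (p n)"
        using gp pa by (simp add: assoc_arr)
      also have "\<dots> = cmp E (cmp E (snd ?C n) (cps g n)) (p n)" using cm_comm'[OF ga] by simp
      also have "\<dots> = cmp E (snd ?C n) (cmp E (cps g n) (p n))" using gp pa by (simp add: assoc_arr)
      also have "\<dots> = cmp E (snd ?C n) (cmp E (cps t n) (q n))" using sq by simp
      also have "\<dots> = cmp E (cmp E (snd ?C n) (cps t n)) (q n)" using gp tp pa tg' by (simp add: assoc_arr)
      also have "\<dots> = cmp E (cmp E (cps t (n+1)) (snd ?C' n)) (q n)" using cm_comm'[OF t] tg' by simp
      also have "\<dots> = cmp E (cps t (n+1)) (cmp E (snd ?C' n) (q n))" using tp pa by (simp add: assoc_arr)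
      finally show ?thesis .
    qed
    then show ?thesis using pbE_w[OF pb[of "n+1"], of "cmp E (snd ?B n) (p n)" "cmp E (snd ?C' n) (q n)"]
      gp tp pa by simp
  qed
  define dP where "dP n = (SOME w. w \<in> arr E \<and> src E w = P n \<and> tgt E w = P (n+1) \<and>
      cmp E (p (n+1)) w = cmp E (snd ?B n) (p n) \<and> cmp E (q (n+1)) w = cmp E (snd ?C' n) (q n))" for n
  have dP: "dP n \<in> arr E \<and> src E (dP n) = P n \<and> tgt E (dP n) = P (n+1) \<and>
      cmp E (p (n+1)) (dP n) = cmp E (snd ?B n) (p n) \<and> cmp E (q (n+1)) (dP n) = cmp E (snd ?C' n) (q n)" for n
    unfolding dP_def using someI_ex[OF ex2] .
  have dPa: "dP n \<in> arr E" "src E (dP n) = P n" "tgt E (dP n) = P (n+1)" for n using dP by auto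
  obtain N1 where N1: "\<And>n. N1 < \<bar>n\<bar> \<Longrightarrow> is_zero_obj E (fst ?B n)" using bc_bd gp by blast
  obtain N2 where N2: "\<And>n. N2 < \<bar>n\<bar> \<Longrightarrow> is_zero_obj E (fst ?C' n)" using bc_bd tp by blast
  have PP: "is_bcomplex E (P, dP)"
  proof (rule bcI[of _ "max N1 N2"])
    fix n
    show "fst (P, dP) n \<in> obj E" using pa by simp
    show "snd (P, dP) n \<in> hom E (fst (P, dP) n) (fst (P, dP) (n + 1))" using dPa by (simp add: hom_iff)
    show "cmp E (snd (P, dP) (n + 1)) (snd (P, dP) n) = zro E (fst (P, dP) n) (fst (P, dP) (n + 2))"
    proof -
      have "cmp E (dP (n+1)) (dP n) = zro E (P n) (P (n+1+1))"
      proof (rule pbE_uniq[OF pb[of "n+1+1"]])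
        show "cmp E (dP (n+1)) (dP n) \<in> arr E" "src E (cmp E (dP (n+1)) (dP n)) = P n"
          "tgt E (cmp E (dP (n+1)) (dP n)) = src E (p (n+1+1))" using dPa pa by auto
        show "zro E (P n) (P (n+1+1)) \<in> arr E" "src E (zro E (P n) (P (n+1+1))) = P n"
          "tgt E (zro E (P n) (P (n+1+1))) = src E (p (n+1+1))" using pa by auto
        have "cmp E (p (n+1+1)) (cmp E (dP (n+1)) (dP n)) = cmp E (cmp E (p (n+1+1)) (dP (n+1))) (dP n)"
          using pa dPa by (simp add: assoc_arr)
        also have "\<dots> = cmp E (cmp E (snd ?B (n+1)) (p (n+1))) (dP n)" by (simp only: dP[of "n+1"])
        also have "\<dots> = cmp E (snd ?B (n+1)) (cmp E (p (n+1)) (dP n))" using pa dPa gp by (simp add: assoc_arr)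
        also have "\<dots> = cmp E (snd ?B (n+1)) (cmp E (snd ?B n) (p n))" by (simp only: dP[of n])
        also have "\<dots> = cmp E (cmp E (snd ?B (n+1)) (snd ?B n)) (p n)" using pa gp by (simp add: assoc_arr)
        also have "\<dots> = cmp E (p (n+1+1)) (zro E (P n) (P (n+1+1)))" using bc_dd gp pa by (simp add: add.assoc)
        finally show "cmp E (p (n+1+1)) (cmp E (dP (n+1)) (dP n)) = cmp E (p (n+1+1)) (zro E (P n) (P (n+1+1)))" .
        have "cmp E (q (n+1+1)) (cmp E (dP (n+1)) (dP n)) = cmp E (cmp E (q (n+1+1)) (dP (n+1))) (dP n)"
          using pa dPa by (simp add: assoc_arr)
        also have "\<dots> = cmp E (cmp E (snd ?C' (n+1)) (q (n+1))) (dP n)" by (simp only: dP[of "n+1"])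
        also have "\<dots> = cmp E (snd ?C' (n+1)) (cmp E (q (n+1)) (dP n))" using pa dPa tp by (simp add: assoc_arr)
        also have "\<dots> = cmp E (snd ?C' (n+1)) (cmp E (snd ?C' n) (q n))" by (simp only: dP[of n])
        also have "\<dots> = cmp E (cmp E (snd ?C' (n+1)) (snd ?C' n)) (q n)" using pa tp by (simp add: assoc_arr)
        also have "\<dots> = cmp E (q (n+1+1)) (zro E (P n) (P (n+1+1)))" using bc_dd tp pa by (simp add: add.assoc)
        finally show "cmp E (q (n+1+1)) (cmp E (dP (n+1)) (dP n)) = cmp E (q (n+1+1)) (zro E (P n) (P (n+1+1)))" .
      qed
      then show ?thesis by (simp add: add.assoc)
    qed
    assume n: "max N1 N2 < \<bar>n\<bar>"
    have z: "is_zero_obj E (fst ?B n)" "is_zero_obj E (fst ?C' n)" using N1 N2 n by auto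
    have "ident E (P n) = zro E (P n) (P n)"
    proof (rule pbE_uniq[OF pb[of n]])
      show "ident E (P n) \<in> arr E" "src E (ident E (P n)) = P n" "tgt E (ident E (P n)) = src E (p n)"
        "zro E (P n) (P n) \<in> arr E" "src E (zro E (P n) (P n)) = P n" "tgt E (zro E (P n) (P n)) = src E (p n)"
        using pa by auto
      have h1: "cmp E (p n) (ident E (P n)) \<in> hom E (P n) (fst ?B n)" "cmp E (p n) (zro E (P n) (P n)) \<in> hom E (P n) (fst ?B n)"
        "cmp E (q n) (ident E (P n)) \<in> hom E (P n) (fst ?C' n)" "cmp E (q n) (zro E (P n) (P n)) \<in> hom E (P n) (fst ?C' n)"
        using pa gp tp by (auto simp: hom_iff)
      show "cmp E (p n) (ident E (P n)) = cmp E (p n) (zro E (P n) (P n))"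
        using zero_to[OF z(1) h1(1)] zero_to[OF z(1) h1(2)] by simp
      show "cmp E (q n) (ident E (P n)) = cmp E (q n) (zro E (P n) (P n))"
        using zero_to[OF z(2) h1(3)] zero_to[OF z(2) h1(4)] by simp
    qed
    then show "is_zero_obj E (fst (P, dP) n)" using id_zero_imp pa by simp
  qed
  have Pp: "((P, dP), ?B, p) \<in> hom (Cb E) (P, dP) ?B"
    by (rule homC_intro[OF PP gp(4)]) (use pa dP in \<open>auto simp: hom_iff\<close>)
  have Qq: "((P, dP), ?C', q) \<in> hom (Cb E) (P, dP) ?C'"
    by (rule homC_intro[OF PP tp(4)]) (use pa dP in \<open>auto simp: hom_iff\<close>)
  have PB: "is_pullback (Cb E) g t ((P, dP), ?B, p) ((P, dP), ?C', q)"
    unfolding is_pullback_def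
  proof (intro conjI allI impI)
    show "g \<in> arr (Cb E)" "t \<in> arr (Cb E)" "tgt (Cb E) t = tgt (Cb E) g" using ga t tg by auto
    show "((P, dP), ?B, p) \<in> arr (Cb E)" "((P, dP), ?C', q) \<in> arr (Cb E)" using Pp Qq by (auto simp: hom_iff)
    show "src (Cb E) ((P, dP), ?B, p) = src (Cb E) ((P, dP), ?C', q)"
      "tgt (Cb E) ((P, dP), ?B, p) = src (Cb E) g" "tgt (Cb E) ((P, dP), ?C', q) = src (Cb E) t" by auto
    show "cmp (Cb E) g ((P, dP), ?B, p) = cmp (Cb E) t ((P, dP), ?C', q)" using sq tg' by (simp add: fun_eq_iff)
    fix u v assume uv: "u \<in> arr (Cb E) \<and> v \<in> arr (Cb E) \<and> src (Cb E) u = src (Cb E) v \<and>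
      tgt (Cb E) u = src (Cb E) g \<and> tgt (Cb E) v = src (Cb E) t \<and> cmp (Cb E) g u = cmp (Cb E) t v"
    then have ua: "u \<in> arr (Cb E)" and va: "v \<in> arr (Cb E)" and us: "fst v = fst u" and ut: "fst (snd u) = ?B"
      and vt: "fst (snd v) = ?C'" by auto
    have ue: "cmp E (cps g n) (cps u n) = cmp E (cps t n) (cps v n)" for n using uv by (simp add: fun_eq_iff)
    note up = cm_props[OF ua] and vp = cm_props[OF va]
    let ?U = "fst u"
    have ex3: "\<exists>w. w \<in> arr E \<and> src E w = fst ?U n \<and> tgt E w = P n \<and> cmp E (p n) w = cps u n \<and> cmp E (q n) w = cps v n" for n
      using pbE_w[OF pb[of n], of "cps u n" "cps v n"] up vp us ut vt gp tp ue pa by simp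
    define w where "w n = (SOME w. w \<in> arr E \<and> src E w = fst ?U n \<and> tgt E w = P n \<and> cmp E (p n) w = cps u n \<and> cmp E (q n) w = cps v n)" for n
    have w: "w n \<in> arr E \<and> src E (w n) = fst ?U n \<and> tgt E (w n) = P n \<and> cmp E (p n) (w n) = cps u n \<and> cmp E (q n) (w n) = cps v n" for n
      unfolding w_def using someI_ex[OF ex3] .
    have wa: "w n \<in> arr E" "src E (w n) = fst ?U n" "tgt E (w n) = P n" for n using w by auto
    have W: "(?U, (P, dP), w) \<in> hom (Cb E) ?U (P, dP)"
    proof (rule homC_intro[OF up(4) PP])
      fix n
      show "w n \<in> hom E (fst ?U n) (fst (P, dP) n)" using wa by (simp add: hom_iff)
      show "cmp E (snd (P, dP) n) (w n) = cmp E (w (n + 1)) (snd ?U n)"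
      proof (simp, rule pbE_uniq[OF pb[of "n+1"]])
        show "cmp E (dP n) (w n) \<in> arr E" "src E (cmp E (dP n) (w n)) = fst ?U n"
          "tgt E (cmp E (dP n) (w n)) = src E (p (n+1))" using wa dPa pa by auto
        show "cmp E (w (n+1)) (snd ?U n) \<in> arr E" "src E (cmp E (w (n+1)) (snd ?U n)) = fst ?U n"
          "tgt E (cmp E (w (n+1)) (snd ?U n)) = src E (p (n+1))" using wa up pa by auto
        have "cmp E (p (n+1)) (cmp E (dP n) (w n)) = cmp E (cmp E (p (n+1)) (dP n)) (w n)" using pa dPa wa by (simp add: assoc_arr)
        also have "\<dots> = cmp E (cmp E (snd ?B n) (p n)) (w n)" using dP by simp
        also have "\<dots> = cmp E (snd ?B n) (cmp E (p n) (w n))" using pa wa gp by (simp add: assoc_arr)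
        also have "\<dots> = cmp E (snd ?B n) (cps u n)" using w by simp
        also have "\<dots> = cmp E (cps u (n+1)) (snd ?U n)" using cm_comm'[OF ua] ut by simp
        also have "\<dots> = cmp E (cmp E (p (n+1)) (w (n+1))) (snd ?U n)" using w by simp
        also have "\<dots> = cmp E (p (n+1)) (cmp E (w (n+1)) (snd ?U n))" using pa wa up by (simp add: assoc_arr)
        finally show "cmp E (p (n+1)) (cmp E (dP n) (w n)) = cmp E (p (n+1)) (cmp E (w (n+1)) (snd ?U n))" .
        have "cmp E (q (n+1)) (cmp E (dP n) (w n)) = cmp E (cmp E (q (n+1)) (dP n)) (w n)" using pa dPa wa by (simp add: assoc_arr)
        also have "\<dots> = cmp E (cmp E (snd ?C' n) (q n)) (w n)" using dP by simp
        also have "\<dots> = cmp E (snd ?C' n) (cmp E (q n) (w n))" using pa wa tp by (simp add: assoc_arr)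
        also have "\<dots> = cmp E (snd ?C' n) (cps v n)" using w by simp
        also have "\<dots> = cmp E (cps v (n+1)) (snd ?U n)" using cm_comm'[OF va] vt us by simp
        also have "\<dots> = cmp E (cmp E (q (n+1)) (w (n+1))) (snd ?U n)" using w by simp
        also have "\<dots> = cmp E (q (n+1)) (cmp E (w (n+1)) (snd ?U n))" using pa wa up by (simp add: assoc_arr)
        finally show "cmp E (q (n+1)) (cmp E (dP n) (w n)) = cmp E (q (n+1)) (cmp E (w (n+1)) (snd ?U n))" .
      qed
    qed
    have e1: "cmp (Cb E) ((P, dP), ?B, p) (?U, (P, dP), w) = u"
    proof -
      have "cmp (Cb E) ((P, dP), ?B, p) (?U, (P, dP), w) = (fst u, fst (snd u), cps u)" using w ut by (simp add: fun_eq_iff)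
      then show ?thesis by simp
    qed
    have e2: "cmp (Cb E) ((P, dP), ?C', q) (?U, (P, dP), w) = v"
    proof -
      have "cmp (Cb E) ((P, dP), ?C', q) (?U, (P, dP), w) = (fst v, fst (snd v), cps v)" using w vt us by (simp add: fun_eq_iff)
      then show ?thesis by simp
    qed
    show "\<exists>!w. w \<in> hom (Cb E) (src (Cb E) u) (src (Cb E) ((P, dP), ?B, p)) \<and>
             cmp (Cb E) ((P, dP), ?B, p) w = u \<and> cmp (Cb E) ((P, dP), ?C', q) w = v"
    proof (rule ex1I[of _ "(?U, (P, dP), w)"])
      show "(?U, (P, dP), w) \<in> hom (Cb E) (src (Cb E) u) (src (Cb E) ((P, dP), ?B, p)) \<and>
             cmp (Cb E) ((P, dP), ?B, p) (?U, (P, dP), w) = u \<and> cmp (Cb E) ((P, dP), ?C', q) (?U, (P, dP), w) = v"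
        using W e1 e2 by simp
      fix w' assume w': "w' \<in> hom (Cb E) (src (Cb E) u) (src (Cb E) ((P, dP), ?B, p)) \<and>
             cmp (Cb E) ((P, dP), ?B, p) w' = u \<and> cmp (Cb E) ((P, dP), ?C', q) w' = v"
      then have wh: "w' \<in> hom (Cb E) ?U (P, dP)" by simp
      show "w' = (?U, (P, dP), w)"
      proof (rule homC_eq[OF wh W])
        fix n
        have h: "cps w' n \<in> hom E (fst ?U n) (P n)" using homC_hom[OF wh] by simp
        have "cmp E (p n) (cps w' n) = cps u n" "cmp E (q n) (cps w' n) = cps v n"
          using w' by (auto simp: fun_eq_iff)
        then show "cps w' n = cps (?U, (P, dP), w) n"
          using pbE_uniq[OF pb[of n], of "cps w' n" "fst ?U n" "w n"] h wa w pa by (auto simp: hom_iff)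
      qed
    qed
  qed
  have "deflation (Cb E) (Cb_conf E Conf) ((P, dP), ?C', q)"
  proof (rule deg_defl)
    show "((P, dP), ?C', q) \<in> arr (Cb E)" using Qq by (simp add: hom_iff)
    fix n show "deflation E Conf (cps ((P, dP), ?C', q) n)"
      using pb_defl[OF gd[of n] tp(1)[of n] _ pb[of n]] tp gp tg' by simp
  qed
  then show ?thesis using PB by blast
qed


lemma Cb_rex: "right_exact (Cb E) (Cb_conf E Conf)"
  unfolding right_exact_def
proof (intro conjI allI impI Cb_cc)
  fix z assume z: "is_zero_obj (Cb E) z"
  have zb: "is_bcomplex E z" using z by (simp add: is_zero_obj_def)
  show "deflation (Cb E) (Cb_conf E Conf) (ident (Cb E) z)"
  proof (rule deg_defl)
    show "ident (Cb E) z \<in> arr (Cb E)" using idC_hom[OF zb] by (simp add: hom_iff)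
    fix n show "deflation E Conf (cps (ident (Cb E) z) n)" using zero_defl[OF zero_cb_deg[OF z]] by simp
  qed
next
  fix g h assume g: "deflation (Cb E) (Cb_conf E Conf) g" and h: "deflation (Cb E) (Cb_conf E Conf) h"
    and gh: "tgt (Cb E) g = src (Cb E) h"
  have ga: "g \<in> arr (Cb E)" and ha: "h \<in> arr (Cb E)" using g h defl_Cb_arr by auto
  show "deflation (Cb E) (Cb_conf E Conf) (cmp (Cb E) h g)"
  proof (rule deg_defl)
    have "g \<in> hom (Cb E) (fst g) (fst h)" "h \<in> hom (Cb E) (fst h) (fst (snd h))"
      using arr_CbD[OF ga] arr_CbD[OF ha] gh by auto
    from cmpC_hom[OF this] show "cmp (Cb E) h g \<in> arr (Cb E)" by (simp only: hom_iff)
    fix n show "deflation E Conf (cps (cmp (Cb E) h g) n)"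
      using defl_comp[OF defl_Cb_deg[OF g] defl_Cb_deg[OF h]] cm_props[OF ga] cm_props[OF ha] gh by simp
  qed
next
  fix g t assume g: "deflation (Cb E) (Cb_conf E Conf) g" and t: "t \<in> arr (Cb E)" and tg: "tgt (Cb E) t = tgt (Cb E) g"
  show "\<exists>p g'. is_pullback (Cb E) g t p g'" using Cb_pb[OF g t tg] by blast
next
  fix g t p q assume g: "deflation (Cb E) (Cb_conf E Conf) g" and t: "t \<in> arr (Cb E)" and tg: "tgt (Cb E) t = tgt (Cb E) g"
    and pb: "is_pullback (Cb E) g t p q"
  obtain p0 q0 where pb0: "is_pullback (Cb E) g t p0 q0" and q0: "deflation (Cb E) (Cb_conf E Conf) q0"
    using Cb_pb[OF g t tg] by blast
  obtain w where w: "w \<in> hom (Cb E) (src (Cb E) p) (src (Cb E) p0)" "is_iso (Cb E) w" "cmp (Cb E) q0 w = q"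
    using pb_iso[OF Cb_cat pb pb0] by blast
  have qa: "q \<in> arr (Cb E)" using pb_basic[OF pb] by blast
  have q0a: "q0 \<in> arr (Cb E)" using defl_Cb_arr[OF q0] .
  have wa: "w \<in> arr (Cb E)" using w(1) by (simp only: hom_iff)
  have st: "fst (snd w) = fst q0" using w(1) pb_basic[OF pb0] unfolding hom_iff by simp
  show "deflation (Cb E) (Cb_conf E Conf) q"
  proof (rule deg_defl[OF qa])
    fix n
    have "cps q n = cmp E (cps q0 n) (cps w n)" using w(3)[symmetric] by simp
    then show "deflation E Conf (cps q n)"
      using defl_iso_r[OF defl_Cb_deg[OF q0] isoC_deg[OF w(2)]] cm_props[OF wa] cm_props[OF q0a] st by simp
  qed
qed

end


locale perc = rex +
  fixes A :: "'a set"
  assumes perc: "right_percolating E Conf A"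
begin

lemma A_ne: "A \<noteq> {}" using perc by (simp add: right_percolating_def)
lemma A_sub: "A \<subseteq> obj E" using perc by (simp add: right_percolating_def)
lemma P1: "(f, g) \<in> Conf \<Longrightarrow> (src E g \<in> A \<longleftrightarrow> src E f \<in> A \<and> tgt E g \<in> A)"
  using perc by (simp add: right_percolating_def)
lemmas P2all = perc[unfolded right_percolating_def, THEN conjunct2, THEN conjunct2, THEN conjunct2, THEN conjunct1]
lemma P2: assumes "h \<in> arr E" "tgt E h \<in> A"
  shows "\<exists>d k. deflation E Conf d \<and> src E d = src E h \<and> tgt E d \<in> A \<and>
                  k \<in> arr E \<and> src E k = tgt E d \<and> tgt E k = tgt E h \<and> h = cmp E k d"
proof -
  obtain A' d k where "A' \<in> A \<and> d \<in> hom E (src E h) A' \<and> deflation E Conf d \<and>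
                  k \<in> hom E A' (tgt E h) \<and> h = cmp E k d" using P2all[rule_format, OF assms] by blast
  then show ?thesis unfolding hom_iff by blast
qed
lemmas P3all = perc[unfolded right_percolating_def, THEN conjunct2, THEN conjunct2, THEN conjunct2, THEN conjunct2, THEN conjunct1]
lemma P3ex: "inflation E Conf i \<Longrightarrow> deflation E Conf q \<Longrightarrow> src E i = src E q \<Longrightarrow> tgt E q \<in> A \<Longrightarrow>
        \<exists>q' i'. is_pushout E i q q' i'"
  using P3all[rule_format, of i q] by blast
lemma P3prop: "inflation E Conf i \<Longrightarrow> deflation E Conf q \<Longrightarrow> src E i = src E q \<Longrightarrow> tgt E q \<in> A \<Longrightarrow>
        is_pushout E i q q' i' \<Longrightarrow> inflation E Conf i' \<and> deflation E Conf q'"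
  using P3all[rule_format, of i q] by blast
lemmas P4all = perc[unfolded right_percolating_def, THEN conjunct2, THEN conjunct2, THEN conjunct2, THEN conjunct2, THEN conjunct2]

lemma iso_A: assumes u: "is_iso E u" and s: "src E u \<in> A" shows "tgt E u \<in> A"
proof -
  obtain k where "(k, u) \<in> Conf" using iso_defl[OF u] by (auto simp: deflation_def)
  then show ?thesis using P1 s by blast
qed

lemma zero_iso: assumes a: "is_zero_obj E a" and b: "is_zero_obj E b" shows "is_iso E (zro E a b)"
proof -
  have o: "a \<in> obj E" "b \<in> obj E" using a b zero_obj by auto
  have h: "zro E b a \<in> hom E b a" using o by simp
  have "cmp E (zro E b a) (zro E a b) = zro E a a" using o by simp
  then have e1: "cmp E (zro E b a) (zro E a b) = ident E a" using zero_id[OF a] by simp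
  have "cmp E (zro E a b) (zro E b a) = zro E b b" using o by simp
  then have e2: "cmp E (zro E a b) (zro E b a) = ident E b" using zero_id[OF b] by simp
  show ?thesis unfolding is_iso_def
    by (intro conjI bexI[of _ "zro E b a"]) (use o e1 e2 in simp_all)
qed

lemma zero_A: assumes z: "is_zero_obj E z" shows "z \<in> A"
proof -
  obtain a where a: "a \<in> A" using A_ne by blast
  have ao: "a \<in> obj E" using a A_sub by blast
  have zo: "z \<in> obj E" using z zero_obj by blast
  obtain d k where dk: "deflation E Conf d" "src E d = z" "tgt E d \<in> A"
    using P2[of "zro E z a"] zo ao a by auto
  have "is_zero_obj E (tgt E d)" using defl_from_zero[OF dk(1)] dk z by simp
  then show ?thesis using iso_A[OF zero_iso[OF _ z], of "tgt E d"] dk zo by (simp add: zero_obj)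
qed


lemma ref2: assumes u: "u \<in> arr E" "tgt E u \<in> A" and v: "v \<in> arr E" "src E v = src E u" "tgt E v \<in> A"
  shows "\<exists>e u' v'. deflation E Conf e \<and> src E e = src E u \<and> tgt E e \<in> A \<and>
     u' \<in> arr E \<and> src E u' = tgt E e \<and> tgt E u' = tgt E u \<and> u = cmp E u' e \<and>
     v' \<in> arr E \<and> src E v' = tgt E e \<and> tgt E v' = tgt E v \<and> v = cmp E v' e"
proof -
  obtain p a where p: "deflation E Conf p" "src E p = src E u" "tgt E p \<in> A"
    and a: "a \<in> arr E" "src E a = tgt E p" "tgt E a = tgt E u" "u = cmp E a p"
    using P2[OF u] by blast
  obtain q b where q: "deflation E Conf q" "src E q = src E u" "tgt E q \<in> A"
    and b: "b \<in> arr E" "src E b = tgt E q" "tgt E b = tgt E v" "v = cmp E b q"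
    using P2[OF v(1,3)] v(2) by auto
  have pa: "p \<in> arr E" "q \<in> arr E" using p q defl_arr by auto
  obtain kp where kp: "(kp, p) \<in> Conf" using p by (auto simp: deflation_def)
  note kb = conf_basic[OF kp]
  have qk: "cmp E q kp \<in> arr E" "tgt E (cmp E q kp) \<in> A" using kb q p pa by auto
  obtain s t where st: "deflation E Conf s \<and> src E s = src E (cmp E q kp) \<and> tgt E s \<in> A \<and>
     t \<in> arr E \<and> src E t = tgt E s \<and> tgt E t = tgt E (cmp E q kp) \<and> cmp E q kp = cmp E t s"
    using P2[OF qk] by blast
  have qkst: "src E (cmp E q kp) = src E kp" "tgt E (cmp E q kp) = tgt E q" using kb q p pa by auto
  have s: "deflation E Conf s" "src E s = src E kp" "tgt E s \<in> A"
    and t: "t \<in> arr E" "src E t = tgt E s" "tgt E t = tgt E q" "cmp E q kp = cmp E t s"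
    using st qkst by auto
  have sa: "s \<in> arr E" using s defl_arr by auto
  have ikp: "inflation E Conf kp" using kp by (auto simp: inflation_def)
  obtain q' i' where po: "is_pushout E kp s q' i'" using P3ex[OF ikp s(1)] s by auto
  have qi: "inflation E Conf i'" "deflation E Conf q'" using P3prop[OF ikp s(1) _ s(3) po] s by auto
  note pob = po_basic[OF po]
  obtain g'' where ig: "(i', g'') \<in> Conf" using qi by (auto simp: inflation_def)
  note gb = conf_basic[OF ig]
  have kt: "tgt E kp = src E u" using kb p by simp
  obtain w' where w': "w' \<in> hom E (tgt E q') (tgt E p)" "cmp E w' q' = p" "cmp E w' i' = zro E (tgt E s) (tgt E p)"
  proof -
    have z1: "zro E (tgt E s) (tgt E p) \<in> arr E" "src E (zro E (tgt E s) (tgt E p)) = tgt E s"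
      "tgt E (zro E (tgt E s) (tgt E p)) = tgt E p" using sa pa by auto
    have z2: "cmp E p kp = cmp E (zro E (tgt E s) (tgt E p)) s" using kb sa pa s by simp
    have e: "src E p = tgt E kp" "src E (zro E (tgt E s) (tgt E p)) = tgt E s" using kb z1 by auto
    have "\<exists>!w. w \<in> hom E (tgt E q') (tgt E p) \<and> cmp E w q' = p \<and> cmp E w i' = zro E (tgt E s) (tgt E p)"
      using po_univ[OF po pa(1) z1(1) e z1(3)[symmetric] z2] by simp
    then show ?thesis using that by blast
  qed
  have w'a: "w' \<in> arr E" "src E w' = tgt E q'" "tgt E w' = tgt E p" using w' by (auto simp: hom_iff)
  obtain w'' where w'': "w'' \<in> hom E (tgt E g'') (tgt E p)" "cmp E w'' g'' = w'"
  proof -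
    have e: "src E w' = tgt E i'" "cmp E w' i' = zro E (src E i') (tgt E w')" using w'a w' pob by auto
    have "\<exists>!x. x \<in> hom E (tgt E g'') (tgt E w') \<and> cmp E x g'' = w'"
      using conf_coker[OF ig w'a(1) e] .
    then show ?thesis using that w'a by auto
  qed
  have w''a: "w'' \<in> arr E" "src E w'' = tgt E g''" "tgt E w'' = tgt E p" using w'' by (auto simp: hom_iff)
  have gq0: "cmp E (cmp E g'' q') kp = zro E (src E kp) (tgt E g'')"
  proof -
    have "cmp E (cmp E g'' q') kp = cmp E g'' (cmp E q' kp)" using gb pob kb by (simp add: assoc_arr)
    also have "\<dots> = cmp E g'' (cmp E i' s)" using pob by simp
    also have "\<dots> = cmp E (cmp E g'' i') s" by (rule assoc_arr[symmetric]) (use gb pob sa in auto)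
    also have "\<dots> = cmp E (zro E (tgt E s) (tgt E g'')) s" using gb pob by simp
    also have "\<dots> = zro E (src E kp) (tgt E g'')" using gb pob sa s by simp
    finally show ?thesis .
  qed
  obtain w where w: "w \<in> hom E (tgt E p) (tgt E g'')" "cmp E w p = cmp E g'' q'"
  proof -
    have "\<exists>!x. x \<in> hom E (tgt E p) (tgt E (cmp E g'' q')) \<and> cmp E x p = cmp E g'' q'"
      using conf_coker[OF kp, of "cmp E g'' q'"] gb pob kb gq0 by simp
    then show ?thesis using that gb pob by auto
  qed
  have wa: "w \<in> arr E" "src E w = tgt E p" "tgt E w = tgt E g''" using w by (auto simp: hom_iff)
  have ww': "cmp E w w' = g''"
  proof (rule defl_epi[OF qi(2)])
    show "cmp E w w' \<in> hom E (tgt E q') (tgt E g'')" "g'' \<in> hom E (tgt E q') (tgt E g'')"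
      using wa w'a gb pob by (auto simp: hom_iff)
    have "cmp E (cmp E w w') q' = cmp E w (cmp E w' q')" using wa w'a pob by (simp add: assoc_arr)
    then show "cmp E (cmp E w w') q' = cmp E g'' q'" using w' w by simp
  qed
  have i1: "cmp E w w'' = ident E (tgt E g'')"
  proof (rule conf_epi[OF ig])
    show "cmp E w w'' \<in> hom E (tgt E g'') (tgt E g'')" "ident E (tgt E g'') \<in> hom E (tgt E g'') (tgt E g'')"
      using wa w''a gb by (auto simp: hom_iff)
    have "cmp E (cmp E w w'') g'' = cmp E w (cmp E w'' g'')" using wa w''a gb by (simp add: assoc_arr)
    then show "cmp E (cmp E w w'') g'' = cmp E (ident E (tgt E g'')) g''" using w'' ww' gb by simp
  qed
  have i2: "cmp E w'' w = ident E (tgt E p)"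
  proof (rule defl_epi[OF p(1)])
    show "cmp E w'' w \<in> hom E (tgt E p) (tgt E p)" "ident E (tgt E p) \<in> hom E (tgt E p) (tgt E p)"
      using wa w''a pa by (auto simp: hom_iff)
    have "cmp E (cmp E w'' w) p = cmp E w'' (cmp E g'' q')" using wa w''a pa w by (simp add: assoc_arr)
    also have "\<dots> = cmp E (cmp E w'' g'') q'" using w''a gb pob by (simp add: assoc_arr)
    also have "\<dots> = p" using w' w'' by simp
    finally show "cmp E (cmp E w'' w) p = cmp E (ident E (tgt E p)) p" using pa by simp
  qed
  have "is_iso E w" unfolding is_iso_def
    by (intro conjI bexI[of _ w'']) (use wa w''a i1 i2 in \<open>simp_all add: hom_iff\<close>)
  then have ZA: "tgt E g'' \<in> A" using iso_A[of w] p wa by simp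
  have RA: "tgt E q' \<in> A" using P1[OF ig] ZA s pob gb by simp
  obtain w3 where w3: "w3 \<in> hom E (tgt E q') (tgt E q)" "cmp E w3 q' = q"
  proof -
    have "\<exists>!x. x \<in> hom E (tgt E q') (tgt E q) \<and> cmp E x q' = q \<and> cmp E x i' = t"
      using po_univ[OF po, of q t] pa t pob kb q p by simp
    then show ?thesis using that by blast
  qed
  have w3a: "w3 \<in> arr E" "src E w3 = tgt E q'" "tgt E w3 = tgt E q" using w3 by (auto simp: hom_iff)
  have eu: "u = cmp E (cmp E a w') q'" using a w' w'a pob by (simp add: assoc_arr)
  have ev: "v = cmp E (cmp E b w3) q'" using b w3 w3a pob by (simp add: assoc_arr)
  show ?thesis
    apply (rule exI[of _ q'], rule exI[of _ "cmp E a w'"], rule exI[of _ "cmp E b w3"])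
    using qi RA pob kt a b w'a w3a eu ev by simp
qed

end


lemma desc_seq:
  fixes N :: int and G :: "int \<Rightarrow> 'x \<Rightarrow> bool" and R :: "int \<Rightarrow> 'x \<Rightarrow> 'x \<Rightarrow> bool" and b :: "int \<Rightarrow> 'x"
  assumes base: "\<And>n. N < n \<Longrightarrow> G n (b n) \<and> R n (b n) (b (n+1))"
    and step: "\<And>n y. n \<le> N \<Longrightarrow> G (n+1) y \<Longrightarrow> \<exists>x. G n x \<and> R n x y"
  shows "\<exists>e. \<forall>n. G n (e n) \<and> R n (e n) (e (n+1))"
proof -
  define S where "S n y = (SOME x. G n x \<and> R n x y)" for n y
  define r where "r = rec_nat (b (N+1)) (\<lambda>k y. S (N - int k) y)"
  have r0: "r 0 = b (N+1)" and rS: "r (Suc k) = S (N - int k) (r k)" for k by (simp_all add: r_def)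
  have S: "G n (S n y) \<and> R n (S n y) y" if "n \<le> N" "G (n+1) y" for n y
    unfolding S_def using step[OF that] by (rule someI_ex)
  have G: "G (N + 1 - int k) (r k)" for k
  proof (induction k)
    case 0 then show ?case using base[of "N+1"] r0 by simp
  next
    case (Suc k)
    have "N - int k + 1 = N + 1 - int k" by simp
    then have "G (N - int k + 1) (r k)" using Suc by metis
    then have "G (N - int k) (S (N - int k) (r k))" using S[of "N - int k" "r k"] by simp
    then show ?case using rS by simp
  qed
  define e where "e n = (if N < n then b n else r (nat (N + 1 - n)))" for n
  have "G n (e n) \<and> R n (e n) (e (n+1))" for n
  proof (cases "N < n")
    case True then show ?thesis using base[of n] by (simp add: e_def)
  next
    case False
    define k where "k = nat (N - n)"
    have k1: "nat (N + 1 - n) = Suc k" using False k_def by simp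
    have k2: "N - int k = n" using False k_def by simp
    have en: "e n = S n (r k)" using False k1 k2 rS by (simp add: e_def)
    have en1: "e (n+1) = r k"
    proof (cases "N < n + 1")
      case True then have "n = N" using False by simp
      then show ?thesis using r0 k_def by (simp add: e_def)
    next
      case F: False then show ?thesis by (simp add: e_def k_def)
    qed
    have "G (n+1) (r k)" using G[of k] k2 by (simp add: algebra_simps)
    then show ?thesis using S[of n "r k"] False en en1 by simp
  qed
  then show ?thesis by blast
qed

context perc
begin

lemma QC: assumes X: "is_bcomplex E X" and ed: "\<And>n. deflation E Conf (e n)"
  and es: "\<And>n. src E (e n) = fst X n" and et: "\<And>n. tgt E (e n) \<in> A"
  and R: "\<And>n. \<exists>\<delta>. \<delta> \<in> arr E \<and> src E \<delta> = tgt E (e n) \<and> tgt E \<delta> = tgt E (e (n+1)) \<and>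
               cmp E \<delta> (e n) = cmp E (e (n+1)) (snd X n)"
  shows "\<exists>B. B \<in> Cb_sub E A \<and> fst B = (\<lambda>n. tgt E (e n)) \<and> (X, B, e) \<in> hom (Cb E) X B \<and>
     deflation (Cb E) (Cb_conf E Conf) (X, B, e)"
proof -
  define D where "D n = (SOME \<delta>. \<delta> \<in> arr E \<and> src E \<delta> = tgt E (e n) \<and> tgt E \<delta> = tgt E (e (n+1)) \<and>
               cmp E \<delta> (e n) = cmp E (e (n+1)) (snd X n))" for n
  have D: "D n \<in> arr E \<and> src E (D n) = tgt E (e n) \<and> tgt E (D n) = tgt E (e (n+1)) \<and>
               cmp E (D n) (e n) = cmp E (e (n+1)) (snd X n)" for n
    unfolding D_def using R[of n] by (rule someI_ex)
  have Da: "D n \<in> arr E" "src E (D n) = tgt E (e n)" "tgt E (D n) = tgt E (e (n+1))" for n using D by auto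
  have ea: "e n \<in> arr E" for n using ed defl_arr by blast
  define B where "B = (\<lambda>n. tgt E (e n), D)"
  obtain N where N: "\<And>n. N < \<bar>n\<bar> \<Longrightarrow> is_zero_obj E (fst X n)" using bc_bd[OF X] by blast
  have Bc: "is_bcomplex E B"
  proof (rule bcI[of _ N])
    fix n
    show "fst B n \<in> obj E" using ea by (simp add: B_def)
    show "snd B n \<in> hom E (fst B n) (fst B (n + 1))" using Da by (simp add: B_def hom_iff)
    show "cmp E (snd B (n + 1)) (snd B n) = zro E (fst B n) (fst B (n + 2))"
    proof -
      have "cmp E (cmp E (D (n+1)) (D n)) (e n) = cmp E (zro E (tgt E (e n)) (tgt E (e (n+2)))) (e n)"
      proof -
        have "cmp E (cmp E (D (n+1)) (D n)) (e n) = cmp E (D (n+1)) (cmp E (D n) (e n))" using Da ea by (simp add: assoc_arr)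
        also have "\<dots> = cmp E (D (n+1)) (cmp E (e (n+1)) (snd X n))" using D by simp
        also have "\<dots> = cmp E (cmp E (D (n+1)) (e (n+1))) (snd X n)" by (rule assoc_arr[symmetric]) (use Da ea es X in auto)
        also have "\<dots> = cmp E (cmp E (e (n+1+1)) (snd X (n+1))) (snd X n)" by (simp only: D[of "n+1"])
        also have "\<dots> = cmp E (e (n+1+1)) (cmp E (snd X (n+1)) (snd X n))" using ea es X by (simp add: assoc_arr)
        also have "\<dots> = zro E (fst X n) (tgt E (e (n+2)))" using bc_dd[OF X] ea es X by (simp add: add.assoc)
        also have "\<dots> = cmp E (zro E (tgt E (e n)) (tgt E (e (n+2)))) (e n)" using ea es by simp
        finally show ?thesis .
      qed
      moreover have "cmp E (D (n+1)) (D n) \<in> hom E (tgt E (e n)) (tgt E (e (n+2)))"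
        using Da by (simp add: hom_iff add.assoc)
      moreover have "zro E (tgt E (e n)) (tgt E (e (n+2))) \<in> hom E (tgt E (e n)) (tgt E (e (n+2)))" using ea by simp
      ultimately show ?thesis using defl_epi[OF ed] by (simp add: B_def)
    qed
    assume "N < \<bar>n\<bar>"
    then show "is_zero_obj E (fst B n)" using defl_from_zero[OF ed[of n]] N es by (simp add: B_def)
  qed
  have BA: "B \<in> Cb_sub E A" using Bc et by (simp add: Cb_sub_def B_def)
  have H: "(X, B, e) \<in> hom (Cb E) X B"
    by (rule homC_intro[OF X Bc]) (use ea es D in \<open>simp_all add: B_def hom_iff\<close>)
  have "deflation (Cb E) (Cb_conf E Conf) (X, B, e)"
    by (rule deg_defl) (use H ed in \<open>simp_all add: hom_iff\<close>)
  then show ?thesis using BA H by (auto simp: B_def)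
qed


lemma factor_chain: assumes eh: "(X, B, e) \<in> hom (Cb E) X B" and ed: "\<And>n. deflation E Conf (e n)"
  and hh: "(X, Y, h) \<in> hom (Cb E) X Y"
  and k: "\<And>n. k n \<in> arr E" "\<And>n. src E (k n) = fst B n" "\<And>n. tgt E (k n) = fst Y n"
  and ke: "\<And>n. cmp E (k n) (e n) = h n"
  shows "(B, Y, k) \<in> hom (Cb E) B Y"
proof -
  have X: "is_bcomplex E X" and B: "is_bcomplex E B" using homC_bc[OF eh] by auto
  have Y: "is_bcomplex E Y" using homC_bc[OF hh] by auto
  have ea: "e n \<in> arr E" "src E (e n) = fst X n" "tgt E (e n) = fst B n" for n
    using homC_hom[OF eh, of n] by (auto simp: hom_iff)
  show ?thesis
  proof (rule homC_intro[OF B Y])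
    fix n
    show "k n \<in> hom E (fst B n) (fst Y n)" using k by (simp add: hom_iff)
    show "cmp E (snd Y n) (k n) = cmp E (k (n + 1)) (snd B n)"
    proof (rule defl_epi[OF ed[of n]])
      show "cmp E (snd Y n) (k n) \<in> hom E (tgt E (e n)) (fst Y (n+1))"
        "cmp E (k (n + 1)) (snd B n) \<in> hom E (tgt E (e n)) (fst Y (n+1))" using k ea B Y by (auto simp: hom_iff)
      have "cmp E (cmp E (snd Y n) (k n)) (e n) = cmp E (snd Y n) (h n)" using k ea Y ke by (simp add: assoc_arr)
      also have "\<dots> = cmp E (h (n+1)) (snd X n)" using homC_comm[OF hh] by simp
      also have "\<dots> = cmp E (k (n+1)) (cmp E (e (n+1)) (snd X n))" using k ea X ke[of "n+1", symmetric] by (simp add: assoc_arr)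
      also have "\<dots> = cmp E (k (n+1)) (cmp E (snd B n) (e n))" using homC_comm[OF eh] by simp
      also have "\<dots> = cmp E (cmp E (k (n + 1)) (snd B n)) (e n)" using k ea B by (simp add: assoc_arr)
      finally show "cmp E (cmp E (snd Y n) (k n)) (e n) = cmp E (cmp E (k (n + 1)) (snd B n)) (e n)" .
    qed
  qed
qed

lemma Cb_P2: assumes h: "h \<in> arr (Cb E)" and hA: "tgt (Cb E) h \<in> Cb_sub E A"
  shows "\<exists>A' d k. A' \<in> Cb_sub E A \<and> d \<in> hom (Cb E) (src (Cb E) h) A' \<and> deflation (Cb E) (Cb_conf E Conf) d \<and>
                  k \<in> hom (Cb E) A' (tgt (Cb E) h) \<and> h = cmp (Cb E) k d"
proof -
  note hp = cm_props[OF h]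
  let ?X = "fst h" and ?Y = "fst (snd h)"
  have YA: "fst ?Y n \<in> A" for n using hA by (simp add: Cb_sub_def)
  obtain N where N: "\<And>n. N < \<bar>n\<bar> \<Longrightarrow> is_zero_obj E (fst ?X n)" using bc_bd hp by blast
  define G where "G n e = (deflation E Conf e \<and> src E e = fst ?X n \<and> tgt E e \<in> A \<and>
       (\<exists>k. k \<in> arr E \<and> src E k = tgt E e \<and> tgt E k = fst ?Y n \<and> cps h n = cmp E k e))" for n e
  define R where "R n e e' = (\<exists>\<delta>. \<delta> \<in> arr E \<and> src E \<delta> = tgt E e \<and> tgt E \<delta> = tgt E e' \<and>
               cmp E \<delta> e = cmp E e' (snd ?X n))" for n e e'
  have "\<exists>e. \<forall>n. G n (e n) \<and> R n (e n) (e (n+1))"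
  proof (rule desc_seq[of N G "\<lambda>n. ident E (fst ?X n)" R])
    fix n assume n: "N < n"
    then have z: "is_zero_obj E (fst ?X n)" using N by simp
    have "G n (ident E (fst ?X n))" unfolding G_def
      using id_defl zero_A[OF z] hp by (auto intro!: exI[of _ "cps h n"])
    moreover have "R n (ident E (fst ?X n)) (ident E (fst ?X (n+1)))" unfolding R_def
      using hp by (auto intro!: exI[of _ "snd ?X n"])
    ultimately show "G n (ident E (fst ?X n)) \<and> R n (ident E (fst ?X n)) (ident E (fst ?X (n + 1)))" by blast
  next
    fix n y assume G1: "G (n+1) y"
    then have y: "deflation E Conf y" "src E y = fst ?X (n+1)" "tgt E y \<in> A" by (auto simp: G_def)
    have ya: "y \<in> arr E" using y defl_arr by blast
    have u: "cps h n \<in> arr E" "tgt E (cps h n) \<in> A" using hp YA by auto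
    have v: "cmp E y (snd ?X n) \<in> arr E" "src E (cmp E y (snd ?X n)) = src E (cps h n)" "tgt E (cmp E y (snd ?X n)) \<in> A"
      using ya y hp by auto
    obtain e u' v' where r: "deflation E Conf e \<and> src E e = src E (cps h n) \<and> tgt E e \<in> A \<and>
     u' \<in> arr E \<and> src E u' = tgt E e \<and> tgt E u' = tgt E (cps h n) \<and> cps h n = cmp E u' e \<and>
     v' \<in> arr E \<and> src E v' = tgt E e \<and> tgt E v' = tgt E (cmp E y (snd ?X n)) \<and> cmp E y (snd ?X n) = cmp E v' e"
      using ref2[OF u v] by blast
    have "G n e" unfolding G_def using r hp by auto
    moreover have "R n e y" unfolding R_def using r ya y hp by (auto intro!: exI[of _ v'])
    ultimately show "\<exists>x. G n x \<and> R n x y" by blast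
  qed
  then obtain e where e: "\<And>n. G n (e n)" "\<And>n. R n (e n) (e (n+1))" by blast
  have ed: "deflation E Conf (e n)" "src E (e n) = fst ?X n" "tgt E (e n) \<in> A" for n using e(1)[of n] by (auto simp: G_def)
  obtain B where B: "B \<in> Cb_sub E A" "fst B = (\<lambda>n. tgt E (e n))" "(?X, B, e) \<in> hom (Cb E) ?X B"
     "deflation (Cb E) (Cb_conf E Conf) (?X, B, e)"
    using QC[OF hp(4) ed] e(2) unfolding R_def by blast
  define k where "k n = (SOME k. k \<in> arr E \<and> src E k = tgt E (e n) \<and> tgt E k = fst ?Y n \<and> cps h n = cmp E k (e n))" for n
  have k: "k n \<in> arr E \<and> src E (k n) = tgt E (e n) \<and> tgt E (k n) = fst ?Y n \<and> cps h n = cmp E (k n) (e n)" for n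
  proof -
    from e(1)[of n] have "\<exists>k. k \<in> arr E \<and> src E k = tgt E (e n) \<and> tgt E k = fst ?Y n \<and> cps h n = cmp E k (e n)"
      unfolding G_def by (elim conjE)
    then show ?thesis unfolding k_def by (rule someI_ex)
  qed
  have hh: "(?X, ?Y, cps h) \<in> hom (Cb E) ?X ?Y" using h by (simp add: hom_iff)
  have K: "(B, ?Y, k) \<in> hom (Cb E) B ?Y"
    by (rule factor_chain[OF B(3) ed(1) hh]) (use k B(2) in auto)
  have fe: "(\<lambda>n. cmp E (k n) (e n)) = cps h" using k by (simp add: fun_eq_iff)
  have hk: "h = cmp (Cb E) (B, ?Y, k) (?X, B, e)"
  proof -
    have "cmp (Cb E) (B, ?Y, k) (?X, B, e) = (?X, ?Y, \<lambda>n. cmp E (k n) (e n))" by simp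
    also have "\<dots> = (?X, ?Y, cps h)" by (simp only: fe)
    also have "\<dots> = h" by simp
    finally show ?thesis by simp
  qed
  show ?thesis
    apply (rule exI[of _ B], rule exI[of _ "(?X, B, e)"], rule exI[of _ "(B, ?Y, k)"])
    using B(1,3,4) K hk by simp
qed

end


context perc
begin

lemma P4E: assumes "inflation E Conf i" "deflation E Conf p" "tgt E i = src E p" "src E i \<in> A" "tgt E p \<in> A"
  shows "\<exists>d1 d2 j k. deflation E Conf d1 \<and> src E d1 = src E i \<and> tgt E d1 \<in> A \<and>
     deflation E Conf d2 \<and> src E d2 = tgt E i \<and> tgt E d2 \<in> A \<and>
     inflation E Conf j \<and> src E j = tgt E d1 \<and> tgt E j = tgt E d2 \<and>
     k \<in> arr E \<and> src E k = tgt E d2 \<and> tgt E k = tgt E p \<and>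
     cmp E d2 i = cmp E j d1 \<and> p = cmp E k d2"
proof -
  obtain A' B' d1 d2 j k where H: "A' \<in> A \<and> B' \<in> A \<and>
           d1 \<in> hom E (src E i) A' \<and> deflation E Conf d1 \<and>
           d2 \<in> hom E (tgt E i) B' \<and> deflation E Conf d2 \<and>
           j \<in> hom E A' B' \<and> inflation E Conf j \<and>
           k \<in> hom E B' (tgt E p) \<and>
           cmp E d2 i = cmp E j d1 \<and> p = cmp E k d2"
    using P4all[rule_format, OF assms] by blast
  then have "deflation E Conf d1 \<and> src E d1 = src E i \<and> tgt E d1 \<in> A \<and>
     deflation E Conf d2 \<and> src E d2 = tgt E i \<and> tgt E d2 \<in> A \<and>
     inflation E Conf j \<and> src E j = tgt E d1 \<and> tgt E j = tgt E d2 \<and>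
     k \<in> arr E \<and> src E k = tgt E d2 \<and> tgt E k = tgt E p \<and>
     cmp E d2 i = cmp E j d1 \<and> p = cmp E k d2" unfolding hom_iff by (elim conjE) (intro conjI; assumption?; simp)
  then show ?thesis by blast
qed


lemma Cb_P4: assumes i: "inflation (Cb E) (Cb_conf E Conf) i" and p: "deflation (Cb E) (Cb_conf E Conf) p"
  and ip: "tgt (Cb E) i = src (Cb E) p" and iA: "src (Cb E) i \<in> Cb_sub E A" and pA: "tgt (Cb E) p \<in> Cb_sub E A"
  shows "\<exists>A' B' d1 d2 j k. A' \<in> Cb_sub E A \<and> B' \<in> Cb_sub E A \<and>
           d1 \<in> hom (Cb E) (src (Cb E) i) A' \<and> deflation (Cb E) (Cb_conf E Conf) d1 \<and>
           d2 \<in> hom (Cb E) (tgt (Cb E) i) B' \<and> deflation (Cb E) (Cb_conf E Conf) d2 \<and>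
           j \<in> hom (Cb E) A' B' \<and> inflation (Cb E) (Cb_conf E Conf) j \<and>
           k \<in> hom (Cb E) B' (tgt (Cb E) p) \<and>
           cmp (Cb E) d2 i = cmp (Cb E) j d1 \<and> p = cmp (Cb E) k d2"
proof -
  have ia: "i \<in> arr (Cb E)" and pa: "p \<in> arr (Cb E)" using infl_Cb_arr[OF i] defl_Cb_arr[OF p] by auto
  note ip' = cm_props[OF ia] and pp = cm_props[OF pa]
  let ?S = "fst i" and ?X = "fst p" and ?Y = "fst (snd p)"
  have ipx: "fst (snd i) = ?X" using ip by simp
  have SA: "fst ?S n \<in> A" for n using iA by (simp add: Cb_sub_def)
  have YA: "fst ?Y n \<in> A" for n using pA by (simp add: Cb_sub_def)
  have iinf: "inflation E Conf (cps i n)" for n using infl_Cb_deg[OF i] .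
  have pdef: "deflation E Conf (cps p n)" for n using defl_Cb_deg[OF p] .
  obtain N where N: "\<And>n. N < \<bar>n\<bar> \<Longrightarrow> is_zero_obj E (fst ?X n)" using bc_bd pp by blast
  define G where "G n e = (deflation E Conf e \<and> src E e = fst ?X n \<and> tgt E e \<in> A \<and>
       (\<exists>k. k \<in> arr E \<and> src E k = tgt E e \<and> tgt E k = fst ?Y n \<and> cps p n = cmp E k e) \<and>
       (\<exists>d1 j. deflation E Conf d1 \<and> src E d1 = fst ?S n \<and> tgt E d1 \<in> A \<and>
          inflation E Conf j \<and> src E j = tgt E d1 \<and> tgt E j = tgt E e \<and> cmp E e (cps i n) = cmp E j d1))" for n e
  define R where "R n e e' = (\<exists>\<delta>. \<delta> \<in> arr E \<and> src E \<delta> = tgt E e \<and> tgt E \<delta> = tgt E e' \<and>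
               cmp E \<delta> e = cmp E e' (snd ?X n))" for n e e'
  have "\<exists>e. \<forall>n. G n (e n) \<and> R n (e n) (e (n+1))"
  proof (rule desc_seq[of N G "\<lambda>n. ident E (fst ?X n)" R])
    fix n assume n: "N < n"
    then have z: "is_zero_obj E (fst ?X n)" using N by simp
    have ii: "cps i n \<in> arr E" "src E (cps i n) = fst ?S n" "tgt E (cps i n) = fst ?X n" using ip' ipx by auto
    have c1: "\<exists>k. k \<in> arr E \<and> src E k = tgt E (ident E (fst ?X n)) \<and> tgt E k = fst ?Y n \<and> cps p n = cmp E k (ident E (fst ?X n))"
      by (intro exI[of _ "cps p n"]) (use pp in simp)
    have c2: "\<exists>d1 j. deflation E Conf d1 \<and> src E d1 = fst ?S n \<and> tgt E d1 \<in> A \<and>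
          inflation E Conf j \<and> src E j = tgt E d1 \<and> tgt E j = tgt E (ident E (fst ?X n)) \<and>
          cmp E (ident E (fst ?X n)) (cps i n) = cmp E j d1"
      by (intro exI[of _ "ident E (fst ?S n)"] exI[of _ "cps i n"]) (use id_defl ip' iinf ii SA pp in simp)
    have c3: "deflation E Conf (ident E (fst ?X n))" "src E (ident E (fst ?X n)) = fst ?X n"
      "tgt E (ident E (fst ?X n)) \<in> A" using id_defl pp zero_A[OF z] by auto
    have "G n (ident E (fst ?X n))" unfolding G_def by (intro conjI c1 c2 c3)
    moreover have "R n (ident E (fst ?X n)) (ident E (fst ?X (n+1)))" unfolding R_def
      using pp by (auto intro!: exI[of _ "snd ?X n"])
    ultimately show "G n (ident E (fst ?X n)) \<and> R n (ident E (fst ?X n)) (ident E (fst ?X (n + 1)))" by blast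
  next
    fix n y assume G1: "G (n+1) y"
    then have y: "deflation E Conf y" "src E y = fst ?X (n+1)" "tgt E y \<in> A" by (auto simp: G_def)
    have ya: "y \<in> arr E" using y defl_arr by blast
    have u: "cps p n \<in> arr E" "tgt E (cps p n) \<in> A" using pp YA by auto
    have v: "cmp E y (snd ?X n) \<in> arr E" "src E (cmp E y (snd ?X n)) = src E (cps p n)" "tgt E (cmp E y (snd ?X n)) \<in> A"
      using ya y pp by auto
    obtain g u' v' where r: "deflation E Conf g \<and> src E g = src E (cps p n) \<and> tgt E g \<in> A \<and>
     u' \<in> arr E \<and> src E u' = tgt E g \<and> tgt E u' = tgt E (cps p n) \<and> cps p n = cmp E u' g \<and>
     v' \<in> arr E \<and> src E v' = tgt E g \<and> tgt E v' = tgt E (cmp E y (snd ?X n)) \<and> cmp E y (snd ?X n) = cmp E v' g"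
      using ref2[OF u v] by blast
    have ii: "cps i n \<in> arr E" "src E (cps i n) = fst ?S n" "tgt E (cps i n) = fst ?X n" using ip' ipx by auto
    obtain d1 d2 j k where q: "deflation E Conf d1 \<and> src E d1 = src E (cps i n) \<and> tgt E d1 \<in> A \<and>
     deflation E Conf d2 \<and> src E d2 = tgt E (cps i n) \<and> tgt E d2 \<in> A \<and>
     inflation E Conf j \<and> src E j = tgt E d1 \<and> tgt E j = tgt E d2 \<and>
     k \<in> arr E \<and> src E k = tgt E d2 \<and> tgt E k = tgt E g \<and>
     cmp E d2 (cps i n) = cmp E j d1 \<and> g = cmp E k d2"
    proof -
      have gd: "deflation E Conf g" using r by blast
      have e1: "tgt E (cps i n) = src E g" using r ii pp by auto
      have e2: "src E (cps i n) \<in> A" using ii SA by simp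
      have e3: "tgt E g \<in> A" using r by blast
      show ?thesis using P4E[OF iinf[of n] gd e1 e2 e3] that by blast
    qed
    have d2a: "d2 \<in> arr E" using q defl_arr by blast
    have qf: "deflation E Conf d2" "deflation E Conf d1" "inflation E Conf j"
      "src E d2 = fst ?X n" "tgt E d2 \<in> A" "src E d1 = fst ?S n" "tgt E d1 \<in> A"
      "src E j = tgt E d1" "tgt E j = tgt E d2" "cmp E d2 (cps i n) = cmp E j d1"
      "k \<in> arr E" "src E k = tgt E d2" "tgt E k = tgt E g" using q ii by auto
    have gk: "g = cmp E k d2" using q by blast
    have rf: "u' \<in> arr E" "src E u' = tgt E g" "tgt E u' = fst ?Y n" "cps p n = cmp E u' g"
      "v' \<in> arr E" "src E v' = tgt E g" "tgt E v' = tgt E y" "cmp E y (snd ?X n) = cmp E v' g"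
      using r pp ya y by auto
    have "G n d2" unfolding G_def
    proof (intro conjI exI)
      show "deflation E Conf d2" "deflation E Conf d1" "inflation E Conf j" using qf by auto
      show "src E d2 = fst ?X n" "tgt E d2 \<in> A" "src E d1 = fst ?S n" "tgt E d1 \<in> A"
        "src E j = tgt E d1" "tgt E j = tgt E d2" "cmp E d2 (cps i n) = cmp E j d1" using qf by auto
      show "cmp E u' k \<in> arr E" "src E (cmp E u' k) = tgt E d2" "tgt E (cmp E u' k) = fst ?Y n" using qf rf by auto
      have "cmp E (cmp E u' k) d2 = cmp E u' (cmp E k d2)" by (rule assoc_arr) (use qf rf d2a in auto)
      then show "cps p n = cmp E (cmp E u' k) d2" using rf(4) gk by simp
    qed
    moreover have "R n d2 y" unfolding R_def
    proof (intro exI conjI)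
      show "cmp E v' k \<in> arr E" "src E (cmp E v' k) = tgt E d2" "tgt E (cmp E v' k) = tgt E y" using qf rf by auto
      have "cmp E (cmp E v' k) d2 = cmp E v' (cmp E k d2)" by (rule assoc_arr) (use qf rf d2a in auto)
      then show "cmp E (cmp E v' k) d2 = cmp E y (snd ?X n)" using rf(8) gk by simp
    qed
    ultimately show "\<exists>x. G n x \<and> R n x y" by blast
  qed
  then obtain e where e: "\<And>n. G n (e n)" "\<And>n. R n (e n) (e (n+1))" by blast
  have ed: "deflation E Conf (e n)" "src E (e n) = fst ?X n" "tgt E (e n) \<in> A" for n using e(1)[of n] by (auto simp: G_def)
  have ea: "e n \<in> arr E" for n using ed defl_arr by blast
  obtain B where B: "B \<in> Cb_sub E A" "fst B = (\<lambda>n. tgt E (e n))" "(?X, B, e) \<in> hom (Cb E) ?X B"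
     "deflation (Cb E) (Cb_conf E Conf) (?X, B, e)"
    using QC[OF pp(4) ed] e(2) unfolding R_def by blast
  define k where "k n = (SOME k. k \<in> arr E \<and> src E k = tgt E (e n) \<and> tgt E k = fst ?Y n \<and> cps p n = cmp E k (e n))" for n
  have k: "k n \<in> arr E \<and> src E (k n) = tgt E (e n) \<and> tgt E (k n) = fst ?Y n \<and> cps p n = cmp E (k n) (e n)" for n
  proof -
    from e(1)[of n] have "\<exists>k. k \<in> arr E \<and> src E k = tgt E (e n) \<and> tgt E k = fst ?Y n \<and> cps p n = cmp E k (e n)"
      unfolding G_def by (elim conjE)
    then show ?thesis unfolding k_def by (rule someI_ex)
  qed
  have ph: "(?X, ?Y, cps p) \<in> hom (Cb E) ?X ?Y" using pa by (simp add: hom_iff)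
  have K: "(B, ?Y, k) \<in> hom (Cb E) B ?Y"
    by (rule factor_chain[OF B(3) ed(1) ph]) (use k B(2) in auto)
  define dj where "dj n = (SOME dj. deflation E Conf (fst dj) \<and> src E (fst dj) = fst ?S n \<and> tgt E (fst dj) \<in> A \<and>
          inflation E Conf (snd dj) \<and> src E (snd dj) = tgt E (fst dj) \<and> tgt E (snd dj) = tgt E (e n) \<and>
          cmp E (e n) (cps i n) = cmp E (snd dj) (fst dj))" for n
  have dj: "deflation E Conf (fst (dj n)) \<and> src E (fst (dj n)) = fst ?S n \<and> tgt E (fst (dj n)) \<in> A \<and>
          inflation E Conf (snd (dj n)) \<and> src E (snd (dj n)) = tgt E (fst (dj n)) \<and> tgt E (snd (dj n)) = tgt E (e n) \<and>
          cmp E (e n) (cps i n) = cmp E (snd (dj n)) (fst (dj n))" for n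
  proof -
    from e(1)[of n] have "\<exists>d1 j. deflation E Conf d1 \<and> src E d1 = fst ?S n \<and> tgt E d1 \<in> A \<and>
          inflation E Conf j \<and> src E j = tgt E d1 \<and> tgt E j = tgt E (e n) \<and> cmp E (e n) (cps i n) = cmp E j d1"
      unfolding G_def by (elim conjE)
    then have "\<exists>dj. deflation E Conf (fst dj) \<and> src E (fst dj) = fst ?S n \<and> tgt E (fst dj) \<in> A \<and>
          inflation E Conf (snd dj) \<and> src E (snd dj) = tgt E (fst dj) \<and> tgt E (snd dj) = tgt E (e n) \<and>
          cmp E (e n) (cps i n) = cmp E (snd dj) (fst dj)" by auto
    then show ?thesis unfolding dj_def by (rule someI_ex)
  qed
  define d1 where "d1 n = fst (dj n)" for n
  define j where "j n = snd (dj n)" for n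
  have d1: "deflation E Conf (d1 n)" "src E (d1 n) = fst ?S n" "tgt E (d1 n) \<in> A" "d1 n \<in> arr E" for n
    using dj[of n] defl_arr by (auto simp: d1_def)
  have jj: "inflation E Conf (j n)" "src E (j n) = tgt E (d1 n)" "tgt E (j n) = tgt E (e n)" "j n \<in> arr E"
     "cmp E (e n) (cps i n) = cmp E (j n) (d1 n)" for n
    using dj[of n] infl_arr by (auto simp: d1_def j_def)
  note Bc = homC_bc[OF B(3)]
  have Bcomm: "cmp E (snd B n) (e n) = cmp E (e (n+1)) (snd ?X n)" for n using homC_comm[OF B(3)] by simp
  have Bd: "snd B n \<in> arr E" "src E (snd B n) = tgt E (e n)" "tgt E (snd B n) = tgt E (e (n+1))" for n
    using Bc B(2) by auto
  have Rd1: "\<exists>\<delta>. \<delta> \<in> arr E \<and> src E \<delta> = tgt E (d1 n) \<and> tgt E \<delta> = tgt E (d1 (n+1)) \<and>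
               cmp E \<delta> (d1 n) = cmp E (d1 (n+1)) (snd ?S n)" for n
  proof -
    obtain \<kappa> where kap: "(\<kappa>, d1 n) \<in> Conf" using d1(1)[of n] by (auto simp: deflation_def)
    note kb = conf_basic[OF kap]
    let ?h = "cmp E (d1 (n+1)) (snd ?S n)"
    have ha: "?h \<in> arr E" "src E ?h = tgt E \<kappa>" "tgt E ?h = tgt E (d1 (n+1))" using d1 ip' kb by auto
    have z: "cmp E ?h \<kappa> = zro E (src E \<kappa>) (tgt E ?h)"
    proof (rule infl_mono[OF jj(1)[of "n+1"]])
      show "cmp E ?h \<kappa> \<in> hom E (src E \<kappa>) (src E (j (n+1)))" "zro E (src E \<kappa>) (tgt E ?h) \<in> hom E (src E \<kappa>) (src E (j (n+1)))"
        using ha kb jj d1 by (auto simp: hom_iff)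
      have "cmp E (j (n+1)) (cmp E ?h \<kappa>) = cmp E (cmp E (cmp E (j (n+1)) (d1 (n+1))) (snd ?S n)) \<kappa>"
        using jj d1 kb ip' by (simp add: assoc_arr)
      also have "\<dots> = cmp E (cmp E (cmp E (e (n+1)) (cps i (n+1))) (snd ?S n)) \<kappa>" using jj(5)[of "n+1"] by simp
      also have "\<dots> = cmp E (cmp E (e (n+1)) (cmp E (cps i (n+1)) (snd ?S n))) \<kappa>"
        using ea ed ip' ipx by (simp add: assoc_arr)
      also have "\<dots> = cmp E (cmp E (e (n+1)) (cmp E (snd ?X n) (cps i n))) \<kappa>" using cm_comm'[OF ia] ipx by simp
      also have "\<dots> = cmp E (cmp E (cmp E (e (n+1)) (snd ?X n)) (cps i n)) \<kappa>"
        by (subst assoc_arr[symmetric]) (use ea ed ip' ipx pp in auto)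
      also have "\<dots> = cmp E (cmp E (cmp E (snd B n) (e n)) (cps i n)) \<kappa>" using Bcomm by simp
      also have "\<dots> = cmp E (snd B n) (cmp E (cmp E (e n) (cps i n)) \<kappa>)"
        using Bd ea ed ip' ipx kb d1 by (simp add: assoc_arr)
      also have "\<dots> = cmp E (snd B n) (cmp E (cmp E (j n) (d1 n)) \<kappa>)" using jj(5) by simp
      also have "\<dots> = cmp E (snd B n) (cmp E (j n) (cmp E (d1 n) \<kappa>))"
        using jj d1 kb by (simp add: assoc_arr)
      also have "\<dots> = zro E (src E \<kappa>) (tgt E (e (n+1)))" using kb jj d1 Bd by simp
      also have "\<dots> = cmp E (j (n+1)) (zro E (src E \<kappa>) (tgt E ?h))" using kb jj d1 ha by simp
      finally show "cmp E (j (n+1)) (cmp E ?h \<kappa>) = cmp E (j (n+1)) (zro E (src E \<kappa>) (tgt E ?h))" .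
    qed
    have "\<exists>!u. u \<in> hom E (tgt E (d1 n)) (tgt E ?h) \<and> cmp E u (d1 n) = ?h"
      using conf_coker[OF kap ha(1) ha(2) z] .
    then show ?thesis using ha by (auto simp: hom_iff)
  qed
  obtain A' where A': "A' \<in> Cb_sub E A" "fst A' = (\<lambda>n. tgt E (d1 n))" "(?S, A', d1) \<in> hom (Cb E) ?S A'"
     "deflation (Cb E) (Cb_conf E Conf) (?S, A', d1)"
    using QC[OF ip'(4) d1(1-3) Rd1] by blast
  have ie: "(?S, B, \<lambda>n. cmp E (e n) (cps i n)) \<in> hom (Cb E) ?S B"
  proof -
    have "i \<in> hom (Cb E) ?S ?X" using ia ipx by (simp add: hom_iff)
    from cmpC_hom[OF this B(3)] show ?thesis by simp
  qed
  have J: "(A', B, j) \<in> hom (Cb E) A' B"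
    by (rule factor_chain[OF A'(3) d1(1) ie]) (use jj A'(2) B(2) in auto)
  have Jinf: "inflation (Cb E) (Cb_conf E Conf) (A', B, j)"
    by (rule deg_infl) (use J jj in \<open>auto simp: hom_iff\<close>)
  have fe: "(\<lambda>n. cmp E (k n) (e n)) = cps p" using k by (simp add: fun_eq_iff)
  have pk: "p = cmp (Cb E) (B, ?Y, k) (?X, B, e)"
  proof -
    have "cmp (Cb E) (B, ?Y, k) (?X, B, e) = (?X, ?Y, \<lambda>n. cmp E (k n) (e n))" by simp
    also have "\<dots> = (?X, ?Y, cps p)" by (simp only: fe)
    also have "\<dots> = p" by simp
    finally show ?thesis by simp
  qed
  have fe2: "(\<lambda>n. cmp E (e n) (cps i n)) = (\<lambda>n. cmp E (j n) (d1 n))" using jj by (simp add: fun_eq_iff)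
  have sq: "cmp (Cb E) (?X, B, e) i = cmp (Cb E) (A', B, j) (?S, A', d1)" using fe2 by simp
  show ?thesis
    apply (rule exI[of _ A'], rule exI[of _ B], rule exI[of _ "(?S, A', d1)"], rule exI[of _ "(?X, B, e)"],
       rule exI[of _ "(A', B, j)"], rule exI[of _ "(B, ?Y, k)"])
    using A' B J Jinf K pk sq ipx by simp
qed

end


context perc
begin

lemma poE_w: assumes po: "is_pushout E i q q' i'" and u: "u \<in> arr E" and v: "v \<in> arr E"
  and s: "src E u = tgt E i" "src E v = tgt E q" "tgt E u = tgt E v" and e: "cmp E u i = cmp E v q"
  shows "\<exists>w. w \<in> arr E \<and> src E w = tgt E q' \<and> tgt E w = tgt E u \<and> cmp E w q' = u \<and> cmp E w i' = v"
  using po_univ[OF po u v s e] by (auto simp: hom_iff)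

lemma poE_uniq: assumes po: "is_pushout E i q q' i'"
  and "w1 \<in> arr E" "src E w1 = tgt E q'" "tgt E w1 = x" "w2 \<in> arr E" "src E w2 = tgt E q'" "tgt E w2 = x"
  and "cmp E w1 q' = cmp E w2 q'" "cmp E w1 i' = cmp E w2 i'"
  shows "w1 = w2"
  using po_uniq[OF cat po, of w1 x w2] assms by (auto simp: hom_iff)

lemma Cb_po: assumes i: "inflation (Cb E) (Cb_conf E Conf) i" and q: "deflation (Cb E) (Cb_conf E Conf) q"
  and iq: "src (Cb E) i = src (Cb E) q" and qA: "tgt (Cb E) q \<in> Cb_sub E A"
  shows "\<exists>q' i'. is_pushout (Cb E) i q q' i' \<and> inflation (Cb E) (Cb_conf E Conf) i' \<and> deflation (Cb E) (Cb_conf E Conf) q'"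
proof -
  have ia: "i \<in> arr (Cb E)" and qa: "q \<in> arr (Cb E)" using infl_Cb_arr[OF i] defl_Cb_arr[OF q] by auto
  have iinf: "inflation E Conf (cps i n)" for n using infl_Cb_deg[OF i] .
  have qdef: "deflation E Conf (cps q n)" for n using defl_Cb_deg[OF q] .
  note ip = cm_props[OF ia] and qp = cm_props[OF qa]
  have iq': "fst q = fst i" using iq by simp
  let ?C = "fst i" and ?D = "fst (snd i)" and ?Aq = "fst (snd q)"
  have AqA: "fst ?Aq n \<in> A" for n using qA by (simp add: Cb_sub_def)
  have ex: "\<exists>qi. is_pushout E (cps i n) (cps q n) (fst qi) (snd qi)" for n
    using P3ex[OF iinf qdef, of n] ip qp iq' AqA by simp
  define q' where "q' n = fst (SOME qi. is_pushout E (cps i n) (cps q n) (fst qi) (snd qi))" for n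
  define i' where "i' n = snd (SOME qi. is_pushout E (cps i n) (cps q n) (fst qi) (snd qi))" for n
  have po: "is_pushout E (cps i n) (cps q n) (q' n) (i' n)" for n
    unfolding q'_def i'_def using someI_ex[OF ex] .
  note pob = po_basic[OF po]
  define P where "P n = tgt E (q' n)" for n
  have pa: "q' n \<in> arr E" "src E (q' n) = fst ?D n" "tgt E (q' n) = P n"
     "i' n \<in> arr E" "src E (i' n) = fst ?Aq n" "tgt E (i' n) = P n" "P n \<in> obj E" for n
    using pob[of n] ip qp P_def by auto
  have sq: "cmp E (q' n) (cps i n) = cmp E (i' n) (cps q n)" for n using pob by blast
  have ex2: "\<exists>w. w \<in> arr E \<and> src E w = P n \<and> tgt E w = P (n+1) \<and>
      cmp E w (q' n) = cmp E (q' (n+1)) (snd ?D n) \<and> cmp E w (i' n) = cmp E (i' (n+1)) (snd ?Aq n)" for n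
  proof -
    have "cmp E (cmp E (q' (n+1)) (snd ?D n)) (cps i n) = cmp E (cmp E (i' (n+1)) (snd ?Aq n)) (cps q n)"
    proof -
      have "cmp E (cmp E (q' (n+1)) (snd ?D n)) (cps i n) = cmp E (q' (n+1)) (cmp E (snd ?D n) (cps i n))"
        using ip pa by (simp add: assoc_arr)
      also have "\<dots> = cmp E (q' (n+1)) (cmp E (cps i (n+1)) (snd ?C n))" using cm_comm'[OF ia] by simp
      also have "\<dots> = cmp E (cmp E (q' (n+1)) (cps i (n+1))) (snd ?C n)" by (rule assoc_arr[symmetric]) (use ip pa in auto)
      also have "\<dots> = cmp E (cmp E (i' (n+1)) (cps q (n+1))) (snd ?C n)" using sq by simp
      also have "\<dots> = cmp E (i' (n+1)) (cmp E (cps q (n+1)) (snd ?C n))" using ip qp pa iq' by (simp add: assoc_arr)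
      also have "\<dots> = cmp E (i' (n+1)) (cmp E (snd ?Aq n) (cps q n))" using cm_comm'[OF qa] iq' by simp
      also have "\<dots> = cmp E (cmp E (i' (n+1)) (snd ?Aq n)) (cps q n)" by (rule assoc_arr[symmetric]) (use qp pa in auto)
      finally show ?thesis .
    qed
    then show ?thesis using poE_w[OF po[of n], of "cmp E (q' (n+1)) (snd ?D n)" "cmp E (i' (n+1)) (snd ?Aq n)"]
      ip qp pa by simp
  qed
  define dP where "dP n = (SOME w. w \<in> arr E \<and> src E w = P n \<and> tgt E w = P (n+1) \<and>
      cmp E w (q' n) = cmp E (q' (n+1)) (snd ?D n) \<and> cmp E w (i' n) = cmp E (i' (n+1)) (snd ?Aq n))" for n
  have dP: "dP n \<in> arr E \<and> src E (dP n) = P n \<and> tgt E (dP n) = P (n+1) \<and>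
      cmp E (dP n) (q' n) = cmp E (q' (n+1)) (snd ?D n) \<and> cmp E (dP n) (i' n) = cmp E (i' (n+1)) (snd ?Aq n)" for n
    unfolding dP_def using someI_ex[OF ex2] .
  have dPa: "dP n \<in> arr E" "src E (dP n) = P n" "tgt E (dP n) = P (n+1)" for n using dP by auto
  obtain N1 where N1: "\<And>n. N1 < \<bar>n\<bar> \<Longrightarrow> is_zero_obj E (fst ?D n)" using bc_bd ip by blast
  obtain N2 where N2: "\<And>n. N2 < \<bar>n\<bar> \<Longrightarrow> is_zero_obj E (fst ?Aq n)" using bc_bd qp by blast
  have PP: "is_bcomplex E (P, dP)"
  proof (rule bcI[of _ "max N1 N2"])
    fix n
    show "fst (P, dP) n \<in> obj E" using pa by simp
    show "snd (P, dP) n \<in> hom E (fst (P, dP) n) (fst (P, dP) (n + 1))" using dPa by (simp add: hom_iff)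
    show "cmp E (snd (P, dP) (n + 1)) (snd (P, dP) n) = zro E (fst (P, dP) n) (fst (P, dP) (n + 2))"
    proof -
      have "cmp E (dP (n+1)) (dP n) = zro E (P n) (P (n+1+1))"
      proof (rule poE_uniq[OF po[of n]])
        show "cmp E (dP (n+1)) (dP n) \<in> arr E" "src E (cmp E (dP (n+1)) (dP n)) = tgt E (q' n)"
          "tgt E (cmp E (dP (n+1)) (dP n)) = P (n+1+1)" using dPa pa by auto
        show "zro E (P n) (P (n+1+1)) \<in> arr E" "src E (zro E (P n) (P (n+1+1))) = tgt E (q' n)"
          "tgt E (zro E (P n) (P (n+1+1))) = P (n+1+1)" using pa by auto
        have "cmp E (cmp E (dP (n+1)) (dP n)) (q' n) = cmp E (dP (n+1)) (cmp E (dP n) (q' n))"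
          using pa dPa by (simp add: assoc_arr)
        also have "\<dots> = cmp E (dP (n+1)) (cmp E (q' (n+1)) (snd ?D n))" by (simp only: dP[of n])
        also have "\<dots> = cmp E (cmp E (dP (n+1)) (q' (n+1))) (snd ?D n)" by (rule assoc_arr[symmetric]) (use pa dPa ip in auto)
        also have "\<dots> = cmp E (cmp E (q' (n+1+1)) (snd ?D (n+1))) (snd ?D n)" by (simp only: dP[of "n+1"])
        also have "\<dots> = cmp E (q' (n+1+1)) (cmp E (snd ?D (n+1)) (snd ?D n))" using pa ip by (simp add: assoc_arr)
        also have "\<dots> = cmp E (zro E (P n) (P (n+1+1))) (q' n)" using bc_dd ip pa by (simp add: add.assoc)
        finally show "cmp E (cmp E (dP (n+1)) (dP n)) (q' n) = cmp E (zro E (P n) (P (n+1+1))) (q' n)" .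
        have "cmp E (cmp E (dP (n+1)) (dP n)) (i' n) = cmp E (dP (n+1)) (cmp E (dP n) (i' n))"
          using pa dPa by (simp add: assoc_arr)
        also have "\<dots> = cmp E (dP (n+1)) (cmp E (i' (n+1)) (snd ?Aq n))" by (simp only: dP[of n])
        also have "\<dots> = cmp E (cmp E (dP (n+1)) (i' (n+1))) (snd ?Aq n)" by (rule assoc_arr[symmetric]) (use pa dPa qp in auto)
        also have "\<dots> = cmp E (cmp E (i' (n+1+1)) (snd ?Aq (n+1))) (snd ?Aq n)" by (simp only: dP[of "n+1"])
        also have "\<dots> = cmp E (i' (n+1+1)) (cmp E (snd ?Aq (n+1)) (snd ?Aq n))" using pa qp by (simp add: assoc_arr)
        also have "\<dots> = cmp E (zro E (P n) (P (n+1+1))) (i' n)" using bc_dd qp pa by (simp add: add.assoc)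
        finally show "cmp E (cmp E (dP (n+1)) (dP n)) (i' n) = cmp E (zro E (P n) (P (n+1+1))) (i' n)" .
      qed
      then show ?thesis by (simp add: add.assoc)
    qed
    assume n: "max N1 N2 < \<bar>n\<bar>"
    have z: "is_zero_obj E (fst ?D n)" "is_zero_obj E (fst ?Aq n)" using N1 N2 n by auto
    have "ident E (P n) = zro E (P n) (P n)"
    proof (rule poE_uniq[OF po[of n]])
      show "ident E (P n) \<in> arr E" "src E (ident E (P n)) = tgt E (q' n)" "tgt E (ident E (P n)) = P n"
        "zro E (P n) (P n) \<in> arr E" "src E (zro E (P n) (P n)) = tgt E (q' n)" "tgt E (zro E (P n) (P n)) = P n"
        using pa by auto
      have h1: "cmp E (ident E (P n)) (q' n) \<in> hom E (fst ?D n) (P n)" "cmp E (zro E (P n) (P n)) (q' n) \<in> hom E (fst ?D n) (P n)"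
        "cmp E (ident E (P n)) (i' n) \<in> hom E (fst ?Aq n) (P n)" "cmp E (zro E (P n) (P n)) (i' n) \<in> hom E (fst ?Aq n) (P n)"
        using pa ip qp by (auto simp: hom_iff)
      show "cmp E (ident E (P n)) (q' n) = cmp E (zro E (P n) (P n)) (q' n)"
        using zero_from[OF z(1) h1(1)] zero_from[OF z(1) h1(2)] by simp
      show "cmp E (ident E (P n)) (i' n) = cmp E (zro E (P n) (P n)) (i' n)"
        using zero_from[OF z(2) h1(3)] zero_from[OF z(2) h1(4)] by simp
    qed
    then show "is_zero_obj E (fst (P, dP) n)" using id_zero_imp pa by simp
  qed
  have Qq: "(?D, (P, dP), q') \<in> hom (Cb E) ?D (P, dP)"
    by (rule homC_intro[OF ip(5) PP]) (use pa dP in \<open>auto simp: hom_iff\<close>)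
  have Ii: "(?Aq, (P, dP), i') \<in> hom (Cb E) ?Aq (P, dP)"
    by (rule homC_intro[OF qp(5) PP]) (use pa dP in \<open>auto simp: hom_iff\<close>)
  have PO: "is_pushout (Cb E) i q (?D, (P, dP), q') (?Aq, (P, dP), i')"
    unfolding is_pushout_def
  proof (intro conjI allI impI)
    show "i \<in> arr (Cb E)" "q \<in> arr (Cb E)" "src (Cb E) i = src (Cb E) q" using ia qa iq by auto
    show "(?D, (P, dP), q') \<in> arr (Cb E)" "(?Aq, (P, dP), i') \<in> arr (Cb E)" using Qq Ii by (auto simp: hom_iff)
    show "src (Cb E) (?D, (P, dP), q') = tgt (Cb E) i" "src (Cb E) (?Aq, (P, dP), i') = tgt (Cb E) q"
      "tgt (Cb E) (?D, (P, dP), q') = tgt (Cb E) (?Aq, (P, dP), i')" by auto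
    show "cmp (Cb E) (?D, (P, dP), q') i = cmp (Cb E) (?Aq, (P, dP), i') q" using sq iq' by (simp add: fun_eq_iff)
    fix u v assume uv: "u \<in> arr (Cb E) \<and> v \<in> arr (Cb E) \<and> src (Cb E) u = tgt (Cb E) i \<and>
      src (Cb E) v = tgt (Cb E) q \<and> tgt (Cb E) u = tgt (Cb E) v \<and> cmp (Cb E) u i = cmp (Cb E) v q"
    then have ua: "u \<in> arr (Cb E)" and va: "v \<in> arr (Cb E)" and us: "fst u = ?D" and vs: "fst v = ?Aq"
      and ut: "fst (snd v) = fst (snd u)" by auto
    have ue: "cmp E (cps u n) (cps i n) = cmp E (cps v n) (cps q n)" for n using uv by (simp add: fun_eq_iff)
    note up = cm_props[OF ua] and vp = cm_props[OF va]
    let ?T = "fst (snd u)"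
    have ex3: "\<exists>w. w \<in> arr E \<and> src E w = P n \<and> tgt E w = fst ?T n \<and> cmp E w (q' n) = cps u n \<and> cmp E w (i' n) = cps v n" for n
      using poE_w[OF po[of n], of "cps u n" "cps v n"] up vp us vs ut ip qp ue pa by simp
    define w where "w n = (SOME w. w \<in> arr E \<and> src E w = P n \<and> tgt E w = fst ?T n \<and> cmp E w (q' n) = cps u n \<and> cmp E w (i' n) = cps v n)" for n
    have w: "w n \<in> arr E \<and> src E (w n) = P n \<and> tgt E (w n) = fst ?T n \<and> cmp E (w n) (q' n) = cps u n \<and> cmp E (w n) (i' n) = cps v n" for n
      unfolding w_def using someI_ex[OF ex3] .
    have wa: "w n \<in> arr E" "src E (w n) = P n" "tgt E (w n) = fst ?T n" for n using w by auto
    have W: "((P, dP), ?T, w) \<in> hom (Cb E) (P, dP) ?T"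
    proof (rule homC_intro[OF PP up(5)])
      fix n
      show "w n \<in> hom E (fst (P, dP) n) (fst ?T n)" using wa by (simp add: hom_iff)
      show "cmp E (snd ?T n) (w n) = cmp E (w (n + 1)) (snd (P, dP) n)"
      proof (simp, rule poE_uniq[OF po[of n]])
        show "cmp E (snd ?T n) (w n) \<in> arr E" "src E (cmp E (snd ?T n) (w n)) = tgt E (q' n)"
          "tgt E (cmp E (snd ?T n) (w n)) = fst ?T (n+1)" using wa up pa by auto
        show "cmp E (w (n+1)) (dP n) \<in> arr E" "src E (cmp E (w (n+1)) (dP n)) = tgt E (q' n)"
          "tgt E (cmp E (w (n+1)) (dP n)) = fst ?T (n+1)" using wa dPa pa by auto
        have "cmp E (cmp E (snd ?T n) (w n)) (q' n) = cmp E (snd ?T n) (cmp E (w n) (q' n))" using pa wa up by (simp add: assoc_arr)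
        also have "\<dots> = cmp E (snd ?T n) (cps u n)" using w by simp
        also have "\<dots> = cmp E (cps u (n+1)) (snd ?D n)" using cm_comm'[OF ua] us by simp
        also have "\<dots> = cmp E (cmp E (w (n+1)) (q' (n+1))) (snd ?D n)" using w by simp
        also have "\<dots> = cmp E (w (n+1)) (cmp E (q' (n+1)) (snd ?D n))" using pa wa ip by (simp add: assoc_arr)
        also have "\<dots> = cmp E (w (n+1)) (cmp E (dP n) (q' n))" using dP by simp
        also have "\<dots> = cmp E (cmp E (w (n+1)) (dP n)) (q' n)" by (rule assoc_arr[symmetric]) (use pa wa dPa in auto)
        finally show "cmp E (cmp E (snd ?T n) (w n)) (q' n) = cmp E (cmp E (w (n+1)) (dP n)) (q' n)" .
        have "cmp E (cmp E (snd ?T n) (w n)) (i' n) = cmp E (snd ?T n) (cmp E (w n) (i' n))" using pa wa up by (simp add: assoc_arr)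
        also have "\<dots> = cmp E (snd ?T n) (cps v n)" using w by simp
        also have "\<dots> = cmp E (cps v (n+1)) (snd ?Aq n)" using cm_comm'[OF va] vs ut by simp
        also have "\<dots> = cmp E (cmp E (w (n+1)) (i' (n+1))) (snd ?Aq n)" using w by simp
        also have "\<dots> = cmp E (w (n+1)) (cmp E (i' (n+1)) (snd ?Aq n))" using pa wa qp by (simp add: assoc_arr)
        also have "\<dots> = cmp E (w (n+1)) (cmp E (dP n) (i' n))" using dP by simp
        also have "\<dots> = cmp E (cmp E (w (n+1)) (dP n)) (i' n)" by (rule assoc_arr[symmetric]) (use pa wa dPa in auto)
        finally show "cmp E (cmp E (snd ?T n) (w n)) (i' n) = cmp E (cmp E (w (n+1)) (dP n)) (i' n)" .
      qed
    qed
    have e1: "cmp (Cb E) ((P, dP), ?T, w) (?D, (P, dP), q') = u"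
    proof -
      have "cmp (Cb E) ((P, dP), ?T, w) (?D, (P, dP), q') = (fst u, fst (snd u), cps u)" using w us by (simp add: fun_eq_iff)
      then show ?thesis by simp
    qed
    have e2: "cmp (Cb E) ((P, dP), ?T, w) (?Aq, (P, dP), i') = v"
    proof -
      have "cmp (Cb E) ((P, dP), ?T, w) (?Aq, (P, dP), i') = (fst v, fst (snd v), cps v)" using w vs ut by (simp add: fun_eq_iff)
      then show ?thesis by simp
    qed
    show "\<exists>!w. w \<in> hom (Cb E) (tgt (Cb E) (?D, (P, dP), q')) (tgt (Cb E) u) \<and>
             cmp (Cb E) w (?D, (P, dP), q') = u \<and> cmp (Cb E) w (?Aq, (P, dP), i') = v"
    proof (rule ex1I[of _ "((P, dP), ?T, w)"])
      show "((P, dP), ?T, w) \<in> hom (Cb E) (tgt (Cb E) (?D, (P, dP), q')) (tgt (Cb E) u) \<and>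
             cmp (Cb E) ((P, dP), ?T, w) (?D, (P, dP), q') = u \<and> cmp (Cb E) ((P, dP), ?T, w) (?Aq, (P, dP), i') = v"
        using W e1 e2 by simp
      fix w' assume w': "w' \<in> hom (Cb E) (tgt (Cb E) (?D, (P, dP), q')) (tgt (Cb E) u) \<and>
             cmp (Cb E) w' (?D, (P, dP), q') = u \<and> cmp (Cb E) w' (?Aq, (P, dP), i') = v"
      then have wh: "w' \<in> hom (Cb E) (P, dP) ?T" by simp
      show "w' = ((P, dP), ?T, w)"
      proof (rule homC_eq[OF wh W])
        fix n
        have h: "cps w' n \<in> hom E (P n) (fst ?T n)" using homC_hom[OF wh] by simp
        have "cmp E (cps w' n) (q' n) = cps u n" "cmp E (cps w' n) (i' n) = cps v n"
          using w' by (auto simp: fun_eq_iff)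
        then show "cps w' n = cps ((P, dP), ?T, w) n"
          using poE_uniq[OF po[of n], of "cps w' n" "fst ?T n" "w n"] h wa w pa by (auto simp: hom_iff)
      qed
    qed
  qed
  have pr: "inflation E Conf (i' n) \<and> deflation E Conf (q' n)" for n
    using P3prop[OF iinf qdef _ _ po[of n]] ip qp iq' AqA by simp
  have "inflation (Cb E) (Cb_conf E Conf) (?Aq, (P, dP), i')"
    by (rule deg_infl) (use Ii pr in \<open>auto simp: hom_iff\<close>)
  moreover have "deflation (Cb E) (Cb_conf E Conf) (?D, (P, dP), q')"
    by (rule deg_defl) (use Qq pr in \<open>auto simp: hom_iff\<close>)
  ultimately show ?thesis using PO by blast
qed

end


context perc
begin

lemma Cb_P3b: assumes i: "inflation (Cb E) (Cb_conf E Conf) i" and q: "deflation (Cb E) (Cb_conf E Conf) q"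
  and iq: "src (Cb E) i = src (Cb E) q" and qA: "tgt (Cb E) q \<in> Cb_sub E A"
  and po: "is_pushout (Cb E) i q q1 i1"
  shows "inflation (Cb E) (Cb_conf E Conf) i1 \<and> deflation (Cb E) (Cb_conf E Conf) q1"
proof -
  obtain q0 i0 where po0: "is_pushout (Cb E) i q q0 i0" and i0: "inflation (Cb E) (Cb_conf E Conf) i0"
    and q0: "deflation (Cb E) (Cb_conf E Conf) q0" using Cb_po[OF i q iq qA] by blast
  obtain w where w: "w \<in> hom (Cb E) (tgt (Cb E) q0) (tgt (Cb E) q1)" "is_iso (Cb E) w"
    "cmp (Cb E) w q0 = q1" "cmp (Cb E) w i0 = i1" using po_iso[OF Cb_cat po po0] by blast
  note b = po_basic[OF po] and b0 = po_basic[OF po0]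
  have wa: "w \<in> arr (Cb E)" using w(1) by (simp only: hom_iff)
  have ws: "fst w = fst (snd q0)" using w(1) unfolding hom_iff by simp
  have i0a: "i0 \<in> arr (Cb E)" and q0a: "q0 \<in> arr (Cb E)" using b0 by auto
  have t0: "fst (snd i0) = fst (snd q0)" using b0 by simp
  have "inflation (Cb E) (Cb_conf E Conf) i1"
  proof (rule deg_infl)
    show "i1 \<in> arr (Cb E)" using b by blast
    fix n
    have "cps i1 n = cmp E (cps w n) (cps i0 n)" using w(4)[symmetric] by simp
    then show "inflation E Conf (cps i1 n)"
      using infl_iso[OF infl_Cb_deg[OF i0] isoC_deg[OF w(2)]] cm_props[OF wa] cm_props[OF i0a] ws t0 by simp
  qed
  moreover have "deflation (Cb E) (Cb_conf E Conf) q1"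
  proof (rule deg_defl)
    show "q1 \<in> arr (Cb E)" using b by blast
    fix n
    have "cps q1 n = cmp E (cps w n) (cps q0 n)" using w(3)[symmetric] by simp
    then show "deflation E Conf (cps q1 n)"
      using defl_iso_l[OF defl_Cb_deg[OF q0] isoC_deg[OF w(2)]] cm_props[OF wa] cm_props[OF q0a] ws by simp
  qed
  ultimately show ?thesis by blast
qed

lemma Cb_ne: "Cb_sub E A \<noteq> {}"
proof -
  obtain z where z: "is_zero_obj E z" using ex_zero by blast
  have "zcx z \<in> Cb_sub E A" using zcx_bc[OF z] zero_A[OF z] by (simp add: Cb_sub_def zcx_def)
  then show ?thesis by blast
qed

lemma Cb_sub_obj: "Cb_sub E A \<subseteq> obj (Cb E)" by (auto simp: Cb_sub_def)

lemma Cb_P1: "\<forall>f g. (f, g) \<in> Cb_conf E Conf \<longrightarrow> (src (Cb E) g \<in> Cb_sub E A \<longleftrightarrow> src (Cb E) f \<in> Cb_sub E A \<and> tgt (Cb E) g \<in> Cb_sub E A)"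
proof (intro allI impI)
  fix f g assume fg: "(f, g) \<in> Cb_conf E Conf"
  then have f: "f \<in> arr (Cb E)" and g: "g \<in> arr (Cb E)" and fgt: "fst (snd f) = fst g"
    and c: "\<And>n. (cps f n, cps g n) \<in> Conf" by (auto simp: Cb_conf_iff)
  note fp = cm_props[OF f] and gp = cm_props[OF g]
  have "fst (fst g) n \<in> A \<longleftrightarrow> fst (fst f) n \<in> A \<and> fst (fst (snd g)) n \<in> A" for n
    using P1[OF c[of n]] fp gp by simp
  then show "src (Cb E) g \<in> Cb_sub E A \<longleftrightarrow> src (Cb E) f \<in> Cb_sub E A \<and> tgt (Cb E) g \<in> Cb_sub E A"
    using fp gp by (auto simp: Cb_sub_def)
qed

lemma Cb_P2all: "\<forall>h. h \<in> arr (Cb E) \<longrightarrow> tgt (Cb E) h \<in> Cb_sub E A \<longrightarrow>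
        (\<exists>A' d k. A' \<in> Cb_sub E A \<and> d \<in> hom (Cb E) (src (Cb E) h) A' \<and> deflation (Cb E) (Cb_conf E Conf) d \<and>
                  k \<in> hom (Cb E) A' (tgt (Cb E) h) \<and> h = cmp (Cb E) k d)"
  using Cb_P2 by blast

lemma Cb_P3all: "\<forall>i q. inflation (Cb E) (Cb_conf E Conf) i \<longrightarrow> deflation (Cb E) (Cb_conf E Conf) q \<longrightarrow>
     src (Cb E) i = src (Cb E) q \<longrightarrow> tgt (Cb E) q \<in> Cb_sub E A \<longrightarrow>
        (\<exists>q' i'. is_pushout (Cb E) i q q' i') \<and>
        (\<forall>q' i'. is_pushout (Cb E) i q q' i' \<longrightarrow> inflation (Cb E) (Cb_conf E Conf) i' \<and> deflation (Cb E) (Cb_conf E Conf) q')"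
proof (intro allI impI)
  fix i q assume i: "inflation (Cb E) (Cb_conf E Conf) i" and q: "deflation (Cb E) (Cb_conf E Conf) q"
    and iq: "src (Cb E) i = src (Cb E) q" and qA: "tgt (Cb E) q \<in> Cb_sub E A"
  have 1: "\<exists>q' i'. is_pushout (Cb E) i q q' i'" using Cb_po[OF i q iq qA] by blast
  have 2: "\<forall>q' i'. is_pushout (Cb E) i q q' i' \<longrightarrow> inflation (Cb E) (Cb_conf E Conf) i' \<and> deflation (Cb E) (Cb_conf E Conf) q'"
    using Cb_P3b[OF i q iq qA] by blast
  show "(\<exists>q' i'. is_pushout (Cb E) i q q' i') \<and>
        (\<forall>q' i'. is_pushout (Cb E) i q q' i' \<longrightarrow> inflation (Cb E) (Cb_conf E Conf) i' \<and> deflation (Cb E) (Cb_conf E Conf) q')"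
    using 1 2 by (rule conjI)
qed

lemma Cb_P4all: "\<forall>i p. inflation (Cb E) (Cb_conf E Conf) i \<longrightarrow> deflation (Cb E) (Cb_conf E Conf) p \<longrightarrow>
        tgt (Cb E) i = src (Cb E) p \<longrightarrow> src (Cb E) i \<in> Cb_sub E A \<longrightarrow> tgt (Cb E) p \<in> Cb_sub E A \<longrightarrow>
        (\<exists>A' B' d1 d2 j k. A' \<in> Cb_sub E A \<and> B' \<in> Cb_sub E A \<and>
           d1 \<in> hom (Cb E) (src (Cb E) i) A' \<and> deflation (Cb E) (Cb_conf E Conf) d1 \<and>
           d2 \<in> hom (Cb E) (tgt (Cb E) i) B' \<and> deflation (Cb E) (Cb_conf E Conf) d2 \<and>
           j \<in> hom (Cb E) A' B' \<and> inflation (Cb E) (Cb_conf E Conf) j \<and>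
           k \<in> hom (Cb E) B' (tgt (Cb E) p) \<and>
           cmp (Cb E) d2 i = cmp (Cb E) j d1 \<and> p = cmp (Cb E) k d2)"
  using Cb_P4 by blast

lemma Cb_perc: "right_percolating (Cb E) (Cb_conf E Conf) (Cb_sub E A)"
  unfolding right_percolating_def
  by (intro conjI Cb_ne Cb_sub_obj Cb_P1 Cb_P2all Cb_P3all Cb_P4all)

end

theorem proposition4p12:
  fixes E :: "('o, 'm) category" and Conf :: "('m \<times> 'm) set" and A :: "'o set"
  assumes "right_exact E Conf"
    and "right_percolating E Conf A"
  shows "right_exact (Cb E) (Cb_conf E Conf) \<and>
         right_percolating (Cb E) (Cb_conf E Conf) (Cb_sub E A)"
proof -
  interpret perc E Conf A using assms by (simp add: perc_def rex_def perc_axioms_def)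
  show ?thesis using Cb_rex Cb_perc by blast
qed



end
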